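(* Let $\mathcal{A}=(\mathcal{A},m,f)$ be a presheaf of $k$-algebras on a small category $\mathcal{U}$, with Gerstenhaber–Schack complex $\mathbf{C}_{\mathrm{GS}}(\mathcal{A})$. \begin{enumerate} \item (a) For $(m_1,f_1,c_1)\in \mathbf{C}^{0,2}(\mathcal{A})\oplus\mathbf{C}^{1,1}(\mathcal{A})\oplus\mathbf{C}^{2,0}(\mathcal{A})$, the tuple $(\mathcal{A}[\epsilon],\bar m=m+m_1\epsilon,\bar f=f+f_1\epsilon,\bar c=1+c_1\epsilon)$ is a first order twisted deformation of $\mathcal{A}$ if and only if $(m_1,f_1,c_1)\in\bar{\mathbf{C}}'^2_{\mathrm{GS}}(\mathcal{A})$ and $d_{\mathrm{GS}}(m_1,f_1,c_1)=0$. (b) For $(m_1,f_1)\in \mathbf{C}^{0,2}(\mathcal{A})\oplus\mathbf{C}^{1,1}(\mathcal{A})$, the tuple $(\mathcal{A}[\epsilon],m+m_1\epsilon,f+f_1\epsilon)$ is a first order presheaf deformation of $\mathcal{A}$ if and only if $(m_1,f_1)\in\bar{\mathbf{C}}'^2_{\mathrm{tGS}}(\mathcal{A})$ and $d_{\mathrm{GS}}(m_1,f_1)=0$. \item (a) For $(m_1,f_1,c_1),(m_1',f_1',c_1')\in Z^2\bar{\mathbf{C}}'_{\mathrm{GS}}(\mathcal{A})$ with associated twisted deformations $\bar{\mathcal{A}},\bar{\mathcal{A}}'$, and $(g_1,-\tau_1)\in\mathbf{C}^{0,1}(\mathcal{A})\oplus\mathbf{C}^{1,0}(\mathcal{A})$,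 the pair $(g,\tau)=(1+g_1\epsilon,1+\tau_1\epsilon)$ is an isomorphism of twisted presheaves $\bar{\mathcal{A}}\to\bar{\mathcal{A}}'$ if and only if $(g_1,-\tau_1)\in\bar{\mathbf{C}}'^1_{\mathrm{GS}}(\mathcal{A})$ and $d_{\mathrm{GS}}(g_1,-\tau_1)=(m_1,f_1,c_1)-(m_1',f_1',c_1')$. (b) For $(m_1,f_1),(m_1',f_1')\in Z^2\bar{\mathbf{C}}'_{\mathrm{tGS}}(\mathcal{A})$ and $g_1\in\mathbf{C}^{0,1}(\mathcal{A})$, the family $g=1+g_1\epsilon$ is an isomorphism of presheaves between the associated presheaf deformations if and only if $g_1\in\bar{\mathbf{C}}'^1_{\mathrm{tGS}}(\mathcal{A})$ and $d_{\mathrm{GS}}(g_1)=(m_1,f_1)-(m_1',f_1')$. \item (a) The assignment sending the class of a cocycle $(m_1,f_1,c_1)$ to the class of $(\mathcal{A}[\epsilon],m+m_1\epsilon,f+f_1\epsilon,1+c_1\epsilon)$ is a well-defined bijection $H^2\bar{\mathbf{C}}'_{\mathrm{GS}}(\mathcal{A})\to\mathrm{Def}_{\mathrm{tw}}(\mathcal{A})$; hence the second Hochschild cohomology $HH^2(\mathcal{A})\cong H^2\bar{\mathbf{C}}'_{\mathrm{GS}}(\mathcal{A})$ classifies first order twisted deformations of $\mathcal{A}$ up to equivalence. (b) Similarly the class of $(m_1,f_1)$ maps to the class of $(\mathcal{A}[\epsilon],m+m_1\epsilon,f+f_1\epsilon)$, giving a bijection $H^2\bar{\mathbf{C}}'_{\mathrm{tGS}}(\mathcal{A})\to\mathrm{Def}_{\mathrm{pr}}(\mathcal{A})$,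 so $H^2\bar{\mathbf{C}}'_{\mathrm{tGS}}(\mathcal{A})$ classifies first order presheaf deformations of $\mathcal{A}$ up to equivalence. \end{enumerate}
   Context: $k$ is a commutative ring with unit, $k[\epsilon]=k[\epsilon]/(\epsilon^2)$; algebras are unital associative and algebra maps preserve units. For a presheaf $\mathcal{A}$ of $k$-algebras on a small category $\mathcal{U}$ write $m^U$ for the multiplication of $\mathcal{A}(U)$ and $f^u=u^*\colon\mathcal{A}(U)\to\mathcal{A}(V)$ for the restriction along $u\colon V\to U$. Nerve: a $p$-simplex is $\sigma=(U_0\xrightarrow{u_1}U_1\to\cdots\xrightarrow{u_p}U_p)$, $d\sigma=U_0$, $c\sigma=U_p$, $f^\sigma=f^{u_p\cdots u_1}$; $\sigma$ is degenerate if some $u_i$ is an identity. For a $(p+1)$-simplex $\sigma$: $\partial_0\sigma$ deletes $U_0$, $\partial_{p+1}\sigma$ deletes $U_{p+1}$, and $\partial_i\sigma$ ($1\le i\le p$) replaces $U_{i-1}\to U_i\to U_{i+1}$ by $u_{i+1}u_i$. Gerstenhaber–Schack (GS) complex: $\mathbf{C}^{p,q}(\mathcal{A})=\prod_{\sigma\in\mathcal{N}_p(\mathcal{U})}\mathrm{Hom}_k(\mathcal{A}(c\sigma)^{\otimes q},\mathcal{A}(d\sigma))$, with $\mathcal{A}(d\sigma)$ an $\mathcal{A}(c\sigma)$-bimodule via $f^\sigma$. Vertical differential $d_{\mathrm{Hoch}}$ is componentwise the Hochschild differential $d\phi(a_n,\dots,a_0)=a_n\phi(a_{n-1},\dots,a_0)+\sum_{i=0}^{n-1}(-1)^{i+1}\phi(a_n,\dots,a_{n-i}a_{n-i-1},\dots,a_0)+(-1)^{n+1}\phi(a_n,\dots,a_1)a_0$.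 Horizontal differential $d_{\mathrm{simp}}=\sum_{i=0}^{p+1}(-1)^id_i\colon\mathbf{C}^{p,q}\to\mathbf{C}^{p+1,q}$ where, for $\sigma\in\mathcal{N}_{p+1}(\mathcal{U})$, $(d_0\phi)^\sigma=f^{u_1}\circ\phi^{\partial_0\sigma}$, $(d_i\phi)^\sigma=\phi^{\partial_i\sigma}$ for $1\le i\le p$, and $(d_{p+1}\phi)^\sigma=\phi^{\partial_{p+1}\sigma}\circ(f^{u_{p+1}})^{\otimes q}$. The total complex $\mathbf{C}^n_{\mathrm{GS}}(\mathcal{A})=\bigoplus_{p+q=n}\mathbf{C}^{p,q}(\mathcal{A})$ has differential $d_{\mathrm{GS}}=(-1)^{n+1}d_{\mathrm{simp}}+d_{\mathrm{Hoch}}$ on degree $n$. A cochain $\phi=(\phi^\sigma)$ is normalized if each $\phi^\sigma$ vanishes whenever one argument equals $1$, and reduced if $\phi^\sigma=0$ for degenerate $\sigma$ ($p=0$ cochains are reduced). $\bar{\mathbf{C}}'_{\mathrm{GS}}(\mathcal{A})$ is the subcomplex of normalized reduced cochains; $\mathbf{C}_{\mathrm{tGS}}$ (resp. $\bar{\mathbf{C}}'_{\mathrm{tGS}}$) is the subcomplex with $q\ge1$ (the truncated complex). $HH^n(\mathcal{A})$ denotes the GS Hochschild cohomology $H^n\mathbf{C}_{\mathrm{GS}}(\mathcal{A})$. A twisted presheaf of algebras (with trivial unit twist) $(\mathcal{A},m,f,c)$: algebras $\mathcal{A}(U)$, algebra maps $f^u=u^*$ with $f^{1_U}=1$, invertible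 $c^{u,v}\in\mathcal{A}(W)$ for $v\colon W\to V$, $u\colon V\to U$ with $c^{u,v}v^*u^*(a)=(uv)^*(a)c^{u,v}$, $c^{u,vw}c^{v,w}=c^{uv,w}w^*(c^{u,v})$, $c^{u,1_V}=1=c^{1_U,u}$. A morphism $(g,\tau)\colon\mathcal{A}\to\mathcal{A}'$: unital algebra maps $g^U$ and invertible $\tau^u\in\mathcal{A}'(V)$ with $g^V(u^*a)\tau^u=\tau^u u'^*(g^U a)$, $\tau^{uv}c'^{u,v}=g^W(c^{u,v})\tau^v v'^*(\tau^u)$, $\tau^{1_U}=1$; it is an isomorphism iff all $g^U$ are. A first order twisted deformation of a presheaf $\mathcal{A}$ is a twisted presheaf of $k[\epsilon]$-algebras of the form $(\mathcal{A}[\epsilon],m+m_1\epsilon,f+f_1\epsilon,1+c_1\epsilon)$ (structure maps extended $k[\epsilon]$-(bi)linearly), $(m_1,f_1,c_1)\in\mathbf{C}^{0,2}\oplus\mathbf{C}^{1,1}\oplus\mathbf{C}^{2,0}$, such that each $(\mathcal{A}(U)[\epsilon],m^U+m_1^U\epsilon)$ is a $k[\epsilon]$-algebra with the same unit as $\mathcal{A}(U)$. It is a presheaf deformation if $c_1=0$. An equivalence of twisted deformations is an isomorphism $(g,\tau)=(1+g_1\epsilon,1+\tau_1\epsilon)$ with $(g_1,\tau_1)\in\mathbf{C}^{0,1}\oplus\mathbf{C}^{1,0}$; an equivalence of presheaf deformations is an isomorphism of presheaves $1+g_1\epsilon$, $g_1\in\mathbf{C}^{0,1}$. $\mathrm{Def}_{\mathrm{tw}}(\mathcal{A})$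 and $\mathrm{Def}_{\mathrm{pr}}(\mathcal{A})$ are the sets of equivalence classes. *)

theory Defs
  imports Main
begin

section \<open>Dual numbers k[eps] = k[eps]/(eps^2)\<close>

datatype 'k dual = Dual (re: 'k) (eps: 'k)

instantiation dual :: (comm_ring_1) comm_ring_1
begin
definition zero_dual_def: "0 = Dual 0 0"
definition one_dual_def: "1 = Dual 1 0"
definition plus_dual_def: "x + y = Dual (re x + re y) (eps x + eps y)"
definition minus_dual_def: "x - y = Dual (re x - re y) (eps x - eps y)"
definition uminus_dual_def: "- x = Dual (- re x) (- eps x)"
definition times_dual_def: "x * y = Dual (re x * re y) (re x * eps y + eps x * re y)"
instance
  by intro_classes
     (auto simp: zero_dual_def one_dual_def plus_dual_def minus_dual_def
                 uminus_dual_def times_dual_def dual.expand algebra_simps)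
end

text \<open>A morphism u with Dom u = V and Cod u = U is u : V -> U; Comp u v is u o v
  (first v, then u).\<close>

record ('o,'m) cat =
  Ob :: "'o set"
  Mor :: "'m set"
  Dom :: "'m \<Rightarrow> 'o"
  Cod :: "'m \<Rightarrow> 'o"
  Comp :: "'m \<Rightarrow> 'm \<Rightarrow> 'm"
  Ident :: "'o \<Rightarrow> 'm"

definition is_category :: "('o,'m) cat \<Rightarrow> bool" where
  "is_category C \<longleftrightarrow>
     (\<forall>u\<in>Mor C. Dom C u \<in> Ob C \<and> Cod C u \<in> Ob C) \<and>
     (\<forall>U\<in>Ob C. Ident C U \<in> Mor C \<and> Dom C (Ident C U) = U \<and> Cod C (Ident C U) = U) \<and>
     (\<forall>u\<in>Mor C. \<forall>v\<in>Mor C. Cod C v = Dom C u \<longrightarrow>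
        Comp C u v \<in> Mor C \<and> Dom C (Comp C u v) = Dom C v \<and> Cod C (Comp C u v) = Cod C u) \<and>
     (\<forall>u\<in>Mor C. \<forall>v\<in>Mor C. \<forall>w\<in>Mor C. Cod C w = Dom C v \<and> Cod C v = Dom C u \<longrightarrow>
        Comp C (Comp C u v) w = Comp C u (Comp C v w)) \<and>
     (\<forall>u\<in>Mor C. Comp C u (Ident C (Dom C u)) = u \<and> Comp C (Ident C (Cod C u)) u = u)"

text \<open>A family of R-algebras indexed by objects, all elements living in one type 'a,
  with carriers, together with restriction maps (pres u : A(Cod u) -> A(Dom u)) and
  twists (ptw u v in A(Dom v) for v : W -> V, u : V -> U).\<close>

record ('o,'m,'a,'r) tpsh =
  pcar :: "'o \<Rightarrow> 'a set"
  padd :: "'o \<Rightarrow> 'a \<Rightarrow> 'a \<Rightarrow> 'a"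
  pzero :: "'o \<Rightarrow> 'a"
  psmult :: "'o \<Rightarrow> 'r \<Rightarrow> 'a \<Rightarrow> 'a"
  pmul :: "'o \<Rightarrow> 'a \<Rightarrow> 'a \<Rightarrow> 'a"
  pone :: "'o \<Rightarrow> 'a"
  pres :: "'m \<Rightarrow> 'a \<Rightarrow> 'a"
  ptw :: "'m \<Rightarrow> 'm \<Rightarrow> 'a"

definition is_algebra :: "('o,'m,'a,'r::comm_ring_1) tpsh \<Rightarrow> 'o \<Rightarrow> bool" where
  "is_algebra T U \<longleftrightarrow>
    (let S = pcar T U; ad = padd T U; z = pzero T U; sm = psmult T U; mu = pmul T U; e = pone T U in
     z \<in> S \<and> e \<in> S \<and>
     (\<forall>a\<in>S. \<forall>b\<in>S. ad a b \<in> S \<and> mu a b \<in> S) \<and>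
     (\<forall>r. \<forall>a\<in>S. sm r a \<in> S) \<and>
     (\<forall>a\<in>S. \<forall>b\<in>S. \<forall>c\<in>S. ad (ad a b) c = ad a (ad b c)) \<and>
     (\<forall>a\<in>S. \<forall>b\<in>S. ad a b = ad b a) \<and>
     (\<forall>a\<in>S. ad z a = a) \<and>
     (\<forall>a\<in>S. \<exists>b\<in>S. ad a b = z) \<and>
     (\<forall>r s. \<forall>a\<in>S. sm (r + s) a = ad (sm r a) (sm s a)) \<and>
     (\<forall>r. \<forall>a\<in>S. \<forall>b\<in>S. sm r (ad a b) = ad (sm r a) (sm r b)) \<and>
     (\<forall>r s. \<forall>a\<in>S. sm (r * s) a = sm r (sm s a)) \<and>
     (\<forall>a\<in>S. sm 1 a = a) \<and>
     (\<forall>a\<in>S. \<forall>b\<in>S. \<forall>c\<in>S. mu (mu a b) c = mu a (mu b c)) \<and>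
     (\<forall>a\<in>S. mu e a = a \<and> mu a e = a) \<and>
     (\<forall>a\<in>S. \<forall>b\<in>S. \<forall>c\<in>S. mu a (ad b c) = ad (mu a b) (mu a c) \<and> mu (ad a b) c = ad (mu a c) (mu b c)) \<and>
     (\<forall>r. \<forall>a\<in>S. \<forall>b\<in>S. mu (sm r a) b = sm r (mu a b) \<and> mu a (sm r b) = sm r (mu a b)))"

definition alg_map :: "('o,'m,'a,'r::comm_ring_1) tpsh \<Rightarrow> 'o \<Rightarrow> ('o,'m,'b,'r) tpsh \<Rightarrow> 'o \<Rightarrow> ('a \<Rightarrow> 'b) \<Rightarrow> bool" where
  "alg_map T U T' V h \<longleftrightarrow>
     (\<forall>a\<in>pcar T U. h a \<in> pcar T' V) \<and>
     (\<forall>a\<in>pcar T U. \<forall>b\<in>pcar T U. h (padd T U a b) = padd T' V (h a) (h b)) \<and>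
     (\<forall>r. \<forall>a\<in>pcar T U. h (psmult T U r a) = psmult T' V r (h a)) \<and>
     (\<forall>a\<in>pcar T U. \<forall>b\<in>pcar T U. h (pmul T U a b) = pmul T' V (h a) (h b)) \<and>
     h (pone T U) = pone T' V"

definition invertible :: "('o,'m,'a,'r) tpsh \<Rightarrow> 'o \<Rightarrow> 'a \<Rightarrow> bool" where
  "invertible T U x \<longleftrightarrow> (\<exists>y\<in>pcar T U. pmul T U x y = pone T U \<and> pmul T U y x = pone T U)"

text \<open>Presheaf of R-algebras (the twist field is ignored).\<close>
definition is_presheaf :: "('o,'m) cat \<Rightarrow> ('o,'m,'a,'r::comm_ring_1) tpsh \<Rightarrow> bool" where
  "is_presheaf C T \<longleftrightarrow>
     (\<forall>U\<in>Ob C. is_algebra T U) \<and>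
     (\<forall>u\<in>Mor C. alg_map T (Cod C u) T (Dom C u) (pres T u)) \<and>
     (\<forall>U\<in>Ob C. \<forall>a\<in>pcar T U. pres T (Ident C U) a = a) \<and>
     (\<forall>u\<in>Mor C. \<forall>v\<in>Mor C. Cod C v = Dom C u \<longrightarrow>
        (\<forall>a\<in>pcar T (Cod C u). pres T (Comp C u v) a = pres T v (pres T u a)))"

definition is_tw_presheaf :: "('o,'m) cat \<Rightarrow> ('o,'m,'a,'r::comm_ring_1) tpsh \<Rightarrow> bool" where
  "is_tw_presheaf C T \<longleftrightarrow>
     (\<forall>U\<in>Ob C. is_algebra T U) \<and>
     (\<forall>u\<in>Mor C. alg_map T (Cod C u) T (Dom C u) (pres T u)) \<and>
     (\<forall>U\<in>Ob C. \<forall>a\<in>pcar T U. pres T (Ident C U) a = a) \<and>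
     (\<forall>u\<in>Mor C. \<forall>v\<in>Mor C. Cod C v = Dom C u \<longrightarrow>
        ptw T u v \<in> pcar T (Dom C v) \<and> invertible T (Dom C v) (ptw T u v) \<and>
        (\<forall>a\<in>pcar T (Cod C u).
           pmul T (Dom C v) (ptw T u v) (pres T v (pres T u a)) =
           pmul T (Dom C v) (pres T (Comp C u v) a) (ptw T u v))) \<and>
     (\<forall>u\<in>Mor C. \<forall>v\<in>Mor C. \<forall>w\<in>Mor C. Cod C w = Dom C v \<and> Cod C v = Dom C u \<longrightarrow>
        pmul T (Dom C w) (ptw T u (Comp C v w)) (ptw T v w) =
        pmul T (Dom C w) (ptw T (Comp C u v) w) (pres T w (ptw T u v))) \<and>
     (\<forall>u\<in>Mor C. ptw T u (Ident C (Dom C u)) = pone T (Dom C u) \<and>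
                ptw T (Ident C (Cod C u)) u = pone T (Dom C u))"

definition is_tw_morphism :: "('o,'m) cat \<Rightarrow> ('o,'m,'a,'r::comm_ring_1) tpsh \<Rightarrow> ('o,'m,'b,'r) tpsh
     \<Rightarrow> ('o \<Rightarrow> 'a \<Rightarrow> 'b) \<Rightarrow> ('m \<Rightarrow> 'b) \<Rightarrow> bool" where
  "is_tw_morphism C T T' g \<tau> \<longleftrightarrow>
     (\<forall>U\<in>Ob C. alg_map T U T' U (g U)) \<and>
     (\<forall>u\<in>Mor C. \<tau> u \<in> pcar T' (Dom C u) \<and> invertible T' (Dom C u) (\<tau> u) \<and>
        (\<forall>a\<in>pcar T (Cod C u).
           pmul T' (Dom C u) (g (Dom C u) (pres T u a)) (\<tau> u) =
           pmul T' (Dom C u) (\<tau> u) (pres T' u (g (Cod C u) a)))) \<and>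
     (\<forall>u\<in>Mor C. \<forall>v\<in>Mor C. Cod C v = Dom C u \<longrightarrow>
        pmul T' (Dom C v) (\<tau> (Comp C u v)) (ptw T' u v) =
        pmul T' (Dom C v) (pmul T' (Dom C v) (g (Dom C v) (ptw T u v)) (\<tau> v)) (pres T' v (\<tau> u))) \<and>
     (\<forall>U\<in>Ob C. \<tau> (Ident C U) = pone T' U)"

definition is_tw_iso :: "('o,'m) cat \<Rightarrow> ('o,'m,'a,'r::comm_ring_1) tpsh \<Rightarrow> ('o,'m,'b,'r) tpsh
     \<Rightarrow> ('o \<Rightarrow> 'a \<Rightarrow> 'b) \<Rightarrow> ('m \<Rightarrow> 'b) \<Rightarrow> bool" where
  "is_tw_iso C T T' g \<tau> \<longleftrightarrow> is_tw_morphism C T T' g \<tau> \<and>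
     (\<forall>U\<in>Ob C. bij_betw (g U) (pcar T U) (pcar T' U))"

definition is_pr_iso :: "('o,'m) cat \<Rightarrow> ('o,'m,'a,'r::comm_ring_1) tpsh \<Rightarrow> ('o,'m,'b,'r) tpsh
     \<Rightarrow> ('o \<Rightarrow> 'a \<Rightarrow> 'b) \<Rightarrow> bool" where
  "is_pr_iso C T T' g \<longleftrightarrow>
     (\<forall>U\<in>Ob C. alg_map T U T' U (g U) \<and> bij_betw (g U) (pcar T U) (pcar T' U)) \<and>
     (\<forall>u\<in>Mor C. \<forall>a\<in>pcar T (Cod C u). g (Dom C u) (pres T u a) = pres T' u (g (Cod C u) a))"

section \<open>Nerve\<close>

text \<open>A p-simplex (U0 -u1-> U1 -> ... -up-> Up) is the pair (U0, [u1,...,up]).\<close>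

definition nerve :: "('o,'m) cat \<Rightarrow> nat \<Rightarrow> ('o \<times> 'm list) set" where
  "nerve C p = {(U, us). U \<in> Ob C \<and> length us = p \<and> set us \<subseteq> Mor C \<and>
      (\<forall>i<length us. Dom C (us ! i) = (if i = 0 then U else Cod C (us ! (i - 1))))}"

definition sdom :: "('o \<times> 'm list) \<Rightarrow> 'o" where
  "sdom \<sigma> = fst \<sigma>"

definition scod :: "('o,'m) cat \<Rightarrow> ('o \<times> 'm list) \<Rightarrow> 'o" where
  "scod C \<sigma> = (if snd \<sigma> = [] then fst \<sigma> else Cod C (last (snd \<sigma>)))"

text \<open>The composite u_p ... u_1 (identity of U0 if p = 0).\<close>
definition comp_chain :: "('o,'m) cat \<Rightarrow> ('o \<times> 'm list) \<Rightarrow> 'm" where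
  "comp_chain C \<sigma> = foldl (\<lambda>w u. Comp C u w) (Ident C (fst \<sigma>)) (snd \<sigma>)"

definition degenerate :: "('o,'m) cat \<Rightarrow> ('o \<times> 'm list) \<Rightarrow> bool" where
  "degenerate C \<sigma> \<longleftrightarrow> (\<exists>u\<in>set (snd \<sigma>). u = Ident C (Dom C u))"

definition face :: "('o,'m) cat \<Rightarrow> nat \<Rightarrow> ('o \<times> 'm list) \<Rightarrow> ('o \<times> 'm list)" where
  "face C i \<sigma> = (let U = fst \<sigma>; us = snd \<sigma> in
     if i = 0 then (Cod C (hd us), tl us)
     else if i = length us then (U, butlast us)
     else (U, take (i - 1) us @ [Comp C (us ! i) (us ! (i - 1))] @ drop (i + 1) us))"

section \<open>The Gerstenhaber--Schack complex\<close>

text \<open>A component of bidegree (p,q): sigma |-> phi^sigma, a function of argument lists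
  [a_q, ..., a_1] (read as a_{q-1},...,a_0 in the Hochschild formula: the head of the list
  is the leftmost argument). A total cochain of degree n is a function p |-> component p,
  where component p has bidegree (p, n-p).\<close>

type_synonym ('o,'m,'a) cochn = "'o \<times> 'm list \<Rightarrow> 'a list \<Rightarrow> 'a"

definition lsum :: "('o,'m,'a,'r) tpsh \<Rightarrow> 'o \<Rightarrow> 'a list \<Rightarrow> 'a" where
  "lsum A V ts = foldr (padd A V) ts (pzero A V)"

definition fsig :: "('o,'m) cat \<Rightarrow> ('o,'m,'a,'r) tpsh \<Rightarrow> ('o \<times> 'm list) \<Rightarrow> 'a \<Rightarrow> 'a" where
  "fsig C A \<sigma> = pres A (comp_chain C \<sigma>)"

text \<open>Hochschild differential, componentwise; A(d sigma) is an A(c sigma)-bimodule via f^sigma.\<close>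
definition dHoch :: "('o,'m) cat \<Rightarrow> ('o,'m,'a,'k::comm_ring_1) tpsh \<Rightarrow> ('o,'m,'a) cochn
     \<Rightarrow> ('o \<times> 'm list) \<Rightarrow> 'a list \<Rightarrow> 'a" where
  "dHoch C A \<phi> \<sigma> xs = (let U = scod C \<sigma>; V = sdom \<sigma>; F = fsig C A \<sigma>; n = length xs - 1 in
     lsum A V ([pmul A V (F (hd xs)) (\<phi> \<sigma> (tl xs))] @
       map (\<lambda>i. psmult A V ((-1) ^ (i + 1))
                 (\<phi> \<sigma> (take i xs @ [pmul A U (xs ! i) (xs ! (i + 1))] @ drop (i + 2) xs))) [0..<n] @
       [psmult A V ((-1) ^ (n + 1)) (pmul A V (\<phi> \<sigma> (butlast xs)) (F (last xs)))]))"

definition dSimp :: "('o,'m) cat \<Rightarrow> ('o,'m,'a,'k::comm_ring_1) tpsh \<Rightarrow> ('o,'m,'a) cochn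
     \<Rightarrow> ('o \<times> 'm list) \<Rightarrow> 'a list \<Rightarrow> 'a" where
  "dSimp C A \<phi> \<sigma> xs = (let V = sdom \<sigma>; us = snd \<sigma> in
     lsum A V (map (\<lambda>i. psmult A V ((-1) ^ i)
        (if i = 0 then pres A (hd us) (\<phi> (face C 0 \<sigma>) xs)
         else if i = length us then \<phi> (face C i \<sigma>) (map (pres A (last us)) xs)
         else \<phi> (face C i \<sigma>) xs)) [0..<length us + 1]))"

text \<open>d_GS on total degree n: (-1)^(n+1) d_simp + d_Hoch; the result is a cochain of
  degree n+1 whose component p is d_Hoch(phi_p) + (-1)^(n+1) d_simp(phi_(p-1)).\<close>
definition dGS :: "('o,'m) cat \<Rightarrow> ('o,'m,'a,'k::comm_ring_1) tpsh \<Rightarrow> nat \<Rightarrow> (nat \<Rightarrow> ('o,'m,'a) cochn)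
     \<Rightarrow> nat \<Rightarrow> ('o,'m,'a) cochn" where
  "dGS C A n \<Phi> p \<sigma> xs = (let V = sdom \<sigma> in
     padd A V (if p \<le> n then dHoch C A (\<Phi> p) \<sigma> xs else pzero A V)
              (if 1 \<le> p then psmult A V ((-1) ^ (n + 1)) (dSimp C A (\<Phi> (p - 1)) \<sigma> xs) else pzero A V))"

definition args :: "('o,'m,'a,'r) tpsh \<Rightarrow> 'o \<Rightarrow> nat \<Rightarrow> 'a list set" where
  "args A U q = {xs. length xs = q \<and> set xs \<subseteq> pcar A U}"

text \<open>k-multilinear maps A(U)^q -> A(V) (elements of Hom_k(A(U)^{tensor q}, A(V))).\<close>
definition mlin :: "('o,'m,'a,'k) tpsh \<Rightarrow> 'o \<Rightarrow> 'o \<Rightarrow> nat \<Rightarrow> ('a list \<Rightarrow> 'a) \<Rightarrow> bool" where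
  "mlin A U V q \<phi> \<longleftrightarrow>
     (\<forall>xs\<in>args A U q. \<phi> xs \<in> pcar A V) \<and>
     (\<forall>xs\<in>args A U q. \<forall>i<q. \<forall>x\<in>pcar A U. \<forall>y\<in>pcar A U.
        \<phi> (xs[i := padd A U x y]) = padd A V (\<phi> (xs[i := x])) (\<phi> (xs[i := y]))) \<and>
     (\<forall>xs\<in>args A U q. \<forall>i<q. \<forall>x\<in>pcar A U. \<forall>r.
        \<phi> (xs[i := psmult A U r x]) = psmult A V r (\<phi> (xs[i := x])))"

definition cochain_pq :: "('o,'m) cat \<Rightarrow> ('o,'m,'a,'k) tpsh \<Rightarrow> nat \<Rightarrow> nat \<Rightarrow> ('o,'m,'a) cochn \<Rightarrow> bool" where
  "cochain_pq C A p q \<phi> \<longleftrightarrow> (\<forall>\<sigma>\<in>nerve C p. mlin A (scod C \<sigma>) (sdom \<sigma>) q (\<phi> \<sigma>))"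

definition cochain :: "('o,'m) cat \<Rightarrow> ('o,'m,'a,'k) tpsh \<Rightarrow> nat \<Rightarrow> (nat \<Rightarrow> ('o,'m,'a) cochn) \<Rightarrow> bool" where
  "cochain C A n \<Phi> \<longleftrightarrow> (\<forall>p\<le>n. cochain_pq C A p (n - p) (\<Phi> p))"

definition normalized :: "('o,'m) cat \<Rightarrow> ('o,'m,'a,'k) tpsh \<Rightarrow> nat \<Rightarrow> (nat \<Rightarrow> ('o,'m,'a) cochn) \<Rightarrow> bool" where
  "normalized C A n \<Phi> \<longleftrightarrow> (\<forall>p\<le>n. \<forall>\<sigma>\<in>nerve C p. \<forall>xs\<in>args A (scod C \<sigma>) (n - p).
      (\<exists>i<length xs. xs ! i = pone A (scod C \<sigma>)) \<longrightarrow> \<Phi> p \<sigma> xs = pzero A (sdom \<sigma>))"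

definition reduced :: "('o,'m) cat \<Rightarrow> ('o,'m,'a,'k) tpsh \<Rightarrow> nat \<Rightarrow> (nat \<Rightarrow> ('o,'m,'a) cochn) \<Rightarrow> bool" where
  "reduced C A n \<Phi> \<longleftrightarrow> (\<forall>p\<le>n. \<forall>\<sigma>\<in>nerve C p. degenerate C \<sigma> \<longrightarrow>
      (\<forall>xs\<in>args A (scod C \<sigma>) (n - p). \<Phi> p \<sigma> xs = pzero A (sdom \<sigma>)))"

text \<open>Phi in bar C'^n_GS(A) (normalized reduced cochains).\<close>
definition NR :: "('o,'m) cat \<Rightarrow> ('o,'m,'a,'k) tpsh \<Rightarrow> nat \<Rightarrow> (nat \<Rightarrow> ('o,'m,'a) cochn) \<Rightarrow> bool" where
  "NR C A n \<Phi> \<longleftrightarrow> cochain C A n \<Phi> \<and> normalized C A n \<Phi> \<and> reduced C A n \<Phi>"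

text \<open>Phi in bar C'^n_tGS(A) (normalized reduced, with q >= 1, i.e. the (n,0) component vanishes).\<close>
definition NRt :: "('o,'m) cat \<Rightarrow> ('o,'m,'a,'k) tpsh \<Rightarrow> nat \<Rightarrow> (nat \<Rightarrow> ('o,'m,'a) cochn) \<Rightarrow> bool" where
  "NRt C A n \<Phi> \<longleftrightarrow> NR C A n \<Phi> \<and> (\<forall>\<sigma>\<in>nerve C n. \<Phi> n \<sigma> [] = pzero A (sdom \<sigma>))"

definition ceq :: "('o,'m) cat \<Rightarrow> ('o,'m,'a,'k) tpsh \<Rightarrow> nat \<Rightarrow> (nat \<Rightarrow> ('o,'m,'a) cochn)
     \<Rightarrow> (nat \<Rightarrow> ('o,'m,'a) cochn) \<Rightarrow> bool" where
  "ceq C A n \<Phi> \<Psi> \<longleftrightarrow> (\<forall>p\<le>n. \<forall>\<sigma>\<in>nerve C p. \<forall>xs\<in>args A (scod C \<sigma>) (n - p). \<Phi> p \<sigma> xs = \<Psi> p \<sigma> xs)"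

definition czero1 :: "('o,'m,'a,'k) tpsh \<Rightarrow> ('o,'m,'a) cochn" where
  "czero1 A = (\<lambda>\<sigma> xs. pzero A (sdom \<sigma>))"

definition czero :: "('o,'m,'a,'k) tpsh \<Rightarrow> nat \<Rightarrow> ('o,'m,'a) cochn" where
  "czero A = (\<lambda>p. czero1 A)"

definition cneg :: "('o,'m,'a,'k::comm_ring_1) tpsh \<Rightarrow> ('o,'m,'a) cochn \<Rightarrow> ('o,'m,'a) cochn" where
  "cneg A \<phi> = (\<lambda>\<sigma> xs. psmult A (sdom \<sigma>) (-1) (\<phi> \<sigma> xs))"

definition csub :: "('o,'m,'a,'k::comm_ring_1) tpsh \<Rightarrow> (nat \<Rightarrow> ('o,'m,'a) cochn)
     \<Rightarrow> (nat \<Rightarrow> ('o,'m,'a) cochn) \<Rightarrow> nat \<Rightarrow> ('o,'m,'a) cochn" where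
  "csub A \<Phi> \<Psi> = (\<lambda>p \<sigma> xs. padd A (sdom \<sigma>) (\<Phi> p \<sigma> xs) (psmult A (sdom \<sigma>) (-1) (\<Psi> p \<sigma> xs)))"

text \<open>(a, b) in C^{0,1} + C^{1,0}, and (a, b, c) in C^{0,2} + C^{1,1} + C^{2,0}.\<close>
definition pack2 :: "('o,'m,'a) cochn \<Rightarrow> ('o,'m,'a) cochn \<Rightarrow> nat \<Rightarrow> ('o,'m,'a) cochn" where
  "pack2 a b = (\<lambda>p. if p = 0 then a else b)"

definition pack3 :: "('o,'m,'a) cochn \<Rightarrow> ('o,'m,'a) cochn \<Rightarrow> ('o,'m,'a) cochn \<Rightarrow> nat \<Rightarrow> ('o,'m,'a) cochn" where
  "pack3 a b c = (\<lambda>p. if p = 0 then a else if p = 1 then b else c)"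

section \<open>First order deformations\<close>

text \<open>(A[eps], m + m1 eps, f + f1 eps, 1 + c1 eps) as a family of k[eps]-algebras;
  a + b eps is the pair (a, b). m1^U = m1 at (U,[]), f1^u = f1 at (Dom u,[u]),
  c1^{u,v} = c1 at (Dom v,[v,u]).\<close>
definition deform :: "('o,'m) cat \<Rightarrow> ('o,'m,'a,'k::comm_ring_1) tpsh \<Rightarrow> ('o,'m,'a) cochn
     \<Rightarrow> ('o,'m,'a) cochn \<Rightarrow> ('o,'m,'a) cochn \<Rightarrow> ('o,'m,'a \<times> 'a,'k dual) tpsh" where
  "deform C A m1 f1 c1 = \<lparr>
     pcar = (\<lambda>U. pcar A U \<times> pcar A U),
     padd = (\<lambda>U (a, b) (a', b'). (padd A U a a', padd A U b b')),
     pzero = (\<lambda>U. (pzero A U, pzero A U)),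
     psmult = (\<lambda>U r (a, b). (psmult A U (re r) a, padd A U (psmult A U (re r) b) (psmult A U (eps r) a))),
     pmul = (\<lambda>U (a, b) (a', b'). (pmul A U a a',
               padd A U (padd A U (pmul A U a b') (pmul A U b a')) (m1 (U, []) [a, a']))),
     pone = (\<lambda>U. (pone A U, pzero A U)),
     pres = (\<lambda>u (a, b). (pres A u a, padd A (Dom C u) (pres A u b) (f1 (Dom C u, [u]) [a]))),
     ptw = (\<lambda>u v. (pone A (Dom C v), c1 (Dom C v, [v, u]) []))\<rparr>"

definition is_tw_deformation :: "('o,'m) cat \<Rightarrow> ('o,'m,'a,'k::comm_ring_1) tpsh \<Rightarrow> ('o,'m,'a) cochn
     \<Rightarrow> ('o,'m,'a) cochn \<Rightarrow> ('o,'m,'a) cochn \<Rightarrow> bool" where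
  "is_tw_deformation C A m1 f1 c1 \<longleftrightarrow>
     cochain_pq C A 0 2 m1 \<and> cochain_pq C A 1 1 f1 \<and> cochain_pq C A 2 0 c1 \<and>
     is_tw_presheaf C (deform C A m1 f1 c1)"

definition is_pr_deformation :: "('o,'m) cat \<Rightarrow> ('o,'m,'a,'k::comm_ring_1) tpsh \<Rightarrow> ('o,'m,'a) cochn
     \<Rightarrow> ('o,'m,'a) cochn \<Rightarrow> bool" where
  "is_pr_deformation C A m1 f1 \<longleftrightarrow> is_tw_deformation C A m1 f1 (czero1 A)"

text \<open>g = 1 + g1 eps and tau = 1 + tau1 eps.\<close>
definition g_of :: "('o,'m,'a,'k) tpsh \<Rightarrow> ('o,'m,'a) cochn \<Rightarrow> 'o \<Rightarrow> 'a \<times> 'a \<Rightarrow> 'a \<times> 'a" where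
  "g_of A g1 = (\<lambda>U (a, b). (a, padd A U b (g1 (U, []) [a])))"

definition tau_of :: "('o,'m) cat \<Rightarrow> ('o,'m,'a,'k) tpsh \<Rightarrow> ('o,'m,'a) cochn \<Rightarrow> 'm \<Rightarrow> 'a \<times> 'a" where
  "tau_of C A \<tau>1 = (\<lambda>u. (pone A (Dom C u), \<tau>1 (Dom C u, [u]) []))"

definition TwDefs :: "('o,'m) cat \<Rightarrow> ('o,'m,'a,'k::comm_ring_1) tpsh
     \<Rightarrow> (('o,'m,'a) cochn \<times> ('o,'m,'a) cochn \<times> ('o,'m,'a) cochn) set" where
  "TwDefs C A = {(m1, f1, c1). is_tw_deformation C A m1 f1 c1}"

definition tw_equiv :: "('o,'m) cat \<Rightarrow> ('o,'m,'a,'k::comm_ring_1) tpsh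
     \<Rightarrow> ((('o,'m,'a) cochn \<times> ('o,'m,'a) cochn \<times> ('o,'m,'a) cochn) \<times>
         (('o,'m,'a) cochn \<times> ('o,'m,'a) cochn \<times> ('o,'m,'a) cochn)) set" where
  "tw_equiv C A = {((m1, f1, c1), (m1', f1', c1')).
     (m1, f1, c1) \<in> TwDefs C A \<and> (m1', f1', c1') \<in> TwDefs C A \<and>
     (\<exists>g1 \<tau>1. cochain_pq C A 0 1 g1 \<and> cochain_pq C A 1 0 \<tau>1 \<and>
        is_tw_iso C (deform C A m1 f1 c1) (deform C A m1' f1' c1') (g_of A g1) (tau_of C A \<tau>1))}"

definition PrDefs :: "('o,'m) cat \<Rightarrow> ('o,'m,'a,'k::comm_ring_1) tpsh
     \<Rightarrow> (('o,'m,'a) cochn \<times> ('o,'m,'a) cochn) set" where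
  "PrDefs C A = {(m1, f1). is_pr_deformation C A m1 f1}"

definition pr_equiv :: "('o,'m) cat \<Rightarrow> ('o,'m,'a,'k::comm_ring_1) tpsh
     \<Rightarrow> ((('o,'m,'a) cochn \<times> ('o,'m,'a) cochn) \<times> (('o,'m,'a) cochn \<times> ('o,'m,'a) cochn)) set" where
  "pr_equiv C A = {((m1, f1), (m1', f1')).
     (m1, f1) \<in> PrDefs C A \<and> (m1', f1') \<in> PrDefs C A \<and>
     (\<exists>g1. cochain_pq C A 0 1 g1 \<and>
        is_pr_iso C (deform C A m1 f1 (czero1 A)) (deform C A m1' f1' (czero1 A)) (g_of A g1))}"

definition Z2 :: "('o,'m) cat \<Rightarrow> ('o,'m,'a,'k::comm_ring_1) tpsh
     \<Rightarrow> (('o,'m,'a) cochn \<times> ('o,'m,'a) cochn \<times> ('o,'m,'a) cochn) set" where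
  "Z2 C A = {(m1, f1, c1). NR C A 2 (pack3 m1 f1 c1) \<and>
                 ceq C A 3 (dGS C A 2 (pack3 m1 f1 c1)) (czero A)}"

text \<open>Cohomologous in bar C'_GS(A); H^2 bar C'_GS(A) = Z2 // cohrel.\<close>
definition cohrel :: "('o,'m) cat \<Rightarrow> ('o,'m,'a,'k::comm_ring_1) tpsh
     \<Rightarrow> ((('o,'m,'a) cochn \<times> ('o,'m,'a) cochn \<times> ('o,'m,'a) cochn) \<times>
         (('o,'m,'a) cochn \<times> ('o,'m,'a) cochn \<times> ('o,'m,'a) cochn)) set" where
  "cohrel C A = {((m1, f1, c1), (m1', f1', c1')).
     (m1, f1, c1) \<in> Z2 C A \<and> (m1', f1', c1') \<in> Z2 C A \<and>
     (\<exists>B. NR C A 1 B \<and> ceq C A 2 (dGS C A 1 B) (csub A (pack3 m1 f1 c1) (pack3 m1' f1' c1')))}"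

definition Z2t :: "('o,'m) cat \<Rightarrow> ('o,'m,'a,'k::comm_ring_1) tpsh
     \<Rightarrow> (('o,'m,'a) cochn \<times> ('o,'m,'a) cochn) set" where
  "Z2t C A = {(m1, f1). NRt C A 2 (pack3 m1 f1 (czero1 A)) \<and>
                 ceq C A 3 (dGS C A 2 (pack3 m1 f1 (czero1 A))) (czero A)}"

definition cohrel_t :: "('o,'m) cat \<Rightarrow> ('o,'m,'a,'k::comm_ring_1) tpsh
     \<Rightarrow> ((('o,'m,'a) cochn \<times> ('o,'m,'a) cochn) \<times> (('o,'m,'a) cochn \<times> ('o,'m,'a) cochn)) set" where
  "cohrel_t C A = {((m1, f1), (m1', f1')).
     (m1, f1) \<in> Z2t C A \<and> (m1', f1') \<in> Z2t C A \<and>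
     (\<exists>B. NRt C A 1 B \<and>
        ceq C A 2 (dGS C A 1 B) (csub A (pack3 m1 f1 (czero1 A)) (pack3 m1' f1' (czero1 A))))}"

end

theory Submission
  imports Defs "HOL-Algebra.Ring"
begin


definition RU :: "('o,'m,'a,'k) tpsh \<Rightarrow> 'o \<Rightarrow> 'a ring" where
 "RU T U = \<lparr>carrier = pcar T U, monoid.mult = pmul T U, one = pone T U, zero = pzero T U, add = padd T U\<rparr>"

lemma RU_simps:
  "pcar T U = carrier (RU T U)"
  "padd T U x y = x \<oplus>\<^bsub>RU T U\<^esub> y"
  "pmul T U x y = x \<otimes>\<^bsub>RU T U\<^esub> y"
  "pzero T U = \<zero>\<^bsub>RU T U\<^esub>"
  "pone T U = \<one>\<^bsub>RU T U\<^esub>"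
  by (simp_all add: RU_def)

lemma alg_iff:
  fixes T :: "('o,'m,'a,'k::comm_ring_1) tpsh"
  shows "is_algebra T U \<longleftrightarrow>
   pzero T U \<in> pcar T U \<and>
   pone T U \<in> pcar T U \<and>
   (\<forall>a\<in>pcar T U. \<forall>b\<in>pcar T U. padd T U a b \<in> pcar T U \<and> pmul T U a b \<in> pcar T U) \<and>
   (\<forall>r. \<forall>a\<in>pcar T U. psmult T U r a \<in> pcar T U) \<and>
   (\<forall>a\<in>pcar T U. \<forall>b\<in>pcar T U. \<forall>c\<in>pcar T U. padd T U (padd T U a b) c = padd T U a (padd T U b c)) \<and>
   (\<forall>a\<in>pcar T U. \<forall>b\<in>pcar T U. padd T U a b = padd T U b a) \<and>
   (\<forall>a\<in>pcar T U. padd T U (pzero T U) a = a) \<and>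
   (\<forall>a\<in>pcar T U. \<exists>b\<in>pcar T U. padd T U a b = pzero T U) \<and>
   (\<forall>r s. \<forall>a\<in>pcar T U. psmult T U (r + s) a = padd T U (psmult T U r a) (psmult T U s a)) \<and>
   (\<forall>r. \<forall>a\<in>pcar T U. \<forall>b\<in>pcar T U. psmult T U r (padd T U a b) = padd T U (psmult T U r a) (psmult T U r b)) \<and>
   (\<forall>r s. \<forall>a\<in>pcar T U. psmult T U (r * s) a = psmult T U r (psmult T U s a)) \<and>
   (\<forall>a\<in>pcar T U. psmult T U 1 a = a) \<and>
   (\<forall>a\<in>pcar T U. \<forall>b\<in>pcar T U. \<forall>c\<in>pcar T U. pmul T U (pmul T U a b) c = pmul T U a (pmul T U b c)) \<and>
   (\<forall>a\<in>pcar T U. pmul T U (pone T U) a = a \<and> pmul T U a (pone T U) = a) \<and>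
   (\<forall>a\<in>pcar T U. \<forall>b\<in>pcar T U. \<forall>c\<in>pcar T U. pmul T U a (padd T U b c) = padd T U (pmul T U a b) (pmul T U a c) \<and> pmul T U (padd T U a b) c = padd T U (pmul T U a c) (pmul T U b c)) \<and>
   (\<forall>r. \<forall>a\<in>pcar T U. \<forall>b\<in>pcar T U. pmul T U (psmult T U r a) b = psmult T U r (pmul T U a b) \<and> pmul T U a (psmult T U r b) = psmult T U r (pmul T U a b))"
  unfolding is_algebra_def Let_def by (rule refl)
lemmas algc0 = alg_iff[THEN iffD1, THEN conjunct1]
lemmas algc1 = alg_iff[THEN iffD1, THEN conjunct2, THEN conjunct1]
lemmas algc2 = alg_iff[THEN iffD1, THEN conjunct2, THEN conjunct2, THEN conjunct1]
lemmas algc3 = alg_iff[THEN iffD1, THEN conjunct2, THEN conjunct2, THEN conjunct2, THEN conjunct1]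
lemmas algc4 = alg_iff[THEN iffD1, THEN conjunct2, THEN conjunct2, THEN conjunct2, THEN conjunct2, THEN conjunct1]
lemmas algc5 = alg_iff[THEN iffD1, THEN conjunct2, THEN conjunct2, THEN conjunct2, THEN conjunct2, THEN conjunct2, THEN conjunct1]
lemmas algc6 = alg_iff[THEN iffD1, THEN conjunct2, THEN conjunct2, THEN conjunct2, THEN conjunct2, THEN conjunct2, THEN conjunct2, THEN conjunct1]
lemmas algc7 = alg_iff[THEN iffD1, THEN conjunct2, THEN conjunct2, THEN conjunct2, THEN conjunct2, THEN conjunct2, THEN conjunct2, THEN conjunct2, THEN conjunct1]
lemmas algc8 = alg_iff[THEN iffD1, THEN conjunct2, THEN conjunct2, THEN conjunct2, THEN conjunct2, THEN conjunct2, THEN conjunct2, THEN conjunct2, THEN conjunct2, THEN conjunct1]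
lemmas algc9 = alg_iff[THEN iffD1, THEN conjunct2, THEN conjunct2, THEN conjunct2, THEN conjunct2, THEN conjunct2, THEN conjunct2, THEN conjunct2, THEN conjunct2, THEN conjunct2, THEN conjunct1]
lemmas algc10 = alg_iff[THEN iffD1, THEN conjunct2, THEN conjunct2, THEN conjunct2, THEN conjunct2, THEN conjunct2, THEN conjunct2, THEN conjunct2, THEN conjunct2, THEN conjunct2, THEN conjunct2, THEN conjunct1]
lemmas algc11 = alg_iff[THEN iffD1, THEN conjunct2, THEN conjunct2, THEN conjunct2, THEN conjunct2, THEN conjunct2, THEN conjunct2, THEN conjunct2, THEN conjunct2, THEN conjunct2, THEN conjunct2, THEN conjunct2, THEN conjunct1]
lemmas algc12 = alg_iff[THEN iffD1, THEN conjunct2, THEN conjunct2, THEN conjunct2, THEN conjunct2, THEN conjunct2, THEN conjunct2, THEN conjunct2, THEN conjunct2, THEN conjunct2, THEN conjunct2, THEN conjunct2, THEN conjunct2, THEN conjunct1]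
lemmas algc13 = alg_iff[THEN iffD1, THEN conjunct2, THEN conjunct2, THEN conjunct2, THEN conjunct2, THEN conjunct2, THEN conjunct2, THEN conjunct2, THEN conjunct2, THEN conjunct2, THEN conjunct2, THEN conjunct2, THEN conjunct2, THEN conjunct2, THEN conjunct1]
lemmas algc14 = alg_iff[THEN iffD1, THEN conjunct2, THEN conjunct2, THEN conjunct2, THEN conjunct2, THEN conjunct2, THEN conjunct2, THEN conjunct2, THEN conjunct2, THEN conjunct2, THEN conjunct2, THEN conjunct2, THEN conjunct2, THEN conjunct2, THEN conjunct2, THEN conjunct1]
lemmas algc15 = alg_iff[THEN iffD1, THEN conjunct2, THEN conjunct2, THEN conjunct2, THEN conjunct2, THEN conjunct2, THEN conjunct2, THEN conjunct2, THEN conjunct2, THEN conjunct2, THEN conjunct2, THEN conjunct2, THEN conjunct2, THEN conjunct2, THEN conjunct2, THEN conjunct2]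

lemma algE:
  fixes T :: "('o,'m,'a,'k::comm_ring_1) tpsh"
  assumes "is_algebra T U"
  defines "S \<equiv> carrier (RU T U)" and "sm \<equiv> psmult T U"
  shows "\<zero>\<^bsub>RU T U\<^esub> \<in> S" "\<one>\<^bsub>RU T U\<^esub> \<in> S"
   "\<And>a b. a \<in> S \<Longrightarrow> b \<in> S \<Longrightarrow> a \<oplus>\<^bsub>RU T U\<^esub> b \<in> S"
   "\<And>a b. a \<in> S \<Longrightarrow> b \<in> S \<Longrightarrow> a \<otimes>\<^bsub>RU T U\<^esub> b \<in> S"
   "\<And>r a. a \<in> S \<Longrightarrow> sm r a \<in> S"
   "\<And>a b c. a \<in> S \<Longrightarrow> b \<in> S \<Longrightarrow> c \<in> S \<Longrightarrow> (a \<oplus>\<^bsub>RU T U\<^esub> b) \<oplus>\<^bsub>RU T U\<^esub> c = a \<oplus>\<^bsub>RU T U\<^esub> (b \<oplus>\<^bsub>RU T U\<^esub> c)"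
   "\<And>a b. a \<in> S \<Longrightarrow> b \<in> S \<Longrightarrow> a \<oplus>\<^bsub>RU T U\<^esub> b = b \<oplus>\<^bsub>RU T U\<^esub> a"
   "\<And>a. a \<in> S \<Longrightarrow> \<zero>\<^bsub>RU T U\<^esub> \<oplus>\<^bsub>RU T U\<^esub> a = a"
   "\<And>a. a \<in> S \<Longrightarrow> \<exists>b\<in>S. a \<oplus>\<^bsub>RU T U\<^esub> b = \<zero>\<^bsub>RU T U\<^esub>"
   "\<And>r s a. a \<in> S \<Longrightarrow> sm (r + s) a = sm r a \<oplus>\<^bsub>RU T U\<^esub> sm s a"
   "\<And>r a b. a \<in> S \<Longrightarrow> b \<in> S \<Longrightarrow> sm r (a \<oplus>\<^bsub>RU T U\<^esub> b) = sm r a \<oplus>\<^bsub>RU T U\<^esub> sm r b"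
   "\<And>r s a. a \<in> S \<Longrightarrow> sm (r * s) a = sm r (sm s a)"
   "\<And>a. a \<in> S \<Longrightarrow> sm 1 a = a"
   "\<And>a b c. a \<in> S \<Longrightarrow> b \<in> S \<Longrightarrow> c \<in> S \<Longrightarrow> (a \<otimes>\<^bsub>RU T U\<^esub> b) \<otimes>\<^bsub>RU T U\<^esub> c = a \<otimes>\<^bsub>RU T U\<^esub> (b \<otimes>\<^bsub>RU T U\<^esub> c)"
   "\<And>a. a \<in> S \<Longrightarrow> \<one>\<^bsub>RU T U\<^esub> \<otimes>\<^bsub>RU T U\<^esub> a = a"
   "\<And>a. a \<in> S \<Longrightarrow> a \<otimes>\<^bsub>RU T U\<^esub> \<one>\<^bsub>RU T U\<^esub> = a"
   "\<And>a b c. a \<in> S \<Longrightarrow> b \<in> S \<Longrightarrow> c \<in> S \<Longrightarrow> a \<otimes>\<^bsub>RU T U\<^esub> (b \<oplus>\<^bsub>RU T U\<^esub> c) = a \<otimes>\<^bsub>RU T U\<^esub> b \<oplus>\<^bsub>RU T U\<^esub> a \<otimes>\<^bsub>RU T U\<^esub> c"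
   "\<And>a b c. a \<in> S \<Longrightarrow> b \<in> S \<Longrightarrow> c \<in> S \<Longrightarrow> (a \<oplus>\<^bsub>RU T U\<^esub> b) \<otimes>\<^bsub>RU T U\<^esub> c = a \<otimes>\<^bsub>RU T U\<^esub> c \<oplus>\<^bsub>RU T U\<^esub> b \<otimes>\<^bsub>RU T U\<^esub> c"
   "\<And>r a b. a \<in> S \<Longrightarrow> b \<in> S \<Longrightarrow> (sm r a) \<otimes>\<^bsub>RU T U\<^esub> b = sm r (a \<otimes>\<^bsub>RU T U\<^esub> b)"
   "\<And>r a b. a \<in> S \<Longrightarrow> b \<in> S \<Longrightarrow> a \<otimes>\<^bsub>RU T U\<^esub> (sm r b) = sm r (a \<otimes>\<^bsub>RU T U\<^esub> b)"
  unfolding S_def sm_def RU_simps[symmetric]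
  using algc0[OF assms(1)] algc1[OF assms(1)] apply simp_all[2]
  using algc2[OF assms(1)] apply simp_all[2]
  using algc3[OF assms(1)] apply simp
  using algc4[OF assms(1)] apply simp
  using algc5[OF assms(1)] apply simp
  using algc6[OF assms(1)] apply simp
  using algc7[OF assms(1)] apply simp
  using algc8[OF assms(1)] apply simp
  using algc9[OF assms(1)] apply simp
  using algc10[OF assms(1)] apply simp
  using algc11[OF assms(1)] apply simp
  using algc12[OF assms(1)] apply simp
  using algc13[OF assms(1)] apply simp_all[2]
  using algc14[OF assms(1)] apply simp_all[2]
  using algc15[OF assms(1)] apply simp_all[2]
  done

lemma algebra_ring:
  assumes "is_algebra T U" shows "ring (RU T U)"
  apply (rule ringI)
     apply (rule abelian_groupI)
  using algE[OF assms(1)] apply (simp_all)[5]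
    apply (metis algE(7,9)[OF assms])
   apply (rule monoidI) using algE[OF assms(1)] apply (simp_all)
  done

lemma algebra_sm:
  assumes "is_algebra T U" and x: "x \<in> carrier (RU T U)"
  shows "psmult T U 1 x = x" "psmult T U 0 x = \<zero>\<^bsub>RU T U\<^esub>"
    "psmult T U (-1) x = \<ominus>\<^bsub>RU T U\<^esub> x"
proof -
  interpret R: ring "RU T U" using algebra_ring[OF assms(1)] .
  note a = algE[OF assms(1)]
  show 1: "psmult T U 1 x = x" using a x by auto
  have c: "psmult T U r x \<in> carrier (RU T U)" for r using a x by auto
  have "psmult T U (0+0) x = psmult T U 0 x \<oplus>\<^bsub>RU T U\<^esub> psmult T U 0 x" using a(10) x by blast
  then show 0: "psmult T U 0 x = \<zero>\<^bsub>RU T U\<^esub>" using c[of 0]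
    by (metis R.add.l_cancel_one R.add.r_cancel_one' add_0)
  have "psmult T U (1 + -1) x = psmult T U 1 x \<oplus>\<^bsub>RU T U\<^esub> psmult T U (-1) x" using a(10) x by blast
  then have "x \<oplus>\<^bsub>RU T U\<^esub> psmult T U (-1) x = \<zero>\<^bsub>RU T U\<^esub>" using 0 1 by simp
  then show "psmult T U (-1) x = \<ominus>\<^bsub>RU T U\<^esub> x" using c x
    by (metis R.add.inv_comm R.minus_equality R.add.m_comm)
qed

lemma algebra_sm_zero:
  assumes "is_algebra T U"
  shows "psmult T U r \<zero>\<^bsub>RU T U\<^esub> = \<zero>\<^bsub>RU T U\<^esub>"
proof -
  interpret R: ring "RU T U" using algebra_ring[OF assms(1)] .
  note a = algE[OF assms(1)]
  have z: "\<zero>\<^bsub>RU T U\<^esub> \<in> carrier (RU T U)" by simp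
  have "psmult T U r (\<zero>\<^bsub>RU T U\<^esub> \<oplus>\<^bsub>RU T U\<^esub> \<zero>\<^bsub>RU T U\<^esub>) = psmult T U r \<zero>\<^bsub>RU T U\<^esub> \<oplus>\<^bsub>RU T U\<^esub> psmult T U r \<zero>\<^bsub>RU T U\<^esub>"
    using a(11) z by blast
  then show ?thesis using a(5)[OF z, of r]
    by (metis R.add.l_cancel_one R.add.r_cancel_one' R.l_zero z)
qed



lemma all_less_Suc': "(\<forall>i<Suc n. P i) \<longleftrightarrow> (\<forall>i<n. P i) \<and> P n"
  by (auto simp: less_Suc_eq)
lemma all_less_1: "(\<forall>i<(1::nat). P i) \<longleftrightarrow> P 0" by auto
lemma all_less_2: "(\<forall>i<(2::nat). P i) \<longleftrightarrow> P 0 \<and> P 1"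
  by (auto simp: eval_nat_numeral less_Suc_eq)
lemma all_less_3: "(\<forall>i<(3::nat). P i) \<longleftrightarrow> P 0 \<and> P 1 \<and> P 2"
  by (auto simp: eval_nat_numeral less_Suc_eq)
lemma all_le_1: "(\<forall>i\<le>(1::nat). P i) \<longleftrightarrow> P 0 \<and> P 1"
  by (auto simp: le_Suc_eq)
lemma all_le_2: "(\<forall>i\<le>(2::nat). P i) \<longleftrightarrow> P 0 \<and> P 1 \<and> P 2"
  by (auto simp: eval_nat_numeral le_Suc_eq)
lemma all_le_3: "(\<forall>i\<le>(3::nat). P i) \<longleftrightarrow> P 0 \<and> P 1 \<and> P 2 \<and> P 3"
  by (auto simp: eval_nat_numeral le_Suc_eq)

locale GS =
  fixes C :: "('o,'m) cat" and A :: "('o,'m,'a,'k::comm_ring_1) tpsh"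
  assumes cat: "is_category C" and psh: "is_presheaf C A"
begin

abbreviation R where "R U \<equiv> RU A U"

lemmas catc0 = cat[unfolded is_category_def]
lemmas catc = catc0[THEN conjunct1] catc0[THEN conjunct2, THEN conjunct1]
  catc0[THEN conjunct2, THEN conjunct2, THEN conjunct1]
  catc0[THEN conjunct2, THEN conjunct2, THEN conjunct2, THEN conjunct1]
  catc0[THEN conjunct2, THEN conjunct2, THEN conjunct2, THEN conjunct2]

lemma dom_ob[simp]: "u \<in> Mor C \<Longrightarrow> Dom C u \<in> Ob C" using catc(1) by blast
lemma cod_ob[simp]: "u \<in> Mor C \<Longrightarrow> Cod C u \<in> Ob C" using catc(1) by blast
lemma ident_mor[simp]: "U \<in> Ob C \<Longrightarrow> Ident C U \<in> Mor C" using catc(2) by blast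
lemma ident_dom[simp]: "U \<in> Ob C \<Longrightarrow> Dom C (Ident C U) = U" using catc(2) by blast
lemma ident_cod[simp]: "U \<in> Ob C \<Longrightarrow> Cod C (Ident C U) = U" using catc(2) by blast
lemma comp_mor[simp]: "u \<in> Mor C \<Longrightarrow> v \<in> Mor C \<Longrightarrow> Cod C v = Dom C u \<Longrightarrow> Comp C u v \<in> Mor C"
  using catc(3) by blast
lemma comp_dom[simp]: "u \<in> Mor C \<Longrightarrow> v \<in> Mor C \<Longrightarrow> Cod C v = Dom C u \<Longrightarrow> Dom C (Comp C u v) = Dom C v"
  using catc(3) by blast
lemma comp_cod[simp]: "u \<in> Mor C \<Longrightarrow> v \<in> Mor C \<Longrightarrow> Cod C v = Dom C u \<Longrightarrow> Cod C (Comp C u v) = Cod C u"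
  using catc(3) by blast
lemma comp_id_r[simp]: "u \<in> Mor C \<Longrightarrow> Comp C u (Ident C (Dom C u)) = u" using catc(5) by blast
lemma comp_id_l[simp]: "u \<in> Mor C \<Longrightarrow> Comp C (Ident C (Cod C u)) u = u" using catc(5) by blast

lemma comp_assoc: "u \<in> Mor C \<Longrightarrow> v \<in> Mor C \<Longrightarrow> w \<in> Mor C \<Longrightarrow> Cod C w = Dom C v \<Longrightarrow> Cod C v = Dom C u \<Longrightarrow>
   Comp C (Comp C u v) w = Comp C u (Comp C v w)"
  using catc(4) by blast

lemma alg: "U \<in> Ob C \<Longrightarrow> is_algebra A U"
  using psh unfolding is_presheaf_def by blast

lemma ringR: "U \<in> Ob C \<Longrightarrow> ring (R U)"
  using algebra_ring[OF alg] .

lemmas rs = ring.ring_simprules[OF ringR]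

lemma sm1[simp]: "U \<in> Ob C \<Longrightarrow> x \<in> carrier (R U) \<Longrightarrow> psmult A U 1 x = x"
  and sm0[simp]: "U \<in> Ob C \<Longrightarrow> x \<in> carrier (R U) \<Longrightarrow> psmult A U 0 x = \<zero>\<^bsub>R U\<^esub>"
  and smm1[simp]: "U \<in> Ob C \<Longrightarrow> x \<in> carrier (R U) \<Longrightarrow> psmult A U (-1) x = \<ominus>\<^bsub>R U\<^esub> x"
  using algebra_sm[OF alg] by auto

lemma sm_car[simp]: "U \<in> Ob C \<Longrightarrow> x \<in> carrier (R U) \<Longrightarrow> psmult A U r x \<in> carrier (R U)"
  using algE(5)[OF alg] by blast

lemma sm_zero[simp]: "U \<in> Ob C \<Longrightarrow> psmult A U r \<zero>\<^bsub>R U\<^esub> = \<zero>\<^bsub>R U\<^esub>"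
  using algebra_sm_zero[OF alg] .

lemma sm_add: "U \<in> Ob C \<Longrightarrow> x \<in> carrier (R U) \<Longrightarrow> y \<in> carrier (R U) \<Longrightarrow>
    psmult A U r (x \<oplus>\<^bsub>R U\<^esub> y) = psmult A U r x \<oplus>\<^bsub>R U\<^esub> psmult A U r y"
  using algE(11)[OF alg] by blast
lemma add_sm: "U \<in> Ob C \<Longrightarrow> x \<in> carrier (R U) \<Longrightarrow>
    psmult A U (r + s) x = psmult A U r x \<oplus>\<^bsub>R U\<^esub> psmult A U s x"
  using algE(10)[OF alg] by blast
lemma sm_mul_l: "U \<in> Ob C \<Longrightarrow> x \<in> carrier (R U) \<Longrightarrow> y \<in> carrier (R U) \<Longrightarrow>
    psmult A U r x \<otimes>\<^bsub>R U\<^esub> y = psmult A U r (x \<otimes>\<^bsub>R U\<^esub> y)"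
  using algE(19)[OF alg] by blast
lemma sm_mul_r: "U \<in> Ob C \<Longrightarrow> x \<in> carrier (R U) \<Longrightarrow> y \<in> carrier (R U) \<Longrightarrow>
    x \<otimes>\<^bsub>R U\<^esub> psmult A U r y = psmult A U r (x \<otimes>\<^bsub>R U\<^esub> y)"
  using algE(20)[OF alg] by blast
lemma sm_sm: "U \<in> Ob C \<Longrightarrow> x \<in> carrier (R U) \<Longrightarrow>
    psmult A U (r * s) x = psmult A U r (psmult A U s x)"
  using algE(12)[OF alg] by blast

lemma sm_neg: "U \<in> Ob C \<Longrightarrow> x \<in> carrier (R U) \<Longrightarrow>
    psmult A U r (\<ominus>\<^bsub>R U\<^esub> x) = \<ominus>\<^bsub>R U\<^esub> psmult A U r x"
proof -
  assume U: "U \<in> Ob C" and x: "x \<in> carrier (R U)"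
  have "psmult A U r (\<ominus>\<^bsub>R U\<^esub> x) = psmult A U (r * -1) x"
    using sm_sm[OF U x, of r "-1"] U x by simp
  also have "\<dots> = psmult A U (-1 * r) x" by (simp add: mult.commute)
  also have "\<dots> = \<ominus>\<^bsub>R U\<^esub> psmult A U r x" using sm_sm[OF U x, of "-1" r] U x by simp
  finally show ?thesis .
qed

lemma res_alg: "u \<in> Mor C \<Longrightarrow> alg_map A (Cod C u) A (Dom C u) (pres A u)"
  using psh unfolding is_presheaf_def by blast

lemma pres_car[simp]: "u \<in> Mor C \<Longrightarrow> a \<in> carrier (R (Cod C u)) \<Longrightarrow> pres A u a \<in> carrier (R (Dom C u))"
  and pres_add[simp]: "u \<in> Mor C \<Longrightarrow> a \<in> carrier (R (Cod C u)) \<Longrightarrow> b \<in> carrier (R (Cod C u)) \<Longrightarrow>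
      pres A u (a \<oplus>\<^bsub>R (Cod C u)\<^esub> b) = pres A u a \<oplus>\<^bsub>R (Dom C u)\<^esub> pres A u b"
  and pres_mul[simp]: "u \<in> Mor C \<Longrightarrow> a \<in> carrier (R (Cod C u)) \<Longrightarrow> b \<in> carrier (R (Cod C u)) \<Longrightarrow>
      pres A u (a \<otimes>\<^bsub>R (Cod C u)\<^esub> b) = pres A u a \<otimes>\<^bsub>R (Dom C u)\<^esub> pres A u b"
  and pres_sm[simp]: "u \<in> Mor C \<Longrightarrow> a \<in> carrier (R (Cod C u)) \<Longrightarrow>
      pres A u (psmult A (Cod C u) r a) = psmult A (Dom C u) r (pres A u a)"
  and pres_one[simp]: "u \<in> Mor C \<Longrightarrow> pres A u \<one>\<^bsub>R (Cod C u)\<^esub> = \<one>\<^bsub>R (Dom C u)\<^esub>"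
  using res_alg unfolding alg_map_def RU_simps by auto

lemma pres_zero[simp]: "u \<in> Mor C \<Longrightarrow> pres A u \<zero>\<^bsub>R (Cod C u)\<^esub> = \<zero>\<^bsub>R (Dom C u)\<^esub>"
proof -
  assume u: "u \<in> Mor C"
  have o: "\<one>\<^bsub>R (Cod C u)\<^esub> \<in> carrier (R (Cod C u))" using rs(6)[of "Cod C u"] u by simp
  have e1: "psmult A (Cod C u) 0 \<one>\<^bsub>R (Cod C u)\<^esub> = \<zero>\<^bsub>R (Cod C u)\<^esub>" using u o by simp
  have e2: "pres A u (psmult A (Cod C u) 0 \<one>\<^bsub>R (Cod C u)\<^esub>) = psmult A (Dom C u) 0 (pres A u \<one>\<^bsub>R (Cod C u)\<^esub>)"
    by (rule pres_sm[OF u o])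
  have e3: "psmult A (Dom C u) 0 (pres A u \<one>\<^bsub>R (Cod C u)\<^esub>) = \<zero>\<^bsub>R (Dom C u)\<^esub>"
    using u o rs(6)[of "Dom C u"] by simp
  show ?thesis using e1 e2 e3 by simp
qed

lemma pres_neg[simp]: "u \<in> Mor C \<Longrightarrow> a \<in> carrier (R (Cod C u)) \<Longrightarrow>
      pres A u (\<ominus>\<^bsub>R (Cod C u)\<^esub> a) = \<ominus>\<^bsub>R (Dom C u)\<^esub> pres A u a"
proof -
  assume u: "u \<in> Mor C" and a: "a \<in> carrier (R (Cod C u))"
  have e1: "psmult A (Cod C u) (-1) a = \<ominus>\<^bsub>R (Cod C u)\<^esub> a" using u a by simp
  have e2: "pres A u (psmult A (Cod C u) (-1) a) = psmult A (Dom C u) (-1) (pres A u a)"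
    by (rule pres_sm[OF u a])
  have e3: "psmult A (Dom C u) (-1) (pres A u a) = \<ominus>\<^bsub>R (Dom C u)\<^esub> pres A u a" using u a by simp
  show ?thesis unfolding e1[symmetric] e3[symmetric] by (rule e2)
qed

lemma pres_car'[simp]: "u \<in> Mor C \<Longrightarrow> Cod C u = U \<Longrightarrow> a \<in> carrier (R U) \<Longrightarrow> pres A u a \<in> carrier (R (Dom C u))"
  and pres_add'[simp]: "u \<in> Mor C \<Longrightarrow> Cod C u = U \<Longrightarrow> a \<in> carrier (R U) \<Longrightarrow> b \<in> carrier (R U) \<Longrightarrow>
      pres A u (a \<oplus>\<^bsub>R U\<^esub> b) = pres A u a \<oplus>\<^bsub>R (Dom C u)\<^esub> pres A u b"
  and pres_mul'[simp]: "u \<in> Mor C \<Longrightarrow> Cod C u = U \<Longrightarrow> a \<in> carrier (R U) \<Longrightarrow> b \<in> carrier (R U) \<Longrightarrow>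
      pres A u (a \<otimes>\<^bsub>R U\<^esub> b) = pres A u a \<otimes>\<^bsub>R (Dom C u)\<^esub> pres A u b"
  and pres_sm'[simp]: "u \<in> Mor C \<Longrightarrow> Cod C u = U \<Longrightarrow> a \<in> carrier (R U) \<Longrightarrow>
      pres A u (psmult A U r a) = psmult A (Dom C u) r (pres A u a)"
  and pres_one'[simp]: "u \<in> Mor C \<Longrightarrow> Cod C u = U \<Longrightarrow> pres A u \<one>\<^bsub>R U\<^esub> = \<one>\<^bsub>R (Dom C u)\<^esub>"
  and pres_zero'[simp]: "u \<in> Mor C \<Longrightarrow> Cod C u = U \<Longrightarrow> pres A u \<zero>\<^bsub>R U\<^esub> = \<zero>\<^bsub>R (Dom C u)\<^esub>"
  and pres_neg'[simp]: "u \<in> Mor C \<Longrightarrow> Cod C u = U \<Longrightarrow> a \<in> carrier (R U) \<Longrightarrow>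
      pres A u (\<ominus>\<^bsub>R U\<^esub> a) = \<ominus>\<^bsub>R (Dom C u)\<^esub> pres A u a"
  by auto

lemma pres_id[simp]: "U \<in> Ob C \<Longrightarrow> a \<in> carrier (R U) \<Longrightarrow> pres A (Ident C U) a = a"
  using psh unfolding is_presheaf_def RU_simps by blast

lemma pres_comp: "u \<in> Mor C \<Longrightarrow> v \<in> Mor C \<Longrightarrow> Cod C v = Dom C u \<Longrightarrow> a \<in> carrier (R (Cod C u)) \<Longrightarrow>
   pres A (Comp C u v) a = pres A v (pres A u a)"
  using psh unfolding is_presheaf_def RU_simps by blast

lemma nerve0_iff: "(U, us) \<in> nerve C 0 \<longleftrightarrow> us = [] \<and> U \<in> Ob C"
  unfolding nerve_def by auto

lemma nerve1_iff: "(U, us) \<in> nerve C 1 \<longleftrightarrow> (\<exists>u. us = [u] \<and> u \<in> Mor C \<and> U = Dom C u)"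
  unfolding nerve_def by (auto simp: length_Suc_conv)

lemma nerve2_iff: "(U, us) \<in> nerve C 2 \<longleftrightarrow>
   (\<exists>u v. us = [v, u] \<and> u \<in> Mor C \<and> v \<in> Mor C \<and> Cod C v = Dom C u \<and> U = Dom C v)"
proof
  assume "(U, us) \<in> nerve C 2"
  then have l: "length us = 2" and s: "set us \<subseteq> Mor C"
    and d: "\<forall>i<length us. Dom C (us ! i) = (if i = 0 then U else Cod C (us ! (i - 1)))"
    unfolding nerve_def by auto
  from l obtain v u where us: "us = [v, u]" by (auto simp: numeral_2_eq_2 length_Suc_conv)
  have d0: "Dom C v = U" using d[rule_format, of 0] us by simp
  have d1: "Dom C u = Cod C v" using d[rule_format, of 1] us by simp
  show "\<exists>u v. us = [v, u] \<and> u \<in> Mor C \<and> v \<in> Mor C \<and> Cod C v = Dom C u \<and> U = Dom C v"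
    using us s d0 d1 by auto
next
  assume "\<exists>u v. us = [v, u] \<and> u \<in> Mor C \<and> v \<in> Mor C \<and> Cod C v = Dom C u \<and> U = Dom C v"
  then obtain u v where h: "us = [v, u]" "u \<in> Mor C" "v \<in> Mor C" "Cod C v = Dom C u" "U = Dom C v" by blast
  show "(U, us) \<in> nerve C 2" unfolding nerve_def using h by (auto simp: less_Suc_eq)
qed

lemma nerve3_iff: "(U, us) \<in> nerve C 3 \<longleftrightarrow>
   (\<exists>u v w. us = [w, v, u] \<and> u \<in> Mor C \<and> v \<in> Mor C \<and> w \<in> Mor C \<and>
      Cod C v = Dom C u \<and> Cod C w = Dom C v \<and> U = Dom C w)"
proof
  assume "(U, us) \<in> nerve C 3"
  then have l: "length us = 3" and s: "set us \<subseteq> Mor C"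
    and d: "\<forall>i<length us. Dom C (us ! i) = (if i = 0 then U else Cod C (us ! (i - 1)))"
    unfolding nerve_def by auto
  from l obtain w v u where us: "us = [w, v, u]" by (auto simp: numeral_3_eq_3 length_Suc_conv)
  have d0: "Dom C w = U" using d[rule_format, of 0] us by simp
  have d1: "Dom C v = Cod C w" using d[rule_format, of 1] us by simp
  have d2: "Dom C u = Cod C v" using d[rule_format, of 2] us by simp
  show "\<exists>u v w. us = [w, v, u] \<and> u \<in> Mor C \<and> v \<in> Mor C \<and> w \<in> Mor C \<and>
      Cod C v = Dom C u \<and> Cod C w = Dom C v \<and> U = Dom C w"
    using us s d0 d1 d2 by auto
next
  assume "\<exists>u v w. us = [w, v, u] \<and> u \<in> Mor C \<and> v \<in> Mor C \<and> w \<in> Mor C \<and>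
      Cod C v = Dom C u \<and> Cod C w = Dom C v \<and> U = Dom C w"
  then obtain u v w where h: "us = [w, v, u]" "u \<in> Mor C" "v \<in> Mor C" "w \<in> Mor C"
    "Cod C v = Dom C u" "Cod C w = Dom C v" "U = Dom C w" by blast
  show "(U, us) \<in> nerve C 3" unfolding nerve_def using h by (auto simp: less_Suc_eq)
qed

lemma ball_nerve0: "(\<forall>\<sigma>\<in>nerve C 0. P \<sigma>) \<longleftrightarrow> (\<forall>U\<in>Ob C. P (U, []))"
  unfolding Ball_def split_paired_All by (auto simp: nerve0_iff)
lemma ball_nerve1: "(\<forall>\<sigma>\<in>nerve C 1. P \<sigma>) \<longleftrightarrow> (\<forall>u\<in>Mor C. P (Dom C u, [u]))"
  unfolding Ball_def split_paired_All by (auto simp: nerve1_iff nerve1_iff[unfolded One_nat_def])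
lemma ball_nerve2: "(\<forall>\<sigma>\<in>nerve C 2. P \<sigma>) \<longleftrightarrow>
   (\<forall>u\<in>Mor C. \<forall>v\<in>Mor C. Cod C v = Dom C u \<longrightarrow> P (Dom C v, [v, u]))"
  unfolding Ball_def split_paired_All by (auto simp: nerve2_iff)
lemma ball_nerve3: "(\<forall>\<sigma>\<in>nerve C 3. P \<sigma>) \<longleftrightarrow>
   (\<forall>u\<in>Mor C. \<forall>v\<in>Mor C. \<forall>w\<in>Mor C. Cod C v = Dom C u \<longrightarrow> Cod C w = Dom C v \<longrightarrow> P (Dom C w, [w, v, u]))"
  unfolding Ball_def split_paired_All by (auto simp: nerve3_iff)

lemma args0: "(\<forall>xs\<in>args A U 0. P xs) \<longleftrightarrow> P []"
  unfolding args_def by auto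
lemma args1: "(\<forall>xs\<in>args A U 1. P xs) \<longleftrightarrow> (\<forall>a\<in>carrier (R U). P [a])"
  unfolding args_def RU_simps by (auto simp: length_Suc_conv)
lemma args2: "(\<forall>xs\<in>args A U 2. P xs) \<longleftrightarrow> (\<forall>a\<in>carrier (R U). \<forall>b\<in>carrier (R U). P [a, b])"
  unfolding args_def RU_simps by (auto simp: length_Suc_conv numeral_2_eq_2)
lemma args3: "(\<forall>xs\<in>args A U 3. P xs) \<longleftrightarrow> (\<forall>a\<in>carrier (R U). \<forall>b\<in>carrier (R U). \<forall>c\<in>carrier (R U). P [a, b, c])"
  unfolding args_def RU_simps by (auto simp: length_Suc_conv numeral_3_eq_3)

lemma mlin0: "mlin A U V 0 \<phi> \<longleftrightarrow> \<phi> [] \<in> carrier (R V)"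
  unfolding mlin_def args0 by (simp add: RU_simps)

lemma mlin1: "mlin A U V 1 \<phi> \<longleftrightarrow>
   (\<forall>a\<in>carrier (R U). \<phi> [a] \<in> carrier (R V)) \<and>
   (\<forall>a\<in>carrier (R U). \<forall>b\<in>carrier (R U). \<phi> [a \<oplus>\<^bsub>R U\<^esub> b] = \<phi> [a] \<oplus>\<^bsub>R V\<^esub> \<phi> [b]) \<and>
   (\<forall>a\<in>carrier (R U). \<forall>r. \<phi> [psmult A U r a] = psmult A V r (\<phi> [a]))"
  unfolding mlin_def args1 all_less_1 by (auto simp: RU_simps)

lemma mlin2: "mlin A U V 2 \<phi> \<longleftrightarrow>
   (\<forall>a\<in>carrier (R U). \<forall>b\<in>carrier (R U). \<phi> [a, b] \<in> carrier (R V)) \<and>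
   (\<forall>a\<in>carrier (R U). \<forall>b\<in>carrier (R U). \<forall>c\<in>carrier (R U).
       \<phi> [a \<oplus>\<^bsub>R U\<^esub> b, c] = \<phi> [a, c] \<oplus>\<^bsub>R V\<^esub> \<phi> [b, c] \<and>
       \<phi> [c, a \<oplus>\<^bsub>R U\<^esub> b] = \<phi> [c, a] \<oplus>\<^bsub>R V\<^esub> \<phi> [c, b]) \<and>
   (\<forall>a\<in>carrier (R U). \<forall>b\<in>carrier (R U). \<forall>r.
       \<phi> [psmult A U r a, b] = psmult A V r (\<phi> [a, b]) \<and>
       \<phi> [b, psmult A U r a] = psmult A V r (\<phi> [b, a]))"
  unfolding mlin_def args2 all_less_2 by (auto simp: RU_simps)

end


lemma (in ring) eq0_iff: "x \<in> carrier R \<Longrightarrow> y \<in> carrier R \<Longrightarrow> (x \<oplus> \<ominus> y = \<zero>) = (x = y)"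
  by (metis add.inv_closed minus_equality minus_minus r_neg)

lemma (in ring) solve_l: assumes e: "x \<oplus> y = z" and c: "x \<in> carrier R" "y \<in> carrier R"
  shows "y = z \<oplus> \<ominus> x"
proof -
  have "y = (x \<oplus> y) \<oplus> \<ominus> x" using c by algebra
  then show ?thesis by (simp add: e)
qed

lemma (in ring) add_right_id_iff: "b \<in> carrier R \<Longrightarrow> x \<in> carrier R \<Longrightarrow> (b \<oplus> x = b) = (x = \<zero>)"
  by (metis add.l_cancel_one')

lemma (in ring) add_l_cancel_iff:
  assumes c: "b \<in> carrier R" "x \<in> carrier R" "y \<in> carrier R"
  shows "(b \<oplus> x = b \<oplus> y) = (x = y)"
proof
  assume e: "b \<oplus> x = b \<oplus> y"
  have "x = \<ominus> b \<oplus> (b \<oplus> x)" using c by algebra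
  also have "\<dots> = \<ominus> b \<oplus> (b \<oplus> y)" using e by simp
  also have "\<dots> = y" using c by algebra
  finally show "x = y" .
qed simp

lemma (in ring) diff_eq_iff:
  assumes c: "x \<in> carrier R" "y \<in> carrier R" "z \<in> carrier R" "w \<in> carrier R"
  shows "(x \<oplus> \<ominus> y = z \<oplus> \<ominus> w) = (x \<oplus> w = z \<oplus> y)"
proof
  assume e: "x \<oplus> \<ominus> y = z \<oplus> \<ominus> w"
  have "x \<oplus> w = (x \<oplus> \<ominus> y) \<oplus> (y \<oplus> w)" using c by algebra
  also have "\<dots> = (z \<oplus> \<ominus> w) \<oplus> (y \<oplus> w)" using e by simp
  also have "\<dots> = z \<oplus> y" using c by algebra
  finally show "x \<oplus> w = z \<oplus> y" .
next
  assume e: "x \<oplus> w = z \<oplus> y"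
  have "x \<oplus> \<ominus> y = (x \<oplus> w) \<oplus> (\<ominus> y \<oplus> \<ominus> w)" using c by algebra
  also have "\<dots> = (z \<oplus> y) \<oplus> (\<ominus> y \<oplus> \<ominus> w)" using e by simp
  also have "\<dots> = z \<oplus> \<ominus> w" using c by algebra
  finally show "x \<oplus> \<ominus> y = z \<oplus> \<ominus> w" .
qed

context GS begin

lemma scod_simps[simp]: "scod C (U, []) = U" "scod C (V, [u]) = Cod C u" "scod C (W, [v, u]) = Cod C u"
  "scod C (X, [w, v, u]) = Cod C u" "sdom (Y, us) = Y"
  by (simp_all add: scod_def sdom_def)

lemma coch0: "cochain_pq C A 0 q \<phi> \<longleftrightarrow> (\<forall>U\<in>Ob C. mlin A U U q (\<phi> (U, [])))"
  unfolding cochain_pq_def ball_nerve0 by simp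
lemma coch1: "cochain_pq C A 1 q \<phi> \<longleftrightarrow> (\<forall>u\<in>Mor C. mlin A (Cod C u) (Dom C u) q (\<phi> (Dom C u, [u])))"
  unfolding cochain_pq_def ball_nerve1 by simp
lemma coch2: "cochain_pq C A 2 q \<phi> \<longleftrightarrow> (\<forall>u\<in>Mor C. \<forall>v\<in>Mor C. Cod C v = Dom C u \<longrightarrow>
     mlin A (Cod C u) (Dom C v) q (\<phi> (Dom C v, [v, u])))"
  unfolding cochain_pq_def ball_nerve2 by simp

lemma mlin1E:
  assumes "mlin A U V 1 \<phi>" "U \<in> Ob C" "V \<in> Ob C"
  shows "a \<in> carrier (R U) \<Longrightarrow> \<phi> [a] \<in> carrier (R V)"
    "a \<in> carrier (R U) \<Longrightarrow> b \<in> carrier (R U) \<Longrightarrow> \<phi> [a \<oplus>\<^bsub>R U\<^esub> b] = \<phi> [a] \<oplus>\<^bsub>R V\<^esub> \<phi> [b]"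
    "a \<in> carrier (R U) \<Longrightarrow> \<phi> [psmult A U r a] = psmult A V r (\<phi> [a])"
    "a \<in> carrier (R U) \<Longrightarrow> \<phi> [\<ominus>\<^bsub>R U\<^esub> a] = \<ominus>\<^bsub>R V\<^esub> \<phi> [a]"
    "\<phi> [\<zero>\<^bsub>R U\<^esub>] = \<zero>\<^bsub>R V\<^esub>"
proof -
  note h = assms(1)[unfolded mlin1]
  show c: "a \<in> carrier (R U) \<Longrightarrow> \<phi> [a] \<in> carrier (R V)" for a using h by blast
  show "a \<in> carrier (R U) \<Longrightarrow> b \<in> carrier (R U) \<Longrightarrow> \<phi> [a \<oplus>\<^bsub>R U\<^esub> b] = \<phi> [a] \<oplus>\<^bsub>R V\<^esub> \<phi> [b]"
    using h by blast
  show s: "a \<in> carrier (R U) \<Longrightarrow> \<phi> [psmult A U r a] = psmult A V r (\<phi> [a])" for a r using h by blast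
  show "a \<in> carrier (R U) \<Longrightarrow> \<phi> [\<ominus>\<^bsub>R U\<^esub> a] = \<ominus>\<^bsub>R V\<^esub> \<phi> [a]"
    using s[of a "-1"] c[of a] assms(2,3) by simp
  have z: "\<zero>\<^bsub>R U\<^esub> \<in> carrier (R U)" using rs(2)[OF assms(2)] .
  have "\<phi> [psmult A U 0 \<zero>\<^bsub>R U\<^esub>] = psmult A V 0 (\<phi> [\<zero>\<^bsub>R U\<^esub>])" using s[OF z] .
  then show "\<phi> [\<zero>\<^bsub>R U\<^esub>] = \<zero>\<^bsub>R V\<^esub>" using z c[OF z] assms(2,3) by simp
qed

lemma mlin2E:
  assumes "mlin A U V 2 \<phi>" "U \<in> Ob C" "V \<in> Ob C"
  shows "a \<in> carrier (R U) \<Longrightarrow> b \<in> carrier (R U) \<Longrightarrow> \<phi> [a, b] \<in> carrier (R V)"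
    "a \<in> carrier (R U) \<Longrightarrow> b \<in> carrier (R U) \<Longrightarrow> c \<in> carrier (R U) \<Longrightarrow> \<phi> [a \<oplus>\<^bsub>R U\<^esub> b, c] = \<phi> [a, c] \<oplus>\<^bsub>R V\<^esub> \<phi> [b, c]"
    "a \<in> carrier (R U) \<Longrightarrow> b \<in> carrier (R U) \<Longrightarrow> c \<in> carrier (R U) \<Longrightarrow> \<phi> [c, a \<oplus>\<^bsub>R U\<^esub> b] = \<phi> [c, a] \<oplus>\<^bsub>R V\<^esub> \<phi> [c, b]"
    "a \<in> carrier (R U) \<Longrightarrow> b \<in> carrier (R U) \<Longrightarrow> \<phi> [psmult A U r a, b] = psmult A V r (\<phi> [a, b])"
    "a \<in> carrier (R U) \<Longrightarrow> b \<in> carrier (R U) \<Longrightarrow> \<phi> [b, psmult A U r a] = psmult A V r (\<phi> [b, a])"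
    "a \<in> carrier (R U) \<Longrightarrow> b \<in> carrier (R U) \<Longrightarrow> \<phi> [\<ominus>\<^bsub>R U\<^esub> a, b] = \<ominus>\<^bsub>R V\<^esub> \<phi> [a, b]"
    "a \<in> carrier (R U) \<Longrightarrow> b \<in> carrier (R U) \<Longrightarrow> \<phi> [b, \<ominus>\<^bsub>R U\<^esub> a] = \<ominus>\<^bsub>R V\<^esub> \<phi> [b, a]"
    "b \<in> carrier (R U) \<Longrightarrow> \<phi> [\<zero>\<^bsub>R U\<^esub>, b] = \<zero>\<^bsub>R V\<^esub>"
    "b \<in> carrier (R U) \<Longrightarrow> \<phi> [b, \<zero>\<^bsub>R U\<^esub>] = \<zero>\<^bsub>R V\<^esub>"
proof -
  note h = assms(1)[unfolded mlin2]
  show c: "a \<in> carrier (R U) \<Longrightarrow> b \<in> carrier (R U) \<Longrightarrow> \<phi> [a, b] \<in> carrier (R V)" for a b using h by blast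
  show "a \<in> carrier (R U) \<Longrightarrow> b \<in> carrier (R U) \<Longrightarrow> c \<in> carrier (R U) \<Longrightarrow> \<phi> [a \<oplus>\<^bsub>R U\<^esub> b, c] = \<phi> [a, c] \<oplus>\<^bsub>R V\<^esub> \<phi> [b, c]"
    using h by blast
  show "a \<in> carrier (R U) \<Longrightarrow> b \<in> carrier (R U) \<Longrightarrow> c \<in> carrier (R U) \<Longrightarrow> \<phi> [c, a \<oplus>\<^bsub>R U\<^esub> b] = \<phi> [c, a] \<oplus>\<^bsub>R V\<^esub> \<phi> [c, b]"
    using h by blast
  show s1: "a \<in> carrier (R U) \<Longrightarrow> b \<in> carrier (R U) \<Longrightarrow> \<phi> [psmult A U r a, b] = psmult A V r (\<phi> [a, b])" for a b r
    using h by blast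
  show s2: "a \<in> carrier (R U) \<Longrightarrow> b \<in> carrier (R U) \<Longrightarrow> \<phi> [b, psmult A U r a] = psmult A V r (\<phi> [b, a])" for a b r
    using h by blast
  show "a \<in> carrier (R U) \<Longrightarrow> b \<in> carrier (R U) \<Longrightarrow> \<phi> [\<ominus>\<^bsub>R U\<^esub> a, b] = \<ominus>\<^bsub>R V\<^esub> \<phi> [a, b]"
    using s1[of a b "-1"] c[of a b] assms(2,3) by simp
  show "a \<in> carrier (R U) \<Longrightarrow> b \<in> carrier (R U) \<Longrightarrow> \<phi> [b, \<ominus>\<^bsub>R U\<^esub> a] = \<ominus>\<^bsub>R V\<^esub> \<phi> [b, a]"
    using s2[of a b "-1"] c[of b a] assms(2,3) by simp
  have z: "\<zero>\<^bsub>R U\<^esub> \<in> carrier (R U)" using rs(2)[OF assms(2)] .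
  show "b \<in> carrier (R U) \<Longrightarrow> \<phi> [\<zero>\<^bsub>R U\<^esub>, b] = \<zero>\<^bsub>R V\<^esub>"
  proof -
    assume b: "b \<in> carrier (R U)"
    have "\<phi> [psmult A U 0 \<zero>\<^bsub>R U\<^esub>, b] = psmult A V 0 (\<phi> [\<zero>\<^bsub>R U\<^esub>, b])" using s1[OF z b] .
    then show ?thesis using z b c[OF z b] assms(2,3) by simp
  qed
  show "b \<in> carrier (R U) \<Longrightarrow> \<phi> [b, \<zero>\<^bsub>R U\<^esub>] = \<zero>\<^bsub>R V\<^esub>"
  proof -
    assume b: "b \<in> carrier (R U)"
    have "\<phi> [b, psmult A U 0 \<zero>\<^bsub>R U\<^esub>] = psmult A V 0 (\<phi> [b, \<zero>\<^bsub>R U\<^esub>])" using s2[OF z b] .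
    then show ?thesis using z b c[OF b z] assms(2,3) by simp
  qed
qed

end

locale P1 = GS C A for C :: "('o,'m) cat" and A :: "('o,'m,'a,'k::comm_ring_1) tpsh" +
  fixes m1 f1 c1 :: "('o,'m,'a) cochn"
  assumes cm: "cochain_pq C A 0 2 m1" and cf: "cochain_pq C A 1 1 f1" and cc: "cochain_pq C A 2 0 c1"
begin

lemma mm: "U \<in> Ob C \<Longrightarrow> mlin A U U 2 (m1 (U, []))" using cm coch0 by blast
lemma ff: "u \<in> Mor C \<Longrightarrow> mlin A (Cod C u) (Dom C u) 1 (f1 (Dom C u, [u]))" using cf coch1 by blast

lemma m_car[simp]: "U \<in> Ob C \<Longrightarrow> a \<in> carrier (R U) \<Longrightarrow> b \<in> carrier (R U) \<Longrightarrow> m1 (U, []) [a, b] \<in> carrier (R U)"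
  using mlin2E(1)[OF mm] by simp
lemma m_lin[simp]:
  assumes U: "U \<in> Ob C"
  shows
  "a \<in> carrier (R U) \<Longrightarrow> b \<in> carrier (R U) \<Longrightarrow> c \<in> carrier (R U) \<Longrightarrow> m1 (U, []) [a \<oplus>\<^bsub>R U\<^esub> b, c] = m1 (U, []) [a, c] \<oplus>\<^bsub>R U\<^esub> m1 (U, []) [b, c]"
  "a \<in> carrier (R U) \<Longrightarrow> b \<in> carrier (R U) \<Longrightarrow> c \<in> carrier (R U) \<Longrightarrow> m1 (U, []) [c, a \<oplus>\<^bsub>R U\<^esub> b] = m1 (U, []) [c, a] \<oplus>\<^bsub>R U\<^esub> m1 (U, []) [c, b]"
  "a \<in> carrier (R U) \<Longrightarrow> b \<in> carrier (R U) \<Longrightarrow> m1 (U, []) [psmult A U r a, b] = psmult A U r (m1 (U, []) [a, b])"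
  "a \<in> carrier (R U) \<Longrightarrow> b \<in> carrier (R U) \<Longrightarrow> m1 (U, []) [b, psmult A U r a] = psmult A U r (m1 (U, []) [b, a])"
  "a \<in> carrier (R U) \<Longrightarrow> b \<in> carrier (R U) \<Longrightarrow> m1 (U, []) [\<ominus>\<^bsub>R U\<^esub> a, b] = \<ominus>\<^bsub>R U\<^esub> m1 (U, []) [a, b]"
  "a \<in> carrier (R U) \<Longrightarrow> b \<in> carrier (R U) \<Longrightarrow> m1 (U, []) [b, \<ominus>\<^bsub>R U\<^esub> a] = \<ominus>\<^bsub>R U\<^esub> m1 (U, []) [b, a]"
  "b \<in> carrier (R U) \<Longrightarrow> m1 (U, []) [\<zero>\<^bsub>R U\<^esub>, b] = \<zero>\<^bsub>R U\<^esub>"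
  "b \<in> carrier (R U) \<Longrightarrow> m1 (U, []) [b, \<zero>\<^bsub>R U\<^esub>] = \<zero>\<^bsub>R U\<^esub>"
  by (simp_all add: mlin2E[OF mm[OF U] U U])

lemma f_car[simp]: "u \<in> Mor C \<Longrightarrow> V = Dom C u \<Longrightarrow> a \<in> carrier (R (Cod C u)) \<Longrightarrow> f1 (V, [u]) [a] \<in> carrier (R V)"
  using mlin1E(1)[OF ff] by simp
lemma f_lin[simp]:
  assumes u: "u \<in> Mor C" and V: "V = Dom C u"
  shows
  "a \<in> carrier (R (Cod C u)) \<Longrightarrow> b \<in> carrier (R (Cod C u)) \<Longrightarrow> f1 (V, [u]) [a \<oplus>\<^bsub>R (Cod C u)\<^esub> b] = f1 (V, [u]) [a] \<oplus>\<^bsub>R V\<^esub> f1 (V, [u]) [b]"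
  "a \<in> carrier (R (Cod C u)) \<Longrightarrow> f1 (V, [u]) [psmult A (Cod C u) r a] = psmult A V r (f1 (V, [u]) [a])"
  "a \<in> carrier (R (Cod C u)) \<Longrightarrow> f1 (V, [u]) [\<ominus>\<^bsub>R (Cod C u)\<^esub> a] = \<ominus>\<^bsub>R V\<^esub> f1 (V, [u]) [a]"
  "f1 (V, [u]) [\<zero>\<^bsub>R (Cod C u)\<^esub>] = \<zero>\<^bsub>R V\<^esub>"
  unfolding V by (simp_all add: mlin1E[OF ff[OF u] cod_ob[OF u] dom_ob[OF u]])

lemma c_car[simp]: "u \<in> Mor C \<Longrightarrow> v \<in> Mor C \<Longrightarrow> Cod C v = Dom C u \<Longrightarrow> W = Dom C v \<Longrightarrow> c1 (W, [v, u]) [] \<in> carrier (R W)"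
  using cc unfolding coch2 mlin0 by blast


definition "N0 \<longleftrightarrow> (\<forall>U\<in>Ob C. \<forall>a\<in>carrier (R U). m1 (U, []) [\<one>\<^bsub>R U\<^esub>, a] = \<zero>\<^bsub>R U\<^esub> \<and> m1 (U, []) [a, \<one>\<^bsub>R U\<^esub>] = \<zero>\<^bsub>R U\<^esub>)"
definition "N1 \<longleftrightarrow> (\<forall>u\<in>Mor C. f1 (Dom C u, [u]) [\<one>\<^bsub>R (Cod C u)\<^esub>] = \<zero>\<^bsub>R (Dom C u)\<^esub>)"
definition "R1 \<longleftrightarrow> (\<forall>u\<in>Mor C. u = Ident C (Dom C u) \<longrightarrow> (\<forall>a\<in>carrier (R (Cod C u)). f1 (Dom C u, [u]) [a] = \<zero>\<^bsub>R (Dom C u)\<^esub>))"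
definition "R2 \<longleftrightarrow> (\<forall>u\<in>Mor C. \<forall>v\<in>Mor C. Cod C v = Dom C u \<longrightarrow> (v = Ident C (Dom C v) \<or> u = Ident C (Dom C u)) \<longrightarrow>
    c1 (Dom C v, [v, u]) [] = \<zero>\<^bsub>R (Dom C v)\<^esub>)"

definition "E0b U a b c \<longleftrightarrow> (a \<otimes>\<^bsub>R U\<^esub> m1 (U, []) [b, c] \<oplus>\<^bsub>R U\<^esub> m1 (U, []) [a, b \<otimes>\<^bsub>R U\<^esub> c] =
     m1 (U, []) [a \<otimes>\<^bsub>R U\<^esub> b, c] \<oplus>\<^bsub>R U\<^esub> m1 (U, []) [a, b] \<otimes>\<^bsub>R U\<^esub> c)"
definition "E1b u a b \<longleftrightarrow> (pres A u a \<otimes>\<^bsub>R (Dom C u)\<^esub> f1 (Dom C u, [u]) [b] \<oplus>\<^bsub>R (Dom C u)\<^esub> f1 (Dom C u, [u]) [a] \<otimes>\<^bsub>R (Dom C u)\<^esub> pres A u b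
      \<oplus>\<^bsub>R (Dom C u)\<^esub> m1 (Dom C u, []) [pres A u a, pres A u b] =
    f1 (Dom C u, [u]) [a \<otimes>\<^bsub>R (Cod C u)\<^esub> b] \<oplus>\<^bsub>R (Dom C u)\<^esub> pres A u (m1 (Cod C u, []) [a, b]))"
definition "E2b u v a \<longleftrightarrow> (pres A v (pres A u a) \<otimes>\<^bsub>R (Dom C v)\<^esub> c1 (Dom C v, [v, u]) [] \<oplus>\<^bsub>R (Dom C v)\<^esub> f1 (Dom C v, [Comp C u v]) [a] =
    c1 (Dom C v, [v, u]) [] \<otimes>\<^bsub>R (Dom C v)\<^esub> pres A v (pres A u a) \<oplus>\<^bsub>R (Dom C v)\<^esub> pres A v (f1 (Dom C u, [u]) [a])
      \<oplus>\<^bsub>R (Dom C v)\<^esub> f1 (Dom C v, [v]) [pres A u a])"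
definition "E3b u v w \<longleftrightarrow> (pres A w (c1 (Dom C v, [v, u]) []) \<oplus>\<^bsub>R (Dom C w)\<^esub> c1 (Dom C w, [w, Comp C u v]) [] =
    c1 (Dom C w, [Comp C v w, u]) [] \<oplus>\<^bsub>R (Dom C w)\<^esub> c1 (Dom C w, [w, v]) [])"

lemma dGS2_c0:
  assumes U: "U \<in> Ob C" and abc: "a \<in> carrier (R U)" "b \<in> carrier (R U)" "c \<in> carrier (R U)"
  shows "(dGS C A 2 (pack3 m1 f1 c1) 0 (U, []) [a, b, c] = \<zero>\<^bsub>R U\<^esub>) \<longleftrightarrow> E0b U a b c"
proof -
  interpret r: ring "R U" using ringR[OF U] .
  have "dGS C A 2 (pack3 m1 f1 c1) 0 (U, []) [a, b, c] =
     (a \<otimes>\<^bsub>R U\<^esub> m1 (U, []) [b, c] \<oplus>\<^bsub>R U\<^esub> m1 (U, []) [a, b \<otimes>\<^bsub>R U\<^esub> c]) \<oplus>\<^bsub>R U\<^esub>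
     \<ominus>\<^bsub>R U\<^esub> (m1 (U, []) [a \<otimes>\<^bsub>R U\<^esub> b, c] \<oplus>\<^bsub>R U\<^esub> m1 (U, []) [a, b] \<otimes>\<^bsub>R U\<^esub> c)"
    using abc U
    apply (simp add: dGS_def dHoch_def Let_def pack3_def fsig_def comp_chain_def lsum_def RU_simps
       eval_nat_numeral upt_rec)
    apply (simp add: r.ring_simprules)
    done
  then show ?thesis unfolding E0b_def using abc U by (simp add: r.eq0_iff)
qed

lemma dGS2_c1:
  assumes u: "u \<in> Mor C" and ab: "a \<in> carrier (R (Cod C u))" "b \<in> carrier (R (Cod C u))"
  shows "(dGS C A 2 (pack3 m1 f1 c1) 1 (Dom C u, [u]) [a, b] = \<zero>\<^bsub>R (Dom C u)\<^esub>) \<longleftrightarrow> E1b u a b"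
proof -
  interpret r: ring "R (Dom C u)" using ringR u by simp
  interpret r2: ring "R (Cod C u)" using ringR u by simp
  have "dGS C A 2 (pack3 m1 f1 c1) 1 (Dom C u, [u]) [a, b] =
     (pres A u a \<otimes>\<^bsub>R (Dom C u)\<^esub> f1 (Dom C u, [u]) [b] \<oplus>\<^bsub>R (Dom C u)\<^esub> f1 (Dom C u, [u]) [a] \<otimes>\<^bsub>R (Dom C u)\<^esub> pres A u b
      \<oplus>\<^bsub>R (Dom C u)\<^esub> m1 (Dom C u, []) [pres A u a, pres A u b]) \<oplus>\<^bsub>R (Dom C u)\<^esub>
     \<ominus>\<^bsub>R (Dom C u)\<^esub> (f1 (Dom C u, [u]) [a \<otimes>\<^bsub>R (Cod C u)\<^esub> b] \<oplus>\<^bsub>R (Dom C u)\<^esub> pres A u (m1 (Cod C u, []) [a, b]))"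
    using ab u
    apply (simp add: dGS_def dHoch_def dSimp_def face_def Let_def pack3_def fsig_def comp_chain_def lsum_def RU_simps
       eval_nat_numeral upt_rec)
    apply (simp add: r.ring_simprules)
    done
  then show ?thesis unfolding E1b_def using ab u by (simp add: r.eq0_iff)
qed

lemma dGS2_c2:
  assumes uv: "u \<in> Mor C" "v \<in> Mor C" "Cod C v = Dom C u" and a: "a \<in> carrier (R (Cod C u))"
  shows "(dGS C A 2 (pack3 m1 f1 c1) 2 (Dom C v, [v, u]) [a] = \<zero>\<^bsub>R (Dom C v)\<^esub>) \<longleftrightarrow> E2b u v a"
proof -
  interpret r: ring "R (Dom C v)" using ringR uv by simp
  have "dGS C A 2 (pack3 m1 f1 c1) 2 (Dom C v, [v, u]) [a] =
     (pres A v (pres A u a) \<otimes>\<^bsub>R (Dom C v)\<^esub> c1 (Dom C v, [v, u]) [] \<oplus>\<^bsub>R (Dom C v)\<^esub> f1 (Dom C v, [Comp C u v]) [a]) \<oplus>\<^bsub>R (Dom C v)\<^esub>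
     \<ominus>\<^bsub>R (Dom C v)\<^esub> (c1 (Dom C v, [v, u]) [] \<otimes>\<^bsub>R (Dom C v)\<^esub> pres A v (pres A u a) \<oplus>\<^bsub>R (Dom C v)\<^esub> pres A v (f1 (Dom C u, [u]) [a])
      \<oplus>\<^bsub>R (Dom C v)\<^esub> f1 (Dom C v, [v]) [pres A u a])"
    using a uv
    apply (simp add: dGS_def dHoch_def dSimp_def face_def Let_def pack3_def fsig_def comp_chain_def lsum_def RU_simps
       eval_nat_numeral upt_rec pres_comp)
    apply (simp add: r.ring_simprules)
    done
  then show ?thesis unfolding E2b_def using a uv by (simp add: r.eq0_iff)
qed

lemma dGS2_c3:
  assumes uvw: "u \<in> Mor C" "v \<in> Mor C" "w \<in> Mor C" "Cod C v = Dom C u" "Cod C w = Dom C v"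
  shows "(dGS C A 2 (pack3 m1 f1 c1) 3 (Dom C w, [w, v, u]) [] = \<zero>\<^bsub>R (Dom C w)\<^esub>) \<longleftrightarrow> E3b u v w"
proof -
  interpret r: ring "R (Dom C w)" using ringR uvw by simp
  have "dGS C A 2 (pack3 m1 f1 c1) 3 (Dom C w, [w, v, u]) [] =
     (c1 (Dom C w, [Comp C v w, u]) [] \<oplus>\<^bsub>R (Dom C w)\<^esub> c1 (Dom C w, [w, v]) []) \<oplus>\<^bsub>R (Dom C w)\<^esub>
     \<ominus>\<^bsub>R (Dom C w)\<^esub> (pres A w (c1 (Dom C v, [v, u]) []) \<oplus>\<^bsub>R (Dom C w)\<^esub> c1 (Dom C w, [w, Comp C u v]) [])"
    using uvw
    apply (simp add: dGS_def dHoch_def dSimp_def face_def Let_def pack3_def fsig_def comp_chain_def lsum_def RU_simps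
       eval_nat_numeral upt_rec)
    apply (simp add: r.ring_simprules)
    done
  then show ?thesis unfolding E3b_def using uvw by (auto simp: r.eq0_iff)
qed

lemma ex_less1: "(\<exists>i<Suc 0. P i) = P 0" by auto
lemma ex_less2: "(\<exists>i<Suc (Suc 0). P i) = (P 0 \<or> P (Suc 0))" by (auto simp: less_Suc_eq)
lemmas args1' = args1[unfolded One_nat_def]
lemmas ball_nerve1' = ball_nerve1[unfolded One_nat_def]

lemma NR_iff: "NR C A 2 (pack3 m1 f1 c1) \<longleftrightarrow> N0 \<and> N1 \<and> R1 \<and> R2"
proof -
  have co: "cochain C A 2 (pack3 m1 f1 c1)"
    unfolding cochain_def all_le_2 pack3_def using cm cf cc by simp
  have no: "normalized C A 2 (pack3 m1 f1 c1) \<longleftrightarrow> N0 \<and> N1"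
    unfolding normalized_def all_le_2 pack3_def N0_def N1_def
    apply (auto simp del: One_nat_def simp: ball_nerve0 ball_nerve1 ball_nerve1' ball_nerve2 args0 args1 args1' args2 ex_less1 ex_less2 RU_simps rs(6))
    using rs(6) by blast+
  have re: "reduced C A 2 (pack3 m1 f1 c1) \<longleftrightarrow> R1 \<and> R2"
    unfolding reduced_def all_le_2 pack3_def R1_def R2_def
    by (auto simp del: One_nat_def simp: ball_nerve0 ball_nerve1 ball_nerve1' ball_nerve2 args0 args1 args1' args2 degenerate_def nerve0_iff RU_simps)
  show ?thesis unfolding NR_def using co no re by blast
qed

lemma ceq_iff: "ceq C A 3 (dGS C A 2 (pack3 m1 f1 c1)) (czero A) \<longleftrightarrow>
   (\<forall>U\<in>Ob C. \<forall>a\<in>carrier (R U). \<forall>b\<in>carrier (R U). \<forall>c\<in>carrier (R U). E0b U a b c) \<and>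
   (\<forall>u\<in>Mor C. \<forall>a\<in>carrier (R (Cod C u)). \<forall>b\<in>carrier (R (Cod C u)). E1b u a b) \<and>
   (\<forall>u\<in>Mor C. \<forall>v\<in>Mor C. Cod C v = Dom C u \<longrightarrow> (\<forall>a\<in>carrier (R (Cod C u)). E2b u v a)) \<and>
   (\<forall>u\<in>Mor C. \<forall>v\<in>Mor C. \<forall>w\<in>Mor C. Cod C v = Dom C u \<longrightarrow> Cod C w = Dom C v \<longrightarrow> E3b u v w)"
  unfolding ceq_def all_le_3 czero_def czero1_def
  by (simp del: One_nat_def add: ball_nerve0 ball_nerve1 ball_nerve1' ball_nerve2 ball_nerve3 args0 args1 args1' args2 args3
     RU_simps dGS2_c0 dGS2_c1 dGS2_c2 dGS2_c3)
end


lemma dual_simps[simp]: "re (x + y) = re x + re y" "eps (x + y) = eps x + eps y"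
  "re (x * y) = re x * re y" "eps (x * y) = re x * eps y + eps x * re y"
  "re (1::'k::comm_ring_1 dual) = 1" "eps (1::'k::comm_ring_1 dual) = 0"
  by (simp_all add: plus_dual_def times_dual_def one_dual_def)

context P1 begin

abbreviation "T \<equiv> deform C A m1 f1 c1"

lemma T_simps[simp]:
  "pcar T U = carrier (R U) \<times> carrier (R U)"
  "padd T U (a, b) (a', b') = (a \<oplus>\<^bsub>R U\<^esub> a', b \<oplus>\<^bsub>R U\<^esub> b')"
  "pzero T U = (\<zero>\<^bsub>R U\<^esub>, \<zero>\<^bsub>R U\<^esub>)"
  "psmult T U r (a, b) = (psmult A U (re r) a, psmult A U (re r) b \<oplus>\<^bsub>R U\<^esub> psmult A U (eps r) a)"
  "pmul T U (a, b) (a', b') = (a \<otimes>\<^bsub>R U\<^esub> a',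
      (a \<otimes>\<^bsub>R U\<^esub> b' \<oplus>\<^bsub>R U\<^esub> b \<otimes>\<^bsub>R U\<^esub> a') \<oplus>\<^bsub>R U\<^esub> m1 (U, []) [a, a'])"
  "pone T U = (\<one>\<^bsub>R U\<^esub>, \<zero>\<^bsub>R U\<^esub>)"
  "pres T u (a, b) = (pres A u a, pres A u b \<oplus>\<^bsub>R (Dom C u)\<^esub> f1 (Dom C u, [u]) [a])"
  "ptw T u v = (\<one>\<^bsub>R (Dom C v)\<^esub>, c1 (Dom C v, [v, u]) [])"
  by (simp_all add: deform_def RU_simps)

lemma T_RU[simp]: "carrier (RU T U) = carrier (R U) \<times> carrier (R U)"
  "x \<oplus>\<^bsub>RU T U\<^esub> y = padd T U x y" "x \<otimes>\<^bsub>RU T U\<^esub> y = pmul T U x y"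
  "\<zero>\<^bsub>RU T U\<^esub> = pzero T U" "\<one>\<^bsub>RU T U\<^esub> = pone T U"
  by (simp_all add: RU_def deform_def)

lemma def_alg:
  assumes U: "U \<in> Ob C"
  shows "is_algebra T U \<longleftrightarrow>
    (\<forall>a\<in>carrier (R U). m1 (U, []) [\<one>\<^bsub>R U\<^esub>, a] = \<zero>\<^bsub>R U\<^esub> \<and> m1 (U, []) [a, \<one>\<^bsub>R U\<^esub>] = \<zero>\<^bsub>R U\<^esub>) \<and>
    (\<forall>a\<in>carrier (R U). \<forall>b\<in>carrier (R U). \<forall>c\<in>carrier (R U). E0b U a b c)"
proof -
  interpret r: ring "R U" using ringR[OF U] .
  note sms = sm_add[OF U] add_sm[OF U] sm_mul_l[OF U] sm_mul_r[OF U] sm_sm[OF U] sm_neg[OF U]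
  show ?thesis
  proof
    assume h: "is_algebra T U"
    have un: "m1 (U, []) [\<one>\<^bsub>R U\<^esub>, a] = \<zero>\<^bsub>R U\<^esub> \<and> m1 (U, []) [a, \<one>\<^bsub>R U\<^esub>] = \<zero>\<^bsub>R U\<^esub>"
      if a: "a \<in> carrier (R U)" for a
    proof -
      have "pmul T U (pone T U) (a, \<zero>\<^bsub>R U\<^esub>) = (a, \<zero>\<^bsub>R U\<^esub>) \<and> pmul T U (a, \<zero>\<^bsub>R U\<^esub>) (pone T U) = (a, \<zero>\<^bsub>R U\<^esub>)"
        by (rule algc13[OF h, rule_format]) (simp add: a)
      then show ?thesis using a U by (simp add: r.ring_simprules)
    qed
    have as: "E0b U a b c" if abc: "a \<in> carrier (R U)" "b \<in> carrier (R U)" "c \<in> carrier (R U)" for a b c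
    proof -
      have "pmul T U (pmul T U (a, \<zero>\<^bsub>R U\<^esub>) (b, \<zero>\<^bsub>R U\<^esub>)) (c, \<zero>\<^bsub>R U\<^esub>) =
            pmul T U (a, \<zero>\<^bsub>R U\<^esub>) (pmul T U (b, \<zero>\<^bsub>R U\<^esub>) (c, \<zero>\<^bsub>R U\<^esub>))"
        by (rule algc12[OF h, rule_format]) (simp_all add: abc)
      then show ?thesis using abc U unfolding E0b_def by (simp add: r.ring_simprules)
    qed
    show "(\<forall>a\<in>carrier (R U). m1 (U, []) [\<one>\<^bsub>R U\<^esub>, a] = \<zero>\<^bsub>R U\<^esub> \<and> m1 (U, []) [a, \<one>\<^bsub>R U\<^esub>] = \<zero>\<^bsub>R U\<^esub>) \<and>
    (\<forall>a\<in>carrier (R U). \<forall>b\<in>carrier (R U). \<forall>c\<in>carrier (R U). E0b U a b c)" using un as by blast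
  next
    assume h: "(\<forall>a\<in>carrier (R U). m1 (U, []) [\<one>\<^bsub>R U\<^esub>, a] = \<zero>\<^bsub>R U\<^esub> \<and> m1 (U, []) [a, \<one>\<^bsub>R U\<^esub>] = \<zero>\<^bsub>R U\<^esub>) \<and>
    (\<forall>a\<in>carrier (R U). \<forall>b\<in>carrier (R U). \<forall>c\<in>carrier (R U). E0b U a b c)"
    have as: "m1 (U, []) [a, b \<otimes>\<^bsub>R U\<^esub> c] = m1 (U, []) [a \<otimes>\<^bsub>R U\<^esub> b, c] \<oplus>\<^bsub>R U\<^esub> m1 (U, []) [a, b] \<otimes>\<^bsub>R U\<^esub> c \<oplus>\<^bsub>R U\<^esub> \<ominus>\<^bsub>R U\<^esub> (a \<otimes>\<^bsub>R U\<^esub> m1 (U, []) [b, c])"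
      if abc: "a \<in> carrier (R U)" "b \<in> carrier (R U)" "c \<in> carrier (R U)" for a b c
    proof -
      have "E0b U a b c" using h abc by blast
      then have "a \<otimes>\<^bsub>R U\<^esub> m1 (U, []) [b, c] \<oplus>\<^bsub>R U\<^esub> m1 (U, []) [a, b \<otimes>\<^bsub>R U\<^esub> c] =
     m1 (U, []) [a \<otimes>\<^bsub>R U\<^esub> b, c] \<oplus>\<^bsub>R U\<^esub> m1 (U, []) [a, b] \<otimes>\<^bsub>R U\<^esub> c" unfolding E0b_def .
      from r.solve_l[OF this] show ?thesis using abc U by simp
    qed
    have u1: "m1 (U, []) [\<one>\<^bsub>R U\<^esub>, a] = \<zero>\<^bsub>R U\<^esub>" "m1 (U, []) [a, \<one>\<^bsub>R U\<^esub>] = \<zero>\<^bsub>R U\<^esub>"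
      if "a \<in> carrier (R U)" for a using h that by blast+
    show "is_algebra T U"
      unfolding alg_iff
      apply (intro conjI)
      using U apply (simp_all add: r.ring_simprules sms u1 as)
      done
  qed
qed

end

lemma alg_map_mulD: "alg_map T U T' V h \<Longrightarrow> a \<in> pcar T U \<Longrightarrow> b \<in> pcar T U \<Longrightarrow>
   h (pmul T U a b) = pmul T' V (h a) (h b)"
  unfolding alg_map_def by blast
lemma alg_mapI:
  assumes "\<And>a. a \<in> pcar T U \<Longrightarrow> h a \<in> pcar T' V"
    "\<And>a b. a \<in> pcar T U \<Longrightarrow> b \<in> pcar T U \<Longrightarrow> h (padd T U a b) = padd T' V (h a) (h b)"
    "\<And>r a. a \<in> pcar T U \<Longrightarrow> h (psmult T U r a) = psmult T' V r (h a)"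
    "\<And>a b. a \<in> pcar T U \<Longrightarrow> b \<in> pcar T U \<Longrightarrow> h (pmul T U a b) = pmul T' V (h a) (h b)"
    "h (pone T U) = pone T' V"
  shows "alg_map T U T' V h"
  unfolding alg_map_def using assms by blast
lemma alg_map_oneD: "alg_map T U T' V h \<Longrightarrow> h (pone T U) = pone T' V"
  unfolding alg_map_def by blast

context P1 begin

lemma def_map:
  assumes u: "u \<in> Mor C"
  shows "alg_map T (Cod C u) T (Dom C u) (pres T u) \<longleftrightarrow>
    f1 (Dom C u, [u]) [\<one>\<^bsub>R (Cod C u)\<^esub>] = \<zero>\<^bsub>R (Dom C u)\<^esub> \<and>
    (\<forall>a\<in>carrier (R (Cod C u)). \<forall>b\<in>carrier (R (Cod C u)). E1b u a b)"
proof -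
  interpret r: ring "R (Dom C u)" using ringR u by simp
  interpret r2: ring "R (Cod C u)" using ringR u by simp
  have U: "Cod C u \<in> Ob C" "Dom C u \<in> Ob C" using u by simp_all
  note sms = sm_add[OF U(2)] add_sm[OF U(2)] sm_mul_l[OF U(2)] sm_mul_r[OF U(2)] sm_sm[OF U(2)] sm_neg[OF U(2)]
    sm_add[OF U(1)] add_sm[OF U(1)] sm_mul_l[OF U(1)] sm_mul_r[OF U(1)] sm_sm[OF U(1)] sm_neg[OF U(1)]
  show ?thesis
  proof
    assume h: "alg_map T (Cod C u) T (Dom C u) (pres T u)"
    note hh = h[unfolded alg_map_def]
    have o: "pres T u (pone T (Cod C u)) = pone T (Dom C u)" by (rule alg_map_oneD[OF h])
    have e: "E1b u a b" if ab: "a \<in> carrier (R (Cod C u))" "b \<in> carrier (R (Cod C u))" for a b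
    proof -
      have "pres T u (pmul T (Cod C u) (a, \<zero>\<^bsub>R (Cod C u)\<^esub>) (b, \<zero>\<^bsub>R (Cod C u)\<^esub>)) =
            pmul T (Dom C u) (pres T u (a, \<zero>\<^bsub>R (Cod C u)\<^esub>)) (pres T u (b, \<zero>\<^bsub>R (Cod C u)\<^esub>))"
        by (rule alg_map_mulD[OF h]) (simp_all add: ab)
      then show ?thesis using ab u unfolding E1b_def by (simp add: r.ring_simprules)
    qed
    show "f1 (Dom C u, [u]) [\<one>\<^bsub>R (Cod C u)\<^esub>] = \<zero>\<^bsub>R (Dom C u)\<^esub> \<and>
      (\<forall>a\<in>carrier (R (Cod C u)). \<forall>b\<in>carrier (R (Cod C u)). E1b u a b)"
      using o e u by (simp add: r.ring_simprules)
  next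
    assume h: "f1 (Dom C u, [u]) [\<one>\<^bsub>R (Cod C u)\<^esub>] = \<zero>\<^bsub>R (Dom C u)\<^esub> \<and>
      (\<forall>a\<in>carrier (R (Cod C u)). \<forall>b\<in>carrier (R (Cod C u)). E1b u a b)"
    have em: "pres A u (m1 (Cod C u, []) [a, b]) =
      (pres A u a \<otimes>\<^bsub>R (Dom C u)\<^esub> f1 (Dom C u, [u]) [b] \<oplus>\<^bsub>R (Dom C u)\<^esub> f1 (Dom C u, [u]) [a] \<otimes>\<^bsub>R (Dom C u)\<^esub> pres A u b
      \<oplus>\<^bsub>R (Dom C u)\<^esub> m1 (Dom C u, []) [pres A u a, pres A u b]) \<oplus>\<^bsub>R (Dom C u)\<^esub> \<ominus>\<^bsub>R (Dom C u)\<^esub> f1 (Dom C u, [u]) [a \<otimes>\<^bsub>R (Cod C u)\<^esub> b]"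
      if ab: "a \<in> carrier (R (Cod C u))" "b \<in> carrier (R (Cod C u))" for a b
    proof -
      have "E1b u a b" using h ab by blast
      then have "f1 (Dom C u, [u]) [a \<otimes>\<^bsub>R (Cod C u)\<^esub> b] \<oplus>\<^bsub>R (Dom C u)\<^esub> pres A u (m1 (Cod C u, []) [a, b]) =
       pres A u a \<otimes>\<^bsub>R (Dom C u)\<^esub> f1 (Dom C u, [u]) [b] \<oplus>\<^bsub>R (Dom C u)\<^esub> f1 (Dom C u, [u]) [a] \<otimes>\<^bsub>R (Dom C u)\<^esub> pres A u b
      \<oplus>\<^bsub>R (Dom C u)\<^esub> m1 (Dom C u, []) [pres A u a, pres A u b]" unfolding E1b_def by simp
      from r.solve_l[OF this] show ?thesis using ab u by simp
    qed
    show "alg_map T (Cod C u) T (Dom C u) (pres T u)"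
    proof (rule alg_mapI)
      fix x y assume xy: "x \<in> pcar T (Cod C u)" "y \<in> pcar T (Cod C u)"
      obtain a b where x: "x = (a, b)" by (cases x)
      obtain a' b' where y: "y = (a', b')" by (cases y)
      have c: "a \<in> carrier (R (Cod C u))" "b \<in> carrier (R (Cod C u))" "a' \<in> carrier (R (Cod C u))" "b' \<in> carrier (R (Cod C u))"
        using xy x y by auto
      have E: "f1 (Dom C u, [u]) [a \<otimes>\<^bsub>R (Cod C u)\<^esub> a'] \<oplus>\<^bsub>R (Dom C u)\<^esub> pres A u (m1 (Cod C u, []) [a, a']) =
        pres A u a \<otimes>\<^bsub>R (Dom C u)\<^esub> f1 (Dom C u, [u]) [a'] \<oplus>\<^bsub>R (Dom C u)\<^esub> f1 (Dom C u, [u]) [a] \<otimes>\<^bsub>R (Dom C u)\<^esub> pres A u a'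
      \<oplus>\<^bsub>R (Dom C u)\<^esub> m1 (Dom C u, []) [pres A u a, pres A u a']"
        using h c unfolding E1b_def by auto
      have s1: "pres A u ((a \<otimes>\<^bsub>R (Cod C u)\<^esub> b' \<oplus>\<^bsub>R (Cod C u)\<^esub> b \<otimes>\<^bsub>R (Cod C u)\<^esub> a') \<oplus>\<^bsub>R (Cod C u)\<^esub> m1 (Cod C u, []) [a, a'])
          \<oplus>\<^bsub>R (Dom C u)\<^esub> f1 (Dom C u, [u]) [a \<otimes>\<^bsub>R (Cod C u)\<^esub> a'] =
        (pres A u a \<otimes>\<^bsub>R (Dom C u)\<^esub> pres A u b' \<oplus>\<^bsub>R (Dom C u)\<^esub> pres A u b \<otimes>\<^bsub>R (Dom C u)\<^esub> pres A u a') \<oplus>\<^bsub>R (Dom C u)\<^esub>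
        (f1 (Dom C u, [u]) [a \<otimes>\<^bsub>R (Cod C u)\<^esub> a'] \<oplus>\<^bsub>R (Dom C u)\<^esub> pres A u (m1 (Cod C u, []) [a, a']))"
        using c u by (simp add: r.ring_simprules r2.ring_simprules)
      have s2: "pres A u a \<otimes>\<^bsub>R (Dom C u)\<^esub> (pres A u b' \<oplus>\<^bsub>R (Dom C u)\<^esub> f1 (Dom C u, [u]) [a']) \<oplus>\<^bsub>R (Dom C u)\<^esub>
          (pres A u b \<oplus>\<^bsub>R (Dom C u)\<^esub> f1 (Dom C u, [u]) [a]) \<otimes>\<^bsub>R (Dom C u)\<^esub> pres A u a' \<oplus>\<^bsub>R (Dom C u)\<^esub>
          m1 (Dom C u, []) [pres A u a, pres A u a'] =
        (pres A u a \<otimes>\<^bsub>R (Dom C u)\<^esub> pres A u b' \<oplus>\<^bsub>R (Dom C u)\<^esub> pres A u b \<otimes>\<^bsub>R (Dom C u)\<^esub> pres A u a') \<oplus>\<^bsub>R (Dom C u)\<^esub>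
        (pres A u a \<otimes>\<^bsub>R (Dom C u)\<^esub> f1 (Dom C u, [u]) [a'] \<oplus>\<^bsub>R (Dom C u)\<^esub> f1 (Dom C u, [u]) [a] \<otimes>\<^bsub>R (Dom C u)\<^esub> pres A u a'
      \<oplus>\<^bsub>R (Dom C u)\<^esub> m1 (Dom C u, []) [pres A u a, pres A u a'])"
        using c u by (simp add: r.ring_simprules r2.ring_simprules)
      show "pres T u (pmul T (Cod C u) x y) = pmul T (Dom C u) (pres T u x) (pres T u y)"
        unfolding x y T_simps s1 s2 E using c u by simp
    next
      show "pres T u (pone T (Cod C u)) = pone T (Dom C u)" using h u by simp
    qed (insert u, auto simp: r.ring_simprules sms)
  qed
qed


lemma def_id: "(\<forall>U\<in>Ob C. \<forall>x\<in>pcar T U. pres T (Ident C U) x = x) \<longleftrightarrow> R1"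
proof -
  have "(\<forall>x\<in>pcar T U. pres T (Ident C U) x = x) \<longleftrightarrow> (\<forall>a\<in>carrier (R U). f1 (U, [Ident C U]) [a] = \<zero>\<^bsub>R U\<^esub>)"
    if U: "U \<in> Ob C" for U
  proof -
    interpret r: ring "R U" using ringR[OF U] .
    have fc: "a \<in> carrier (R U) \<Longrightarrow> f1 (U, [Ident C U]) [a] \<in> carrier (R U)" for a
      using f_car[of "Ident C U" U a] U by simp
    show ?thesis using U fc by (auto simp: r.add_right_id_iff)
  qed
  then have "(\<forall>U\<in>Ob C. \<forall>x\<in>pcar T U. pres T (Ident C U) x = x) \<longleftrightarrow>
     (\<forall>U\<in>Ob C. \<forall>a\<in>carrier (R U). f1 (U, [Ident C U]) [a] = \<zero>\<^bsub>R U\<^esub>)" by simp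
  also have "\<dots> \<longleftrightarrow> R1"
    unfolding R1_def
  proof safe
    fix u a assume h: "\<forall>U\<in>Ob C. \<forall>a\<in>carrier (R U). f1 (U, [Ident C U]) [a] = \<zero>\<^bsub>R U\<^esub>"
      and u: "u \<in> Mor C" "u = Ident C (Dom C u)" and a: "a \<in> carrier (R (Cod C u))"
    have "Cod C u = Dom C u" using u by (metis dom_ob ident_cod)
    then show "f1 (Dom C u, [u]) [a] = \<zero>\<^bsub>R (Dom C u)\<^esub>" using h u a by (metis dom_ob)
  next
    fix U a assume h: "\<forall>u\<in>Mor C. u = Ident C (Dom C u) \<longrightarrow> (\<forall>a\<in>carrier (R (Cod C u)). f1 (Dom C u, [u]) [a] = \<zero>\<^bsub>R (Dom C u)\<^esub>)"
      and U: "U \<in> Ob C" and a: "a \<in> carrier (R U)"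
    show "f1 (U, [Ident C U]) [a] = \<zero>\<^bsub>R U\<^esub>" using h[rule_format, of "Ident C U" a] U a by simp
  qed
  finally show ?thesis .
qed

lemma def_unit: "(\<forall>u\<in>Mor C. ptw T u (Ident C (Dom C u)) = pone T (Dom C u) \<and> ptw T (Ident C (Cod C u)) u = pone T (Dom C u)) \<longleftrightarrow> R2"
  unfolding R2_def
proof safe
  fix u v assume h: "\<forall>u\<in>Mor C. ptw T u (Ident C (Dom C u)) = pone T (Dom C u) \<and> ptw T (Ident C (Cod C u)) u = pone T (Dom C u)"
    and uv: "u \<in> Mor C" "v \<in> Mor C" "Cod C v = Dom C u"
  {
    assume v: "v = Ident C (Dom C v)"
    then have "Dom C v = Dom C u" using uv by (metis dom_ob ident_cod)
    then have "v = Ident C (Dom C u)" using v by simp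
    then show "c1 (Dom C v, [v, u]) [] = \<zero>\<^bsub>R (Dom C v)\<^esub>" using h uv by auto
  next
    assume u: "u = Ident C (Dom C u)"
    then have "u = Ident C (Cod C v)" using uv by simp
    then show "c1 (Dom C v, [v, u]) [] = \<zero>\<^bsub>R (Dom C v)\<^esub>" using h uv by auto
  }
next
  fix u assume h: "\<forall>u\<in>Mor C. \<forall>v\<in>Mor C. Cod C v = Dom C u \<longrightarrow> v = Ident C (Dom C v) \<or> u = Ident C (Dom C u) \<longrightarrow>
    c1 (Dom C v, [v, u]) [] = \<zero>\<^bsub>R (Dom C v)\<^esub>" and u: "u \<in> Mor C"
  show "ptw T u (Ident C (Dom C u)) = pone T (Dom C u)" using h[rule_format, of u "Ident C (Dom C u)"] u by simp
  show "ptw T (Ident C (Cod C u)) u = pone T (Dom C u)" using h[rule_format, of "Ident C (Cod C u)" u] u by simp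
qed


lemma def_tw1:
  assumes n0: N0 and uv: "u \<in> Mor C" "v \<in> Mor C" "Cod C v = Dom C u"
  shows "ptw T u v \<in> pcar T (Dom C v) \<and> invertible T (Dom C v) (ptw T u v) \<and>
        (\<forall>a\<in>pcar T (Cod C u). pmul T (Dom C v) (ptw T u v) (pres T v (pres T u a)) =
           pmul T (Dom C v) (pres T (Comp C u v) a) (ptw T u v)) \<longleftrightarrow>
     (\<forall>a\<in>carrier (R (Cod C u)). E2b u v a)"
proof -
  interpret r: ring "R (Dom C v)" using ringR uv by simp
  have W: "Dom C v \<in> Ob C" using uv by simp
  have n0': "m1 (Dom C v, []) [\<one>\<^bsub>R (Dom C v)\<^esub>, a] = \<zero>\<^bsub>R (Dom C v)\<^esub>" "m1 (Dom C v, []) [a, \<one>\<^bsub>R (Dom C v)\<^esub>] = \<zero>\<^bsub>R (Dom C v)\<^esub>"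
    if "a \<in> carrier (R (Dom C v))" for a using n0 W that unfolding N0_def by blast+
  have cc': "c1 (Dom C v, [v, u]) [] \<in> carrier (R (Dom C v))" using uv by simp
  have mem: "ptw T u v \<in> pcar T (Dom C v)" using uv by simp
  have inv: "invertible T (Dom C v) (ptw T u v)"
    unfolding invertible_def
    apply (rule bexI[of _ "(\<one>\<^bsub>R (Dom C v)\<^esub>, \<ominus>\<^bsub>R (Dom C v)\<^esub> c1 (Dom C v, [v, u]) [])"])
    using uv cc' by (simp_all add: n0' r.ring_simprules)
  have pc: "pres A (Comp C u v) x = pres A v (pres A u x)" if "x \<in> carrier (R (Cod C u))" for x
    using pres_comp uv that by blast
  have eq: "pmul T (Dom C v) (ptw T u v) (pres T v (pres T u (a, b))) =
           pmul T (Dom C v) (pres T (Comp C u v) (a, b)) (ptw T u v) \<longleftrightarrow> E2b u v a"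
    if ab: "a \<in> carrier (R (Cod C u))" "b \<in> carrier (R (Cod C u))" for a b
  proof -
    let ?X = "pres A v (pres A u a)" and ?c = "c1 (Dom C v, [v, u]) []" and ?B = "pres A v (pres A u b)"
    have l: "snd (pmul T (Dom C v) (ptw T u v) (pres T v (pres T u (a, b)))) =
       ?B \<oplus>\<^bsub>R (Dom C v)\<^esub> (?c \<otimes>\<^bsub>R (Dom C v)\<^esub> ?X \<oplus>\<^bsub>R (Dom C v)\<^esub> pres A v (f1 (Dom C u, [u]) [a])
      \<oplus>\<^bsub>R (Dom C v)\<^esub> f1 (Dom C v, [v]) [pres A u a])"
      using uv ab by (simp add: n0' r.ring_simprules)
    have r: "snd (pmul T (Dom C v) (pres T (Comp C u v) (a, b)) (ptw T u v)) =
       ?B \<oplus>\<^bsub>R (Dom C v)\<^esub> (?X \<otimes>\<^bsub>R (Dom C v)\<^esub> ?c \<oplus>\<^bsub>R (Dom C v)\<^esub> f1 (Dom C v, [Comp C u v]) [a])"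
      using uv ab by (simp add: n0' r.ring_simprules pc)
    have f: "fst (pmul T (Dom C v) (ptw T u v) (pres T v (pres T u (a, b)))) =
        fst (pmul T (Dom C v) (pres T (Comp C u v) (a, b)) (ptw T u v))"
      using uv ab by (simp add: pc)
    have bc: "?B \<in> carrier (R (Dom C v))" using uv ab by simp
    have x1: "?c \<otimes>\<^bsub>R (Dom C v)\<^esub> ?X \<oplus>\<^bsub>R (Dom C v)\<^esub> pres A v (f1 (Dom C u, [u]) [a])
      \<oplus>\<^bsub>R (Dom C v)\<^esub> f1 (Dom C v, [v]) [pres A u a] \<in> carrier (R (Dom C v))" using uv ab by simp
    have x2: "?X \<otimes>\<^bsub>R (Dom C v)\<^esub> ?c \<oplus>\<^bsub>R (Dom C v)\<^esub> f1 (Dom C v, [Comp C u v]) [a] \<in> carrier (R (Dom C v))"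
      using uv ab by simp
    show ?thesis
      unfolding prod_eq_iff[of "pmul T (Dom C v) (ptw T u v) (pres T v (pres T u (a, b)))"] f l r
      unfolding E2b_def using r.add_l_cancel_iff[OF bc x1 x2] by auto
  qed
  show ?thesis
  proof
    assume h: "ptw T u v \<in> pcar T (Dom C v) \<and> invertible T (Dom C v) (ptw T u v) \<and>
        (\<forall>a\<in>pcar T (Cod C u). pmul T (Dom C v) (ptw T u v) (pres T v (pres T u a)) =
           pmul T (Dom C v) (pres T (Comp C u v) a) (ptw T u v))"
    show "\<forall>a\<in>carrier (R (Cod C u)). E2b u v a"
    proof
      fix a assume a: "a \<in> carrier (R (Cod C u))"
      have "pmul T (Dom C v) (ptw T u v) (pres T v (pres T u (a, \<zero>\<^bsub>R (Cod C u)\<^esub>))) =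
           pmul T (Dom C v) (pres T (Comp C u v) (a, \<zero>\<^bsub>R (Cod C u)\<^esub>)) (ptw T u v)"
        by (rule h[THEN conjunct2, THEN conjunct2, rule_format]) (simp add: a uv rs(2))
      moreover have "\<zero>\<^bsub>R (Cod C u)\<^esub> \<in> carrier (R (Cod C u))" using uv rs(2) by simp
      ultimately show "E2b u v a" using eq[OF a] by blast
    qed
  next
    assume h: "\<forall>a\<in>carrier (R (Cod C u)). E2b u v a"
    show "ptw T u v \<in> pcar T (Dom C v) \<and> invertible T (Dom C v) (ptw T u v) \<and>
        (\<forall>a\<in>pcar T (Cod C u). pmul T (Dom C v) (ptw T u v) (pres T v (pres T u a)) =
           pmul T (Dom C v) (pres T (Comp C u v) a) (ptw T u v))"
      using mem inv h eq by auto
  qed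
qed


lemma def_coc1:
  assumes n0: N0 and n1: N1 and uvw: "u \<in> Mor C" "v \<in> Mor C" "w \<in> Mor C" "Cod C w = Dom C v" "Cod C v = Dom C u"
  shows "pmul T (Dom C w) (ptw T u (Comp C v w)) (ptw T v w) =
        pmul T (Dom C w) (ptw T (Comp C u v) w) (pres T w (ptw T u v)) \<longleftrightarrow> E3b u v w"
proof -
  interpret r: ring "R (Dom C w)" using ringR uvw by simp
  have W: "Dom C w \<in> Ob C" using uvw by simp
  have n0': "m1 (Dom C w, []) [\<one>\<^bsub>R (Dom C w)\<^esub>, \<one>\<^bsub>R (Dom C w)\<^esub>] = \<zero>\<^bsub>R (Dom C w)\<^esub>"
    using n0 W r.one_closed unfolding N0_def by blast
  have n1': "f1 (Dom C w, [w]) [\<one>\<^bsub>R (Dom C v)\<^esub>] = \<zero>\<^bsub>R (Dom C w)\<^esub>"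
    using n1 uvw unfolding N1_def by auto
  have l: "pmul T (Dom C w) (ptw T u (Comp C v w)) (ptw T v w) =
     (\<one>\<^bsub>R (Dom C w)\<^esub>, c1 (Dom C w, [Comp C v w, u]) [] \<oplus>\<^bsub>R (Dom C w)\<^esub> c1 (Dom C w, [w, v]) [])"
    using uvw by (simp add: n0' r.ring_simprules)
  have r: "pmul T (Dom C w) (ptw T (Comp C u v) w) (pres T w (ptw T u v)) =
     (\<one>\<^bsub>R (Dom C w)\<^esub>, pres A w (c1 (Dom C v, [v, u]) []) \<oplus>\<^bsub>R (Dom C w)\<^esub> c1 (Dom C w, [w, Comp C u v]) [])"
    using uvw by (simp add: n0' n1' r.ring_simprules)
  show ?thesis unfolding l r E3b_def by auto
qed

lemma tw_iff: "is_tw_presheaf C T \<longleftrightarrow> N0 \<and> N1 \<and> R1 \<and> R2 \<and>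
   (\<forall>U\<in>Ob C. \<forall>a\<in>carrier (R U). \<forall>b\<in>carrier (R U). \<forall>c\<in>carrier (R U). E0b U a b c) \<and>
   (\<forall>u\<in>Mor C. \<forall>a\<in>carrier (R (Cod C u)). \<forall>b\<in>carrier (R (Cod C u)). E1b u a b) \<and>
   (\<forall>u\<in>Mor C. \<forall>v\<in>Mor C. Cod C v = Dom C u \<longrightarrow> (\<forall>a\<in>carrier (R (Cod C u)). E2b u v a)) \<and>
   (\<forall>u\<in>Mor C. \<forall>v\<in>Mor C. \<forall>w\<in>Mor C. Cod C v = Dom C u \<longrightarrow> Cod C w = Dom C v \<longrightarrow> E3b u v w)"
  (is "?L \<longleftrightarrow> ?R")
proof -
  have alg: "(\<forall>U\<in>Ob C. is_algebra T U) \<longleftrightarrow> N0 \<and> (\<forall>U\<in>Ob C. \<forall>a\<in>carrier (R U). \<forall>b\<in>carrier (R U). \<forall>c\<in>carrier (R U). E0b U a b c)"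
    unfolding N0_def using def_alg by blast
  have map: "(\<forall>u\<in>Mor C. alg_map T (Cod C u) T (Dom C u) (pres T u)) \<longleftrightarrow> N1 \<and>
      (\<forall>u\<in>Mor C. \<forall>a\<in>carrier (R (Cod C u)). \<forall>b\<in>carrier (R (Cod C u)). E1b u a b)"
    unfolding N1_def using def_map by blast
  have tw: "N0 \<Longrightarrow> (\<forall>u\<in>Mor C. \<forall>v\<in>Mor C. Cod C v = Dom C u \<longrightarrow>
        ptw T u v \<in> pcar T (Dom C v) \<and> invertible T (Dom C v) (ptw T u v) \<and>
        (\<forall>a\<in>pcar T (Cod C u).
           pmul T (Dom C v) (ptw T u v) (pres T v (pres T u a)) =
           pmul T (Dom C v) (pres T (Comp C u v) a) (ptw T u v))) \<longleftrightarrow>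
     (\<forall>u\<in>Mor C. \<forall>v\<in>Mor C. Cod C v = Dom C u \<longrightarrow> (\<forall>a\<in>carrier (R (Cod C u)). E2b u v a))"
    using def_tw1 by blast
  have coc: "N0 \<Longrightarrow> N1 \<Longrightarrow> (\<forall>u\<in>Mor C. \<forall>v\<in>Mor C. \<forall>w\<in>Mor C. Cod C w = Dom C v \<and> Cod C v = Dom C u \<longrightarrow>
        pmul T (Dom C w) (ptw T u (Comp C v w)) (ptw T v w) =
        pmul T (Dom C w) (ptw T (Comp C u v) w) (pres T w (ptw T u v))) \<longleftrightarrow>
     (\<forall>u\<in>Mor C. \<forall>v\<in>Mor C. \<forall>w\<in>Mor C. Cod C v = Dom C u \<longrightarrow> Cod C w = Dom C v \<longrightarrow> E3b u v w)"
    using def_coc1 by blast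
  show ?thesis
  proof
    assume h: ?L
    note hh = h[unfolded is_tw_presheaf_def]
    have a1: "\<forall>U\<in>Ob C. is_algebra T U" using hh by (elim conjE)
    have a2: "\<forall>u\<in>Mor C. alg_map T (Cod C u) T (Dom C u) (pres T u)" using hh by (elim conjE)
    have a3: "\<forall>U\<in>Ob C. \<forall>x\<in>pcar T U. pres T (Ident C U) x = x" using hh by (elim conjE)
    have a4: "\<forall>u\<in>Mor C. \<forall>v\<in>Mor C. Cod C v = Dom C u \<longrightarrow>
        ptw T u v \<in> pcar T (Dom C v) \<and> invertible T (Dom C v) (ptw T u v) \<and>
        (\<forall>a\<in>pcar T (Cod C u).
           pmul T (Dom C v) (ptw T u v) (pres T v (pres T u a)) =
           pmul T (Dom C v) (pres T (Comp C u v) a) (ptw T u v))" using hh by (elim conjE)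
    have a5: "\<forall>u\<in>Mor C. \<forall>v\<in>Mor C. \<forall>w\<in>Mor C. Cod C w = Dom C v \<and> Cod C v = Dom C u \<longrightarrow>
        pmul T (Dom C w) (ptw T u (Comp C v w)) (ptw T v w) =
        pmul T (Dom C w) (ptw T (Comp C u v) w) (pres T w (ptw T u v))" using hh by (elim conjE)
    have a6: "\<forall>u\<in>Mor C. ptw T u (Ident C (Dom C u)) = pone T (Dom C u) \<and> ptw T (Ident C (Cod C u)) u = pone T (Dom C u)"
      using hh by (elim conjE)
    note b1 = iffD1[OF alg a1] and b2 = iffD1[OF map a2]
    then have n0: N0 and n1: N1 by blast+
    note b3 = iffD1[OF def_id a3] and b4 = iffD1[OF def_unit a6] and b5 = iffD1[OF tw[OF n0] a4]
      and b6 = iffD1[OF coc[OF n0 n1] a5]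
    show ?R using b1 b2 b3 b4 b5 b6 by blast
  next
    assume r: ?R
    then have n0: N0 and n1: N1 by blast+
    have b1: "\<forall>U\<in>Ob C. is_algebra T U" using r by (intro iffD2[OF alg]) blast
    have b2: "\<forall>u\<in>Mor C. alg_map T (Cod C u) T (Dom C u) (pres T u)" using r by (intro iffD2[OF map]) blast
    have b3: "\<forall>U\<in>Ob C. \<forall>x\<in>pcar T U. pres T (Ident C U) x = x" using r by (intro iffD2[OF def_id]) blast
    have b6: "\<forall>u\<in>Mor C. ptw T u (Ident C (Dom C u)) = pone T (Dom C u) \<and> ptw T (Ident C (Cod C u)) u = pone T (Dom C u)"
      using r by (intro iffD2[OF def_unit]) blast
    note b4 = iffD2[OF tw[OF n0]] and b5 = iffD2[OF coc[OF n0 n1]]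
    have b4': "\<forall>u\<in>Mor C. \<forall>v\<in>Mor C. Cod C v = Dom C u \<longrightarrow>
        ptw T u v \<in> pcar T (Dom C v) \<and> invertible T (Dom C v) (ptw T u v) \<and>
        (\<forall>a\<in>pcar T (Cod C u).
           pmul T (Dom C v) (ptw T u v) (pres T v (pres T u a)) =
           pmul T (Dom C v) (pres T (Comp C u v) a) (ptw T u v))" using r by (intro b4) blast
    have b5': "\<forall>u\<in>Mor C. \<forall>v\<in>Mor C. \<forall>w\<in>Mor C. Cod C w = Dom C v \<and> Cod C v = Dom C u \<longrightarrow>
        pmul T (Dom C w) (ptw T u (Comp C v w)) (ptw T v w) =
        pmul T (Dom C w) (ptw T (Comp C u v) w) (pres T w (ptw T u v))" using r by (intro b5) blast
    show ?L unfolding is_tw_presheaf_def using b1 b2 b3 b4' b5' b6 by blast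
  qed
qed

end


context P1 begin
theorem part1: "is_tw_deformation C A m1 f1 c1 \<longleftrightarrow>
   NR C A 2 (pack3 m1 f1 c1) \<and> ceq C A 3 (dGS C A 2 (pack3 m1 f1 c1)) (czero A)"
  unfolding is_tw_deformation_def tw_iff NR_iff ceq_iff using cm cf cc by blast
end

lemma (in GS) Z2_P1: "(m1, f1, c1) \<in> Z2 C A \<Longrightarrow> P1 C A m1 f1 c1"
proof -
  assume "(m1, f1, c1) \<in> Z2 C A"
  then have "cochain C A 2 (pack3 m1 f1 c1)" unfolding Z2_def NR_def by blast
  then have "cochain_pq C A 0 2 m1" "cochain_pq C A 1 1 f1" "cochain_pq C A 2 0 c1"
    unfolding cochain_def all_le_2 pack3_def by simp_all
  then show ?thesis by unfold_locales
qed

locale P2 = GS C A for C :: "('o,'m) cat" and A :: "('o,'m,'a,'k::comm_ring_1) tpsh" +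
  fixes m1 f1 c1 m1' f1' c1' :: "('o,'m,'a) cochn"
  assumes z: "(m1, f1, c1) \<in> Z2 C A" and z': "(m1', f1', c1') \<in> Z2 C A"
begin

sublocale D: P1 C A m1 f1 c1 using Z2_P1[OF z] .
sublocale D': P1 C A m1' f1' c1' using Z2_P1[OF z'] .

lemma DN: "D.N0" "D.N1" "D.R1" "D.R2" using z D.NR_iff unfolding Z2_def by blast+
lemma DN': "D'.N0" "D'.N1" "D'.R1" "D'.R2" using z' D'.NR_iff unfolding Z2_def by blast+

definition "G0 g \<longleftrightarrow> (\<forall>U\<in>Ob C. g (U, []) [\<one>\<^bsub>R U\<^esub>] = \<zero>\<^bsub>R U\<^esub>)"
definition "G1b g U a b \<longleftrightarrow> (a \<otimes>\<^bsub>R U\<^esub> g (U, []) [b] \<oplus>\<^bsub>R U\<^esub> g (U, []) [a] \<otimes>\<^bsub>R U\<^esub> b \<oplus>\<^bsub>R U\<^esub> m1' (U, []) [a, b] =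
    m1 (U, []) [a, b] \<oplus>\<^bsub>R U\<^esub> g (U, []) [a \<otimes>\<^bsub>R U\<^esub> b])"
definition "H1b g t u a \<longleftrightarrow> (pres A u a \<otimes>\<^bsub>R (Dom C u)\<^esub> t (Dom C u, [u]) [] \<oplus>\<^bsub>R (Dom C u)\<^esub> pres A u (g (Cod C u, []) [a])
     \<oplus>\<^bsub>R (Dom C u)\<^esub> f1' (Dom C u, [u]) [a] =
   f1 (Dom C u, [u]) [a] \<oplus>\<^bsub>R (Dom C u)\<^esub> (t (Dom C u, [u]) [] \<otimes>\<^bsub>R (Dom C u)\<^esub> pres A u a \<oplus>\<^bsub>R (Dom C u)\<^esub> g (Dom C u, []) [pres A u a]))"
definition "H2b t u v \<longleftrightarrow> (pres A v (t (Dom C u, [u]) []) \<oplus>\<^bsub>R (Dom C v)\<^esub> t (Dom C v, [v]) [] \<oplus>\<^bsub>R (Dom C v)\<^esub> c1' (Dom C v, [v, u]) [] =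
   c1 (Dom C v, [v, u]) [] \<oplus>\<^bsub>R (Dom C v)\<^esub> t (Dom C v, [Comp C u v]) [])"
definition "HR t \<longleftrightarrow> (\<forall>u\<in>Mor C. u = Ident C (Dom C u) \<longrightarrow> t (Dom C u, [u]) [] = \<zero>\<^bsub>R (Dom C u)\<^esub>)"

lemma g_facts:
  assumes g: "cochain_pq C A 0 1 g" and U: "U \<in> Ob C"
  shows "a \<in> carrier (R U) \<Longrightarrow> g (U, []) [a] \<in> carrier (R U)"
    "a \<in> carrier (R U) \<Longrightarrow> b \<in> carrier (R U) \<Longrightarrow> g (U, []) [a \<oplus>\<^bsub>R U\<^esub> b] = g (U, []) [a] \<oplus>\<^bsub>R U\<^esub> g (U, []) [b]"
    "a \<in> carrier (R U) \<Longrightarrow> g (U, []) [psmult A U r a] = psmult A U r (g (U, []) [a])"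
    "a \<in> carrier (R U) \<Longrightarrow> g (U, []) [\<ominus>\<^bsub>R U\<^esub> a] = \<ominus>\<^bsub>R U\<^esub> g (U, []) [a]"
    "g (U, []) [\<zero>\<^bsub>R U\<^esub>] = \<zero>\<^bsub>R U\<^esub>"
  using mlin1E[of U U "g (U, [])"] g U unfolding coch0 by blast+

lemma t_car: "cochain_pq C A 1 0 t \<Longrightarrow> u \<in> Mor C \<Longrightarrow> V = Dom C u \<Longrightarrow> t (V, [u]) [] \<in> carrier (R V)"
  unfolding coch1 mlin0 by blast

lemma nr_c0:
  assumes g: "cochain_pq C A 0 1 g" and U: "U \<in> Ob C" and ab: "a \<in> carrier (R U)" "b \<in> carrier (R U)"
  shows "(dGS C A 1 (pack2 g t) 0 (U, []) [a, b] = csub A (pack3 m1 f1 c1) (pack3 m1' f1' c1') 0 (U, []) [a, b])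
    \<longleftrightarrow> G1b g U a b"
proof -
  interpret r: ring "R U" using ringR[OF U] .
  note gf = g_facts[OF g U]
  have gc: "g (U, []) [a \<otimes>\<^bsub>R U\<^esub> b] \<in> carrier (R U)" using gf ab by simp
  have e1: "dGS C A 1 (pack2 g t) 0 (U, []) [a, b] =
     (a \<otimes>\<^bsub>R U\<^esub> g (U, []) [b] \<oplus>\<^bsub>R U\<^esub> g (U, []) [a] \<otimes>\<^bsub>R U\<^esub> b) \<oplus>\<^bsub>R U\<^esub> \<ominus>\<^bsub>R U\<^esub> g (U, []) [a \<otimes>\<^bsub>R U\<^esub> b]"
    using ab U gf gc
    apply (simp add: dGS_def dHoch_def Let_def pack2_def fsig_def comp_chain_def lsum_def RU_simps
       eval_nat_numeral upt_rec)
    apply (simp add: r.ring_simprules)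
    done
  have e2: "csub A (pack3 m1 f1 c1) (pack3 m1' f1' c1') 0 (U, []) [a, b] = m1 (U, []) [a, b] \<oplus>\<^bsub>R U\<^esub> \<ominus>\<^bsub>R U\<^esub> m1' (U, []) [a, b]"
    using ab U by (simp add: csub_def pack3_def RU_simps)
  show ?thesis unfolding e1 e2 G1b_def
    apply (subst r.diff_eq_iff)
    using ab U gf gc by simp_all
qed


lemma nr_c1:
  assumes g: "cochain_pq C A 0 1 g" and t: "cochain_pq C A 1 0 t" and u: "u \<in> Mor C" and a: "a \<in> carrier (R (Cod C u))"
  shows "(dGS C A 1 (pack2 g t) 1 (Dom C u, [u]) [a] = csub A (pack3 m1 f1 c1) (pack3 m1' f1' c1') 1 (Dom C u, [u]) [a])
    \<longleftrightarrow> H1b g t u a"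
proof -
  interpret r: ring "R (Dom C u)" using ringR u by simp
  have U: "Dom C u \<in> Ob C" "Cod C u \<in> Ob C" using u by simp_all
  note gf = g_facts[OF g U(1)] g_facts[OF g U(2)]
  have tc: "t (Dom C u, [u]) [] \<in> carrier (R (Dom C u))" using t_car[OF t u] by simp
  have e1: "dGS C A 1 (pack2 g t) 1 (Dom C u, [u]) [a] =
     (pres A u a \<otimes>\<^bsub>R (Dom C u)\<^esub> t (Dom C u, [u]) [] \<oplus>\<^bsub>R (Dom C u)\<^esub> pres A u (g (Cod C u, []) [a])) \<oplus>\<^bsub>R (Dom C u)\<^esub>
     \<ominus>\<^bsub>R (Dom C u)\<^esub> (t (Dom C u, [u]) [] \<otimes>\<^bsub>R (Dom C u)\<^esub> pres A u a \<oplus>\<^bsub>R (Dom C u)\<^esub> g (Dom C u, []) [pres A u a])"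
    using a u gf tc
    apply (simp add: dGS_def dHoch_def dSimp_def face_def Let_def pack2_def fsig_def comp_chain_def lsum_def RU_simps
       eval_nat_numeral upt_rec)
    apply (simp add: r.ring_simprules)
    done
  have e2: "csub A (pack3 m1 f1 c1) (pack3 m1' f1' c1') 1 (Dom C u, [u]) [a] =
      f1 (Dom C u, [u]) [a] \<oplus>\<^bsub>R (Dom C u)\<^esub> \<ominus>\<^bsub>R (Dom C u)\<^esub> f1' (Dom C u, [u]) [a]"
    using a u by (simp add: csub_def pack3_def RU_simps)
  show ?thesis unfolding e1 e2 H1b_def
    apply (subst r.diff_eq_iff)
    using a u gf tc by simp_all
qed

lemma nr_c2:
  assumes t: "cochain_pq C A 1 0 t" and uv: "u \<in> Mor C" "v \<in> Mor C" "Cod C v = Dom C u"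
  shows "(dGS C A 1 (pack2 g t) 2 (Dom C v, [v, u]) [] = csub A (pack3 m1 f1 c1) (pack3 m1' f1' c1') 2 (Dom C v, [v, u]) [])
    \<longleftrightarrow> H2b t u v"
proof -
  interpret r: ring "R (Dom C v)" using ringR uv by simp
  note tc = t_car[OF t]
  have e1: "dGS C A 1 (pack2 g t) 2 (Dom C v, [v, u]) [] =
     (pres A v (t (Dom C u, [u]) []) \<oplus>\<^bsub>R (Dom C v)\<^esub> t (Dom C v, [v]) []) \<oplus>\<^bsub>R (Dom C v)\<^esub> \<ominus>\<^bsub>R (Dom C v)\<^esub> t (Dom C v, [Comp C u v]) []"
    using uv
    apply (simp add: dGS_def dHoch_def dSimp_def face_def Let_def pack2_def fsig_def comp_chain_def lsum_def RU_simps
       eval_nat_numeral upt_rec tc)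
    apply (simp add: r.ring_simprules tc)
    done
  have e2: "csub A (pack3 m1 f1 c1) (pack3 m1' f1' c1') 2 (Dom C v, [v, u]) [] =
      c1 (Dom C v, [v, u]) [] \<oplus>\<^bsub>R (Dom C v)\<^esub> \<ominus>\<^bsub>R (Dom C v)\<^esub> c1' (Dom C v, [v, u]) []"
    using uv by (simp add: csub_def pack3_def RU_simps)
  show ?thesis unfolding e1 e2 H2b_def
    apply (subst r.diff_eq_iff)
    using uv by (simp_all add: tc)
qed

lemma nr_iff:
  assumes g: "cochain_pq C A 0 1 g" and t: "cochain_pq C A 1 0 t"
  shows "NR C A 1 (pack2 g t) \<and> ceq C A 2 (dGS C A 1 (pack2 g t)) (csub A (pack3 m1 f1 c1) (pack3 m1' f1' c1'))
    \<longleftrightarrow> G0 g \<and> HR t \<and> (\<forall>U\<in>Ob C. \<forall>a\<in>carrier (R U). \<forall>b\<in>carrier (R U). G1b g U a b) \<and>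
      (\<forall>u\<in>Mor C. \<forall>a\<in>carrier (R (Cod C u)). H1b g t u a) \<and>
      (\<forall>u\<in>Mor C. \<forall>v\<in>Mor C. Cod C v = Dom C u \<longrightarrow> H2b t u v)"
proof -
  have co: "cochain C A 1 (pack2 g t)"
    unfolding cochain_def all_le_1 pack2_def using g t by simp
  have no: "normalized C A 1 (pack2 g t) \<longleftrightarrow> G0 g"
    unfolding normalized_def all_le_1 pack2_def G0_def
    by (auto simp del: One_nat_def simp: ball_nerve0 ball_nerve1 D.ball_nerve1' args0 args1 D.args1' D.ex_less1 RU_simps rs(6))
  have re: "reduced C A 1 (pack2 g t) \<longleftrightarrow> HR t"
    unfolding reduced_def all_le_1 pack2_def HR_def
    by (auto simp del: One_nat_def simp: ball_nerve0 ball_nerve1 D.ball_nerve1' args0 args1 D.args1' degenerate_def nerve0_iff RU_simps)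
  have ce: "ceq C A 2 (dGS C A 1 (pack2 g t)) (csub A (pack3 m1 f1 c1) (pack3 m1' f1' c1')) \<longleftrightarrow>
      (\<forall>U\<in>Ob C. \<forall>a\<in>carrier (R U). \<forall>b\<in>carrier (R U). G1b g U a b) \<and>
      (\<forall>u\<in>Mor C. \<forall>a\<in>carrier (R (Cod C u)). H1b g t u a) \<and>
      (\<forall>u\<in>Mor C. \<forall>v\<in>Mor C. Cod C v = Dom C u \<longrightarrow> H2b t u v)"
    unfolding ceq_def all_le_2
    by (simp del: One_nat_def add: ball_nerve0 ball_nerve1 D.ball_nerve1' ball_nerve2 args0 args1 D.args1' args2
       nr_c0[OF g] nr_c1[OF g t] nr_c2[OF t])
  show ?thesis unfolding NR_def using co no re ce by blast
qed

end


lemma g_of_simp[simp]: "g_of A g U (a, b) = (a, b \<oplus>\<^bsub>RU A U\<^esub> g (U, []) [a])"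
  by (simp add: g_of_def RU_simps)
lemma tau_of_simp[simp]: "tau_of C A \<tau> u = (\<one>\<^bsub>RU A (Dom C u)\<^esub>, \<tau> (Dom C u, [u]) [])"
  by (simp add: tau_of_def RU_simps)

context P2 begin

definition "T1b g \<tau> u a \<longleftrightarrow> (f1 (Dom C u, [u]) [a] \<oplus>\<^bsub>R (Dom C u)\<^esub> g (Dom C u, []) [pres A u a] \<oplus>\<^bsub>R (Dom C u)\<^esub> pres A u a \<otimes>\<^bsub>R (Dom C u)\<^esub> \<tau> (Dom C u, [u]) [] =
   pres A u (g (Cod C u, []) [a]) \<oplus>\<^bsub>R (Dom C u)\<^esub> f1' (Dom C u, [u]) [a] \<oplus>\<^bsub>R (Dom C u)\<^esub> \<tau> (Dom C u, [u]) [] \<otimes>\<^bsub>R (Dom C u)\<^esub> pres A u a)"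
definition "T2b \<tau> u v \<longleftrightarrow> (\<tau> (Dom C v, [Comp C u v]) [] \<oplus>\<^bsub>R (Dom C v)\<^esub> c1' (Dom C v, [v, u]) [] =
   c1 (Dom C v, [v, u]) [] \<oplus>\<^bsub>R (Dom C v)\<^esub> \<tau> (Dom C v, [v]) [] \<oplus>\<^bsub>R (Dom C v)\<^esub> pres A v (\<tau> (Dom C u, [u]) []))"
definition "TI \<tau> \<longleftrightarrow> (\<forall>U\<in>Ob C. \<tau> (U, [Ident C U]) [] = \<zero>\<^bsub>R U\<^esub>)"

lemma iso_alg:
  assumes g: "cochain_pq C A 0 1 g" and U: "U \<in> Ob C"
  shows "alg_map D.T U D'.T U (g_of A g U) \<longleftrightarrow> g (U, []) [\<one>\<^bsub>R U\<^esub>] = \<zero>\<^bsub>R U\<^esub> \<and>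
     (\<forall>a\<in>carrier (R U). \<forall>b\<in>carrier (R U). G1b g U a b)"
proof -
  interpret r: ring "R U" using ringR[OF U] .
  note gf = g_facts[OF g U]
  note sms = sm_add[OF U] add_sm[OF U] sm_mul_l[OF U] sm_mul_r[OF U] sm_sm[OF U] sm_neg[OF U]
  show ?thesis
  proof
    assume h: "alg_map D.T U D'.T U (g_of A g U)"
    have o: "g_of A g U (pone D.T U) = pone D'.T U" by (rule alg_map_oneD[OF h])
    have e: "G1b g U a b" if ab: "a \<in> carrier (R U)" "b \<in> carrier (R U)" for a b
    proof -
      have "g_of A g U (pmul D.T U (a, \<zero>\<^bsub>R U\<^esub>) (b, \<zero>\<^bsub>R U\<^esub>)) =
            pmul D'.T U (g_of A g U (a, \<zero>\<^bsub>R U\<^esub>)) (g_of A g U (b, \<zero>\<^bsub>R U\<^esub>))"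
        by (rule alg_map_mulD[OF h]) (simp_all add: ab)
      then show ?thesis using ab U gf unfolding G1b_def by (simp add: r.ring_simprules)
    qed
    show "g (U, []) [\<one>\<^bsub>R U\<^esub>] = \<zero>\<^bsub>R U\<^esub> \<and> (\<forall>a\<in>carrier (R U). \<forall>b\<in>carrier (R U). G1b g U a b)"
      using o e U gf by (simp add: r.ring_simprules)
  next
    assume h: "g (U, []) [\<one>\<^bsub>R U\<^esub>] = \<zero>\<^bsub>R U\<^esub> \<and> (\<forall>a\<in>carrier (R U). \<forall>b\<in>carrier (R U). G1b g U a b)"
    show "alg_map D.T U D'.T U (g_of A g U)"
    proof (rule alg_mapI)
      fix x y assume xy: "x \<in> pcar D.T U" "y \<in> pcar D.T U"
      obtain a b where x: "x = (a, b)" by (cases x)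
      obtain a' b' where y: "y = (a', b')" by (cases y)
      have c: "a \<in> carrier (R U)" "b \<in> carrier (R U)" "a' \<in> carrier (R U)" "b' \<in> carrier (R U)"
        using xy x y by auto
      have E: "m1 (U, []) [a, a'] \<oplus>\<^bsub>R U\<^esub> g (U, []) [a \<otimes>\<^bsub>R U\<^esub> a'] =
         a \<otimes>\<^bsub>R U\<^esub> g (U, []) [a'] \<oplus>\<^bsub>R U\<^esub> g (U, []) [a] \<otimes>\<^bsub>R U\<^esub> a' \<oplus>\<^bsub>R U\<^esub> m1' (U, []) [a, a']"
        using h c unfolding G1b_def by auto
      have s1: "(a \<otimes>\<^bsub>R U\<^esub> b' \<oplus>\<^bsub>R U\<^esub> b \<otimes>\<^bsub>R U\<^esub> a') \<oplus>\<^bsub>R U\<^esub> m1 (U, []) [a, a'] \<oplus>\<^bsub>R U\<^esub> g (U, []) [a \<otimes>\<^bsub>R U\<^esub> a'] =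
        (a \<otimes>\<^bsub>R U\<^esub> b' \<oplus>\<^bsub>R U\<^esub> b \<otimes>\<^bsub>R U\<^esub> a') \<oplus>\<^bsub>R U\<^esub> (m1 (U, []) [a, a'] \<oplus>\<^bsub>R U\<^esub> g (U, []) [a \<otimes>\<^bsub>R U\<^esub> a'])"
        using c U gf by (simp add: r.ring_simprules)
      have s2: "a \<otimes>\<^bsub>R U\<^esub> (b' \<oplus>\<^bsub>R U\<^esub> g (U, []) [a']) \<oplus>\<^bsub>R U\<^esub> (b \<oplus>\<^bsub>R U\<^esub> g (U, []) [a]) \<otimes>\<^bsub>R U\<^esub> a' \<oplus>\<^bsub>R U\<^esub> m1' (U, []) [a, a'] =
        (a \<otimes>\<^bsub>R U\<^esub> b' \<oplus>\<^bsub>R U\<^esub> b \<otimes>\<^bsub>R U\<^esub> a') \<oplus>\<^bsub>R U\<^esub> (a \<otimes>\<^bsub>R U\<^esub> g (U, []) [a'] \<oplus>\<^bsub>R U\<^esub> g (U, []) [a] \<otimes>\<^bsub>R U\<^esub> a' \<oplus>\<^bsub>R U\<^esub> m1' (U, []) [a, a'])"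
        using c U gf by (simp add: r.ring_simprules)
      show "g_of A g U (pmul D.T U x y) = pmul D'.T U (g_of A g U x) (g_of A g U y)"
        unfolding x y D.T_simps D'.T_simps g_of_simp s1 s2 E by simp
    next
      show "g_of A g U (pone D.T U) = pone D'.T U" using h U by simp
    qed (insert U gf, auto simp: r.ring_simprules sms)
  qed
qed

lemma iso_bij:
  assumes g: "cochain_pq C A 0 1 g" and U: "U \<in> Ob C"
  shows "bij_betw (g_of A g U) (pcar D.T U) (pcar D'.T U)"
proof -
  interpret r: ring "R U" using ringR[OF U] .
  note gf = g_facts[OF g U]
  show ?thesis
    apply (rule bij_betw_byWitness[where f'="\<lambda>(a, b). (a, b \<oplus>\<^bsub>R U\<^esub> \<ominus>\<^bsub>R U\<^esub> g (U, []) [a])"])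
    using gf by (auto simp: r.ring_simprules)
qed


lemma iso_tau1:
  assumes g: "cochain_pq C A 0 1 g" and t: "cochain_pq C A 1 0 \<tau>" and u: "u \<in> Mor C"
  shows "tau_of C A \<tau> u \<in> pcar D'.T (Dom C u) \<and> invertible D'.T (Dom C u) (tau_of C A \<tau> u) \<and>
        (\<forall>a\<in>pcar D.T (Cod C u).
           pmul D'.T (Dom C u) (g_of A g (Dom C u) (pres D.T u a)) (tau_of C A \<tau> u) =
           pmul D'.T (Dom C u) (tau_of C A \<tau> u) (pres D'.T u (g_of A g (Cod C u) a)))
     \<longleftrightarrow> (\<forall>a\<in>carrier (R (Cod C u)). T1b g \<tau> u a)"
proof -
  interpret r: ring "R (Dom C u)" using ringR u by simp
  have U: "Dom C u \<in> Ob C" "Cod C u \<in> Ob C" using u by simp_all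
  note gf = g_facts[OF g U(1)] g_facts[OF g U(2)]
  have n0': "m1' (Dom C u, []) [\<one>\<^bsub>R (Dom C u)\<^esub>, a] = \<zero>\<^bsub>R (Dom C u)\<^esub>" "m1' (Dom C u, []) [a, \<one>\<^bsub>R (Dom C u)\<^esub>] = \<zero>\<^bsub>R (Dom C u)\<^esub>"
    if "a \<in> carrier (R (Dom C u))" for a using DN'(1) U that unfolding D'.N0_def by blast+
  have tc: "\<tau> (Dom C u, [u]) [] \<in> carrier (R (Dom C u))" using t_car[OF t u] by simp
  have mem: "tau_of C A \<tau> u \<in> pcar D'.T (Dom C u)" using u tc by simp
  have inv: "invertible D'.T (Dom C u) (tau_of C A \<tau> u)"
    unfolding invertible_def
    apply (rule bexI[of _ "(\<one>\<^bsub>R (Dom C u)\<^esub>, \<ominus>\<^bsub>R (Dom C u)\<^esub> \<tau> (Dom C u, [u]) [])"])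
    using u tc by (simp_all add: n0' r.ring_simprules)
  have eq: "pmul D'.T (Dom C u) (g_of A g (Dom C u) (pres D.T u (a, b))) (tau_of C A \<tau> u) =
           pmul D'.T (Dom C u) (tau_of C A \<tau> u) (pres D'.T u (g_of A g (Cod C u) (a, b))) \<longleftrightarrow> T1b g \<tau> u a"
    if ab: "a \<in> carrier (R (Cod C u))" "b \<in> carrier (R (Cod C u))" for a b
  proof -
    let ?t = "\<tau> (Dom C u, [u]) []" and ?B = "pres A u b"
    have l: "snd (pmul D'.T (Dom C u) (g_of A g (Dom C u) (pres D.T u (a, b))) (tau_of C A \<tau> u)) =
       ?B \<oplus>\<^bsub>R (Dom C u)\<^esub> (f1 (Dom C u, [u]) [a] \<oplus>\<^bsub>R (Dom C u)\<^esub> g (Dom C u, []) [pres A u a] \<oplus>\<^bsub>R (Dom C u)\<^esub> pres A u a \<otimes>\<^bsub>R (Dom C u)\<^esub> ?t)"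
      using u ab tc gf by (simp add: n0' r.ring_simprules)
    have r: "snd (pmul D'.T (Dom C u) (tau_of C A \<tau> u) (pres D'.T u (g_of A g (Cod C u) (a, b)))) =
       ?B \<oplus>\<^bsub>R (Dom C u)\<^esub> (pres A u (g (Cod C u, []) [a]) \<oplus>\<^bsub>R (Dom C u)\<^esub> f1' (Dom C u, [u]) [a] \<oplus>\<^bsub>R (Dom C u)\<^esub> ?t \<otimes>\<^bsub>R (Dom C u)\<^esub> pres A u a)"
      using u ab tc gf by (simp add: n0' r.ring_simprules)
    have f: "fst (pmul D'.T (Dom C u) (g_of A g (Dom C u) (pres D.T u (a, b))) (tau_of C A \<tau> u)) =
        fst (pmul D'.T (Dom C u) (tau_of C A \<tau> u) (pres D'.T u (g_of A g (Cod C u) (a, b))))"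
      using u ab tc gf by simp
    have bc: "?B \<in> carrier (R (Dom C u))" using u ab by simp
    have x1: "f1 (Dom C u, [u]) [a] \<oplus>\<^bsub>R (Dom C u)\<^esub> g (Dom C u, []) [pres A u a] \<oplus>\<^bsub>R (Dom C u)\<^esub> pres A u a \<otimes>\<^bsub>R (Dom C u)\<^esub> ?t
       \<in> carrier (R (Dom C u))" using u ab tc gf by simp
    have x2: "pres A u (g (Cod C u, []) [a]) \<oplus>\<^bsub>R (Dom C u)\<^esub> f1' (Dom C u, [u]) [a] \<oplus>\<^bsub>R (Dom C u)\<^esub> ?t \<otimes>\<^bsub>R (Dom C u)\<^esub> pres A u a
       \<in> carrier (R (Dom C u))" using u ab tc gf by simp
    show ?thesis
      unfolding prod_eq_iff[of "pmul D'.T (Dom C u) (g_of A g (Dom C u) (pres D.T u (a, b))) (tau_of C A \<tau> u)"] f l r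
      unfolding T1b_def using r.add_l_cancel_iff[OF bc x1 x2] by auto
  qed
  show ?thesis
  proof
    assume h: "tau_of C A \<tau> u \<in> pcar D'.T (Dom C u) \<and> invertible D'.T (Dom C u) (tau_of C A \<tau> u) \<and>
        (\<forall>a\<in>pcar D.T (Cod C u).
           pmul D'.T (Dom C u) (g_of A g (Dom C u) (pres D.T u a)) (tau_of C A \<tau> u) =
           pmul D'.T (Dom C u) (tau_of C A \<tau> u) (pres D'.T u (g_of A g (Cod C u) a)))"
    show "\<forall>a\<in>carrier (R (Cod C u)). T1b g \<tau> u a"
    proof
      fix a assume a: "a \<in> carrier (R (Cod C u))"
      have z: "\<zero>\<^bsub>R (Cod C u)\<^esub> \<in> carrier (R (Cod C u))" using u rs(2) by simp
      have "pmul D'.T (Dom C u) (g_of A g (Dom C u) (pres D.T u (a, \<zero>\<^bsub>R (Cod C u)\<^esub>))) (tau_of C A \<tau> u) =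
           pmul D'.T (Dom C u) (tau_of C A \<tau> u) (pres D'.T u (g_of A g (Cod C u) (a, \<zero>\<^bsub>R (Cod C u)\<^esub>)))"
        by (rule h[THEN conjunct2, THEN conjunct2, rule_format]) (simp add: a z)
      then show "T1b g \<tau> u a" using eq[OF a z] by blast
    qed
  next
    assume h: "\<forall>a\<in>carrier (R (Cod C u)). T1b g \<tau> u a"
    show "tau_of C A \<tau> u \<in> pcar D'.T (Dom C u) \<and> invertible D'.T (Dom C u) (tau_of C A \<tau> u) \<and>
        (\<forall>a\<in>pcar D.T (Cod C u).
           pmul D'.T (Dom C u) (g_of A g (Dom C u) (pres D.T u a)) (tau_of C A \<tau> u) =
           pmul D'.T (Dom C u) (tau_of C A \<tau> u) (pres D'.T u (g_of A g (Cod C u) a)))"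
      using mem inv h eq by auto
  qed
qed

lemma iso_coc1:
  assumes g: "cochain_pq C A 0 1 g" and t: "cochain_pq C A 1 0 \<tau>" and g0: "G0 g"
    and uv: "u \<in> Mor C" "v \<in> Mor C" "Cod C v = Dom C u"
  shows "pmul D'.T (Dom C v) (tau_of C A \<tau> (Comp C u v)) (ptw D'.T u v) =
        pmul D'.T (Dom C v) (pmul D'.T (Dom C v) (g_of A g (Dom C v) (ptw D.T u v)) (tau_of C A \<tau> v)) (pres D'.T v (tau_of C A \<tau> u))
     \<longleftrightarrow> T2b \<tau> u v"
proof -
  interpret r: ring "R (Dom C v)" using ringR uv by simp
  have W: "Dom C v \<in> Ob C" using uv by simp
  have n0': "m1' (Dom C v, []) [\<one>\<^bsub>R (Dom C v)\<^esub>, \<one>\<^bsub>R (Dom C v)\<^esub>] = \<zero>\<^bsub>R (Dom C v)\<^esub>"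
    using DN'(1) W r.one_closed unfolding D'.N0_def by blast
  have n1': "f1' (Dom C v, [v]) [\<one>\<^bsub>R (Dom C u)\<^esub>] = \<zero>\<^bsub>R (Dom C v)\<^esub>"
    using DN'(2) uv unfolding D'.N1_def by auto
  have g0': "g (Dom C v, []) [\<one>\<^bsub>R (Dom C v)\<^esub>] = \<zero>\<^bsub>R (Dom C v)\<^esub>" using g0 W unfolding G0_def by blast
  note tc = t_car[OF t]
  have l: "pmul D'.T (Dom C v) (tau_of C A \<tau> (Comp C u v)) (ptw D'.T u v) =
     (\<one>\<^bsub>R (Dom C v)\<^esub>, \<tau> (Dom C v, [Comp C u v]) [] \<oplus>\<^bsub>R (Dom C v)\<^esub> c1' (Dom C v, [v, u]) [])"
    using uv by (simp add: n0' r.ring_simprules tc)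
  have r: "pmul D'.T (Dom C v) (pmul D'.T (Dom C v) (g_of A g (Dom C v) (ptw D.T u v)) (tau_of C A \<tau> v)) (pres D'.T v (tau_of C A \<tau> u)) =
     (\<one>\<^bsub>R (Dom C v)\<^esub>, c1 (Dom C v, [v, u]) [] \<oplus>\<^bsub>R (Dom C v)\<^esub> \<tau> (Dom C v, [v]) [] \<oplus>\<^bsub>R (Dom C v)\<^esub> pres A v (\<tau> (Dom C u, [u]) []))"
    using uv by (simp add: n0' n1' g0' r.ring_simprules tc)
  show ?thesis unfolding l r T2b_def by simp
qed

end


context P2 begin

lemma iso_iff:
  assumes g: "cochain_pq C A 0 1 g" and t: "cochain_pq C A 1 0 \<tau>"
  shows "is_tw_iso C D.T D'.T (g_of A g) (tau_of C A \<tau>) \<longleftrightarrow>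
    G0 g \<and> (\<forall>U\<in>Ob C. \<forall>a\<in>carrier (R U). \<forall>b\<in>carrier (R U). G1b g U a b) \<and>
    (\<forall>u\<in>Mor C. \<forall>a\<in>carrier (R (Cod C u)). T1b g \<tau> u a) \<and>
    (\<forall>u\<in>Mor C. \<forall>v\<in>Mor C. Cod C v = Dom C u \<longrightarrow> T2b \<tau> u v) \<and> TI \<tau>"
proof -
  have alg: "(\<forall>U\<in>Ob C. alg_map D.T U D'.T U (g_of A g U)) \<longleftrightarrow>
     G0 g \<and> (\<forall>U\<in>Ob C. \<forall>a\<in>carrier (R U). \<forall>b\<in>carrier (R U). G1b g U a b)"
    unfolding G0_def using iso_alg[OF g] by blast
  have bij: "\<forall>U\<in>Ob C. bij_betw (g_of A g U) (pcar D.T U) (pcar D'.T U)" using iso_bij[OF g] by blast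
  have tau: "(\<forall>u\<in>Mor C. tau_of C A \<tau> u \<in> pcar D'.T (Dom C u) \<and> invertible D'.T (Dom C u) (tau_of C A \<tau> u) \<and>
        (\<forall>a\<in>pcar D.T (Cod C u).
           pmul D'.T (Dom C u) (g_of A g (Dom C u) (pres D.T u a)) (tau_of C A \<tau> u) =
           pmul D'.T (Dom C u) (tau_of C A \<tau> u) (pres D'.T u (g_of A g (Cod C u) a))))
     \<longleftrightarrow> (\<forall>u\<in>Mor C. \<forall>a\<in>carrier (R (Cod C u)). T1b g \<tau> u a)"
    using iso_tau1[OF g t] by blast
  have coc: "G0 g \<Longrightarrow> (\<forall>u\<in>Mor C. \<forall>v\<in>Mor C. Cod C v = Dom C u \<longrightarrow>
        pmul D'.T (Dom C v) (tau_of C A \<tau> (Comp C u v)) (ptw D'.T u v) =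
        pmul D'.T (Dom C v) (pmul D'.T (Dom C v) (g_of A g (Dom C v) (ptw D.T u v)) (tau_of C A \<tau> v)) (pres D'.T v (tau_of C A \<tau> u)))
     \<longleftrightarrow> (\<forall>u\<in>Mor C. \<forall>v\<in>Mor C. Cod C v = Dom C u \<longrightarrow> T2b \<tau> u v)"
    using iso_coc1[OF g t] by blast
  have ti: "(\<forall>U\<in>Ob C. tau_of C A \<tau> (Ident C U) = pone D'.T U) \<longleftrightarrow> TI \<tau>"
    unfolding TI_def by simp
  show ?thesis
  proof
    assume h: "is_tw_iso C D.T D'.T (g_of A g) (tau_of C A \<tau>)"
    note hh = h[unfolded is_tw_iso_def is_tw_morphism_def]
    have a1: "\<forall>U\<in>Ob C. alg_map D.T U D'.T U (g_of A g U)" using hh by (elim conjE)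
    have a2: "\<forall>u\<in>Mor C. tau_of C A \<tau> u \<in> pcar D'.T (Dom C u) \<and> invertible D'.T (Dom C u) (tau_of C A \<tau> u) \<and>
        (\<forall>a\<in>pcar D.T (Cod C u).
           pmul D'.T (Dom C u) (g_of A g (Dom C u) (pres D.T u a)) (tau_of C A \<tau> u) =
           pmul D'.T (Dom C u) (tau_of C A \<tau> u) (pres D'.T u (g_of A g (Cod C u) a)))" using hh by (elim conjE)
    have a3: "\<forall>u\<in>Mor C. \<forall>v\<in>Mor C. Cod C v = Dom C u \<longrightarrow>
        pmul D'.T (Dom C v) (tau_of C A \<tau> (Comp C u v)) (ptw D'.T u v) =
        pmul D'.T (Dom C v) (pmul D'.T (Dom C v) (g_of A g (Dom C v) (ptw D.T u v)) (tau_of C A \<tau> v)) (pres D'.T v (tau_of C A \<tau> u))"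
      using hh by (elim conjE)
    have a4: "\<forall>U\<in>Ob C. tau_of C A \<tau> (Ident C U) = pone D'.T U" using hh by (elim conjE)
    note b1 = iffD1[OF alg a1]
    then have g0: "G0 g" by blast
    note b2 = iffD1[OF tau a2] and b3 = iffD1[OF coc[OF g0] a3] and b4 = iffD1[OF ti a4]
    show "G0 g \<and> (\<forall>U\<in>Ob C. \<forall>a\<in>carrier (R U). \<forall>b\<in>carrier (R U). G1b g U a b) \<and>
    (\<forall>u\<in>Mor C. \<forall>a\<in>carrier (R (Cod C u)). T1b g \<tau> u a) \<and>
    (\<forall>u\<in>Mor C. \<forall>v\<in>Mor C. Cod C v = Dom C u \<longrightarrow> T2b \<tau> u v) \<and> TI \<tau>" using b1 b2 b3 b4 by blast
  next
    assume r: "G0 g \<and> (\<forall>U\<in>Ob C. \<forall>a\<in>carrier (R U). \<forall>b\<in>carrier (R U). G1b g U a b) \<and>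
    (\<forall>u\<in>Mor C. \<forall>a\<in>carrier (R (Cod C u)). T1b g \<tau> u a) \<and>
    (\<forall>u\<in>Mor C. \<forall>v\<in>Mor C. Cod C v = Dom C u \<longrightarrow> T2b \<tau> u v) \<and> TI \<tau>"
    then have g0: "G0 g" by blast
    have b1: "\<forall>U\<in>Ob C. alg_map D.T U D'.T U (g_of A g U)" using r by (intro iffD2[OF alg]) blast
    have b2: "\<forall>u\<in>Mor C. tau_of C A \<tau> u \<in> pcar D'.T (Dom C u) \<and> invertible D'.T (Dom C u) (tau_of C A \<tau> u) \<and>
        (\<forall>a\<in>pcar D.T (Cod C u).
           pmul D'.T (Dom C u) (g_of A g (Dom C u) (pres D.T u a)) (tau_of C A \<tau> u) =
           pmul D'.T (Dom C u) (tau_of C A \<tau> u) (pres D'.T u (g_of A g (Cod C u) a)))"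
      using r by (intro iffD2[OF tau]) blast
    have b3: "\<forall>u\<in>Mor C. \<forall>v\<in>Mor C. Cod C v = Dom C u \<longrightarrow>
        pmul D'.T (Dom C v) (tau_of C A \<tau> (Comp C u v)) (ptw D'.T u v) =
        pmul D'.T (Dom C v) (pmul D'.T (Dom C v) (g_of A g (Dom C v) (ptw D.T u v)) (tau_of C A \<tau> v)) (pres D'.T v (tau_of C A \<tau> u))"
      using r by (intro iffD2[OF coc[OF g0]]) blast
    have b4: "\<forall>U\<in>Ob C. tau_of C A \<tau> (Ident C U) = pone D'.T U" using r by (intro iffD2[OF ti]) blast
    show "is_tw_iso C D.T D'.T (g_of A g) (tau_of C A \<tau>)"
      unfolding is_tw_iso_def is_tw_morphism_def using b1 b2 b3 b4 bij by blast
  qed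
qed

lemma pr_iff:
  assumes g: "cochain_pq C A 0 1 g"
  shows "is_pr_iso C D.T D'.T (g_of A g) \<longleftrightarrow>
    G0 g \<and> (\<forall>U\<in>Ob C. \<forall>a\<in>carrier (R U). \<forall>b\<in>carrier (R U). G1b g U a b) \<and>
    (\<forall>u\<in>Mor C. \<forall>a\<in>carrier (R (Cod C u)). H1b g (czero1 A) u a)"
proof -
  have alg: "(\<forall>U\<in>Ob C. alg_map D.T U D'.T U (g_of A g U)) \<longleftrightarrow>
     G0 g \<and> (\<forall>U\<in>Ob C. \<forall>a\<in>carrier (R U). \<forall>b\<in>carrier (R U). G1b g U a b)"
    unfolding G0_def using iso_alg[OF g] by blast
  have bij: "\<forall>U\<in>Ob C. bij_betw (g_of A g U) (pcar D.T U) (pcar D'.T U)" using iso_bij[OF g] by blast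
  have nat: "(\<forall>x\<in>pcar D.T (Cod C u). g_of A g (Dom C u) (pres D.T u x) = pres D'.T u (g_of A g (Cod C u) x))
     \<longleftrightarrow> (\<forall>a\<in>carrier (R (Cod C u)). H1b g (czero1 A) u a)" if u: "u \<in> Mor C" for u
  proof -
    interpret r: ring "R (Dom C u)" using ringR u by simp
    have U: "Dom C u \<in> Ob C" "Cod C u \<in> Ob C" using u by simp_all
    note gf = g_facts[OF g U(1)] g_facts[OF g U(2)]
    have eq: "g_of A g (Dom C u) (pres D.T u (a, b)) = pres D'.T u (g_of A g (Cod C u) (a, b)) \<longleftrightarrow> H1b g (czero1 A) u a"
      if ab: "a \<in> carrier (R (Cod C u))" "b \<in> carrier (R (Cod C u))" for a b
    proof -
      have bc: "pres A u b \<in> carrier (R (Dom C u))" using u ab by simp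
      have x1: "f1 (Dom C u, [u]) [a] \<oplus>\<^bsub>R (Dom C u)\<^esub> g (Dom C u, []) [pres A u a] \<in> carrier (R (Dom C u))"
        using u ab gf by simp
      have x2: "pres A u (g (Cod C u, []) [a]) \<oplus>\<^bsub>R (Dom C u)\<^esub> f1' (Dom C u, [u]) [a] \<in> carrier (R (Dom C u))"
        using u ab gf by simp
      have l: "g_of A g (Dom C u) (pres D.T u (a, b)) = (pres A u a, pres A u b \<oplus>\<^bsub>R (Dom C u)\<^esub> (f1 (Dom C u, [u]) [a] \<oplus>\<^bsub>R (Dom C u)\<^esub> g (Dom C u, []) [pres A u a]))"
        using u ab gf by (simp add: r.ring_simprules)
      have r: "pres D'.T u (g_of A g (Cod C u) (a, b)) = (pres A u a, pres A u b \<oplus>\<^bsub>R (Dom C u)\<^esub> (pres A u (g (Cod C u, []) [a]) \<oplus>\<^bsub>R (Dom C u)\<^esub> f1' (Dom C u, [u]) [a]))"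
        using u ab gf by (simp add: r.ring_simprules)
      have h: "H1b g (czero1 A) u a \<longleftrightarrow> pres A u (g (Cod C u, []) [a]) \<oplus>\<^bsub>R (Dom C u)\<^esub> f1' (Dom C u, [u]) [a] =
          f1 (Dom C u, [u]) [a] \<oplus>\<^bsub>R (Dom C u)\<^esub> g (Dom C u, []) [pres A u a]"
        unfolding H1b_def czero1_def using u ab gf by (simp add: r.ring_simprules RU_simps)
      show ?thesis unfolding l r h prod.inject r.add_l_cancel_iff[OF bc x1 x2] by auto
    qed
    show ?thesis
    proof
      assume h: "\<forall>x\<in>pcar D.T (Cod C u). g_of A g (Dom C u) (pres D.T u x) = pres D'.T u (g_of A g (Cod C u) x)"
      show "\<forall>a\<in>carrier (R (Cod C u)). H1b g (czero1 A) u a"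
      proof
        fix a assume a: "a \<in> carrier (R (Cod C u))"
        have z: "\<zero>\<^bsub>R (Cod C u)\<^esub> \<in> carrier (R (Cod C u))" using u rs(2) by simp
        have "g_of A g (Dom C u) (pres D.T u (a, \<zero>\<^bsub>R (Cod C u)\<^esub>)) = pres D'.T u (g_of A g (Cod C u) (a, \<zero>\<^bsub>R (Cod C u)\<^esub>))"
          by (rule h[rule_format]) (simp add: a z)
        then show "H1b g (czero1 A) u a" using eq[OF a z] by blast
      qed
    next
      assume h: "\<forall>a\<in>carrier (R (Cod C u)). H1b g (czero1 A) u a"
      show "\<forall>x\<in>pcar D.T (Cod C u). g_of A g (Dom C u) (pres D.T u x) = pres D'.T u (g_of A g (Cod C u) x)"
        using h eq by auto
    qed
  qed
  show ?thesis
  proof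
    assume h: "is_pr_iso C D.T D'.T (g_of A g)"
    have a1: "\<forall>U\<in>Ob C. alg_map D.T U D'.T U (g_of A g U)" using h unfolding is_pr_iso_def by blast
    have a2: "\<forall>u\<in>Mor C. \<forall>x\<in>pcar D.T (Cod C u). g_of A g (Dom C u) (pres D.T u x) = pres D'.T u (g_of A g (Cod C u) x)"
      using h unfolding is_pr_iso_def by blast
    show "G0 g \<and> (\<forall>U\<in>Ob C. \<forall>a\<in>carrier (R U). \<forall>b\<in>carrier (R U). G1b g U a b) \<and>
      (\<forall>u\<in>Mor C. \<forall>a\<in>carrier (R (Cod C u)). H1b g (czero1 A) u a)"
      using iffD1[OF alg a1] a2 nat by blast
  next
    assume r: "G0 g \<and> (\<forall>U\<in>Ob C. \<forall>a\<in>carrier (R U). \<forall>b\<in>carrier (R U). G1b g U a b) \<and>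
      (\<forall>u\<in>Mor C. \<forall>a\<in>carrier (R (Cod C u)). H1b g (czero1 A) u a)"
    have b1: "\<forall>U\<in>Ob C. alg_map D.T U D'.T U (g_of A g U)" using r by (intro iffD2[OF alg]) blast
    have b2: "\<forall>u\<in>Mor C. \<forall>x\<in>pcar D.T (Cod C u). g_of A g (Dom C u) (pres D.T u x) = pres D'.T u (g_of A g (Cod C u) x)"
      using r nat by blast
    show "is_pr_iso C D.T D'.T (g_of A g)" unfolding is_pr_iso_def using b1 b2 bij by blast
  qed
qed

end


lemma (in ring) neg_zero_iff: "x \<in> carrier R \<Longrightarrow> (\<ominus> x = \<zero>) = (x = \<zero>)"
  by (metis minus_minus minus_zero)

context P2 begin

lemma bridge_HR:
  assumes t: "cochain_pq C A 1 0 \<tau>"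
    and tt: "\<And>u V. u \<in> Mor C \<Longrightarrow> V = Dom C u \<Longrightarrow> s (V, [u]) [] = \<ominus>\<^bsub>R V\<^esub> \<tau> (V, [u]) []"
  shows "HR s \<longleftrightarrow> TI \<tau>"
proof -
  have "HR s \<longleftrightarrow> (\<forall>u\<in>Mor C. u = Ident C (Dom C u) \<longrightarrow> \<tau> (Dom C u, [u]) [] = \<zero>\<^bsub>R (Dom C u)\<^esub>)"
    unfolding HR_def
  proof (intro ball_cong refl imp_cong)
    fix u assume u: "u \<in> Mor C"
    interpret r: ring "R (Dom C u)" using ringR u by simp
    show "(s (Dom C u, [u]) [] = \<zero>\<^bsub>R (Dom C u)\<^esub>) = (\<tau> (Dom C u, [u]) [] = \<zero>\<^bsub>R (Dom C u)\<^esub>)"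
      using tt[OF u refl] t_car[OF t u refl] r.neg_zero_iff by simp
  qed
  also have "\<dots> \<longleftrightarrow> TI \<tau>"
    unfolding TI_def
  proof safe
    fix U assume h: "\<forall>u\<in>Mor C. u = Ident C (Dom C u) \<longrightarrow> \<tau> (Dom C u, [u]) [] = \<zero>\<^bsub>R (Dom C u)\<^esub>" and U: "U \<in> Ob C"
    show "\<tau> (U, [Ident C U]) [] = \<zero>\<^bsub>R U\<^esub>" using h[rule_format, of "Ident C U"] U by simp
  next
    fix u assume h: "\<forall>U\<in>Ob C. \<tau> (U, [Ident C U]) [] = \<zero>\<^bsub>R U\<^esub>" and u: "u \<in> Mor C" "u = Ident C (Dom C u)"
    show "\<tau> (Dom C u, [u]) [] = \<zero>\<^bsub>R (Dom C u)\<^esub>" using h u by (metis dom_ob)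
  qed
  finally show ?thesis .
qed

lemma bridge_H1:
  assumes g: "cochain_pq C A 0 1 g" and t: "cochain_pq C A 1 0 \<tau>"
    and tt: "\<And>u V. u \<in> Mor C \<Longrightarrow> V = Dom C u \<Longrightarrow> s (V, [u]) [] = \<ominus>\<^bsub>R V\<^esub> \<tau> (V, [u]) []"
    and u: "u \<in> Mor C" and a: "a \<in> carrier (R (Cod C u))"
  shows "H1b g s u a \<longleftrightarrow> T1b g \<tau> u a"
proof -
  interpret r: ring "R (Dom C u)" using ringR u by simp
  have U: "Dom C u \<in> Ob C" "Cod C u \<in> Ob C" using u by simp_all
  note gf = g_facts[OF g U(1)] g_facts[OF g U(2)]
  have tc: "\<tau> (Dom C u, [u]) [] \<in> carrier (R (Dom C u))" using t_car[OF t u] by simp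
  have "H1b g s u a \<longleftrightarrow>
     (pres A u (g (Cod C u, []) [a]) \<oplus>\<^bsub>R (Dom C u)\<^esub> f1' (Dom C u, [u]) [a]) \<oplus>\<^bsub>R (Dom C u)\<^esub> \<ominus>\<^bsub>R (Dom C u)\<^esub> (pres A u a \<otimes>\<^bsub>R (Dom C u)\<^esub> \<tau> (Dom C u, [u]) []) =
     (f1 (Dom C u, [u]) [a] \<oplus>\<^bsub>R (Dom C u)\<^esub> g (Dom C u, []) [pres A u a]) \<oplus>\<^bsub>R (Dom C u)\<^esub> \<ominus>\<^bsub>R (Dom C u)\<^esub> (\<tau> (Dom C u, [u]) [] \<otimes>\<^bsub>R (Dom C u)\<^esub> pres A u a)"
    unfolding H1b_def tt[OF u refl] using u a gf tc by (simp add: r.ring_simprules)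
  also have "\<dots> \<longleftrightarrow> T1b g \<tau> u a"
    apply (subst r.diff_eq_iff)
    using u a gf tc unfolding T1b_def by (auto simp: r.ring_simprules)
  finally show ?thesis .
qed

lemma bridge_H2:
  assumes t: "cochain_pq C A 1 0 \<tau>"
    and tt: "\<And>u V. u \<in> Mor C \<Longrightarrow> V = Dom C u \<Longrightarrow> s (V, [u]) [] = \<ominus>\<^bsub>R V\<^esub> \<tau> (V, [u]) []"
    and uv: "u \<in> Mor C" "v \<in> Mor C" "Cod C v = Dom C u"
  shows "H2b s u v \<longleftrightarrow> T2b \<tau> u v"
proof -
  interpret r: ring "R (Dom C v)" using ringR uv by simp
  note tc = t_car[OF t]
  have e1: "s (Dom C u, [u]) [] = \<ominus>\<^bsub>R (Dom C u)\<^esub> \<tau> (Dom C u, [u]) []" using tt uv by simp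
  have e2: "s (Dom C v, [v]) [] = \<ominus>\<^bsub>R (Dom C v)\<^esub> \<tau> (Dom C v, [v]) []" using tt uv by simp
  have e3: "s (Dom C v, [Comp C u v]) [] = \<ominus>\<^bsub>R (Dom C v)\<^esub> \<tau> (Dom C v, [Comp C u v]) []" using tt[of "Comp C u v"] uv by simp
  have "H2b s u v \<longleftrightarrow>
     c1' (Dom C v, [v, u]) [] \<oplus>\<^bsub>R (Dom C v)\<^esub> \<ominus>\<^bsub>R (Dom C v)\<^esub> (pres A v (\<tau> (Dom C u, [u]) []) \<oplus>\<^bsub>R (Dom C v)\<^esub> \<tau> (Dom C v, [v]) []) =
     c1 (Dom C v, [v, u]) [] \<oplus>\<^bsub>R (Dom C v)\<^esub> \<ominus>\<^bsub>R (Dom C v)\<^esub> \<tau> (Dom C v, [Comp C u v]) []"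
    unfolding H2b_def e1 e2 e3 using uv by (simp add: r.ring_simprules tc)
  also have "\<dots> \<longleftrightarrow> T2b \<tau> u v"
    apply (subst r.diff_eq_iff)
    using uv unfolding T2b_def by (auto simp: r.ring_simprules tc)
  finally show ?thesis .
qed

end


context GS begin

lemma czero1_coch: "cochain_pq C A p 0 (czero1 A)"
  unfolding cochain_pq_def mlin_def args_def czero1_def
  by (auto simp: RU_simps nerve_def rs(2))

lemma cneg_coch: "cochain_pq C A 1 0 \<tau> \<Longrightarrow> cochain_pq C A 1 0 (cneg A \<tau>)"
  unfolding coch1 mlin0 cneg_def by (simp add: ring.ring_simprules(3)[OF ringR])

lemma cneg_val: "cochain_pq C A 1 0 \<tau> \<Longrightarrow> u \<in> Mor C \<Longrightarrow> V = Dom C u \<Longrightarrow>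
   cneg A \<tau> (V, [u]) [] = \<ominus>\<^bsub>R V\<^esub> \<tau> (V, [u]) []"
  unfolding coch1 mlin0 cneg_def by simp

lemma thm1a:
  assumes "cochain_pq C A 0 2 m1" "cochain_pq C A 1 1 f1" "cochain_pq C A 2 0 c1"
  shows "is_tw_deformation C A m1 f1 c1 \<longleftrightarrow>
    NR C A 2 (pack3 m1 f1 c1) \<and> ceq C A 3 (dGS C A 2 (pack3 m1 f1 c1)) (czero A)"
proof -
  interpret P1 C A m1 f1 c1 using assms by unfold_locales
  show ?thesis by (rule part1)
qed

lemma NRt2_iff: "NRt C A 2 (pack3 m1 f1 (czero1 A)) \<longleftrightarrow> NR C A 2 (pack3 m1 f1 (czero1 A))"
  unfolding NRt_def pack3_def czero1_def by simp

lemma thm1b: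
  assumes "cochain_pq C A 0 2 m1" "cochain_pq C A 1 1 f1"
  shows "is_pr_deformation C A m1 f1 \<longleftrightarrow>
    NRt C A 2 (pack3 m1 f1 (czero1 A)) \<and> ceq C A 3 (dGS C A 2 (pack3 m1 f1 (czero1 A))) (czero A)"
  unfolding is_pr_deformation_def NRt2_iff using thm1a[OF assms czero1_coch] .

lemma thm2a:
  assumes z: "(m1, f1, c1) \<in> Z2 C A" and z': "(m1', f1', c1') \<in> Z2 C A"
    and g: "cochain_pq C A 0 1 g1" and t: "cochain_pq C A 1 0 \<tau>1"
  shows "is_tw_iso C (deform C A m1 f1 c1) (deform C A m1' f1' c1') (g_of A g1) (tau_of C A \<tau>1) \<longleftrightarrow>
         NR C A 1 (pack2 g1 (cneg A \<tau>1)) \<and>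
         ceq C A 2 (dGS C A 1 (pack2 g1 (cneg A \<tau>1))) (csub A (pack3 m1 f1 c1) (pack3 m1' f1' c1'))"
proof -
  interpret P2 C A m1 f1 c1 m1' f1' c1' using z z' by unfold_locales
  have tt: "\<And>u V. u \<in> Mor C \<Longrightarrow> V = Dom C u \<Longrightarrow> cneg A \<tau>1 (V, [u]) [] = \<ominus>\<^bsub>R V\<^esub> \<tau>1 (V, [u]) []"
    using cneg_val[OF t] by blast
  show ?thesis
    unfolding iso_iff[OF g t] nr_iff[OF g cneg_coch[OF t]]
    using bridge_HR[where s="cneg A \<tau>1", OF t tt] bridge_H1[where s="cneg A \<tau>1", OF g t tt] bridge_H2[where s="cneg A \<tau>1", OF t tt] by blast
qed

lemma Z2t_Z2: "(m1, f1) \<in> Z2t C A \<Longrightarrow> (m1, f1, czero1 A) \<in> Z2 C A"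
  unfolding Z2t_def Z2_def NRt_def by blast

lemma NRt1_iff: "NRt C A 1 (pack2 g1 (czero1 A)) \<longleftrightarrow> NR C A 1 (pack2 g1 (czero1 A))"
  unfolding NRt_def pack2_def czero1_def by simp

lemma thm2b:
  assumes z: "(m1, f1) \<in> Z2t C A" and z': "(m1', f1') \<in> Z2t C A"
    and g: "cochain_pq C A 0 1 g1"
  shows "is_pr_iso C (deform C A m1 f1 (czero1 A)) (deform C A m1' f1' (czero1 A)) (g_of A g1) \<longleftrightarrow>
         NRt C A 1 (pack2 g1 (czero1 A)) \<and>
         ceq C A 2 (dGS C A 1 (pack2 g1 (czero1 A)))
                   (csub A (pack3 m1 f1 (czero1 A)) (pack3 m1' f1' (czero1 A)))"
proof -
  interpret P2 C A m1 f1 "czero1 A" m1' f1' "czero1 A" using Z2t_Z2[OF z] Z2t_Z2[OF z'] by unfold_locales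
  have hr: "HR (czero1 A)" unfolding HR_def czero1_def by (simp add: RU_simps)
  have h2: "H2b (czero1 A) u v" if "u \<in> Mor C" "v \<in> Mor C" "Cod C v = Dom C u" for u v
  proof -
    interpret r: ring "R (Dom C v)" using ringR that by simp
    show ?thesis unfolding H2b_def unfolding czero1_def using that by (simp add: RU_simps)
  qed
  show ?thesis
    unfolding pr_iff[OF g] NRt1_iff nr_iff[OF g czero1_coch]
    using hr h2 by blast
qed

end


context GS begin

lemma NR1_cong: "NR C A 1 B = NR C A 1 (pack2 (B 0) (B 1))"
  unfolding NR_def cochain_def normalized_def reduced_def all_le_1 pack2_def by simp

lemma NRt1_cong: "NRt C A 1 B = NRt C A 1 (pack2 (B 0) (B 1))"
  unfolding NRt_def using NR1_cong by (simp add: pack2_def)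

lemma ceq1_cong: "ceq C A 2 (dGS C A 1 B) X = ceq C A 2 (dGS C A 1 (pack2 (B 0) (B 1))) X"
  unfolding ceq_def all_le_2 by (simp add: dGS_def pack2_def)

lemma coch_pack3: "cochain C A 2 (pack3 m1 f1 c1) \<longleftrightarrow>
   cochain_pq C A 0 2 m1 \<and> cochain_pq C A 1 1 f1 \<and> cochain_pq C A 2 0 c1"
  unfolding cochain_def all_le_2 pack3_def by simp

lemma coch_pack2: "cochain C A 1 (pack2 g t) \<longleftrightarrow> cochain_pq C A 0 1 g \<and> cochain_pq C A 1 0 t"
  unfolding cochain_def all_le_1 pack2_def by simp

lemma Z2_eq: "Z2 C A = TwDefs C A"
proof (rule Set.set_eqI)
  fix x :: "('o,'m,'a) cochn \<times> ('o,'m,'a) cochn \<times> ('o,'m,'a) cochn"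
  obtain m1 f1 c1 where x: "x = (m1, f1, c1)" by (cases x) auto
  show "x \<in> Z2 C A \<longleftrightarrow> x \<in> TwDefs C A"
  proof (cases "cochain_pq C A 0 2 m1 \<and> cochain_pq C A 1 1 f1 \<and> cochain_pq C A 2 0 c1")
    case True
    then show ?thesis unfolding x Z2_def TwDefs_def using thm1a by auto
  next
    case False
    then show ?thesis unfolding x Z2_def TwDefs_def NR_def is_tw_deformation_def coch_pack3 by auto
  qed
qed

lemma Z2t_eq: "Z2t C A = PrDefs C A"
proof (rule Set.set_eqI)
  fix x :: "('o,'m,'a) cochn \<times> ('o,'m,'a) cochn"
  obtain m1 f1 where x: "x = (m1, f1)" by (cases x) auto
  show "x \<in> Z2t C A \<longleftrightarrow> x \<in> PrDefs C A"
  proof (cases "cochain_pq C A 0 2 m1 \<and> cochain_pq C A 1 1 f1")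
    case True
    then show ?thesis unfolding x Z2t_def PrDefs_def using thm1b by auto
  next
    case False
    then show ?thesis unfolding x Z2t_def PrDefs_def NRt_def NR_def is_pr_deformation_def
        is_tw_deformation_def coch_pack3 by auto
  qed
qed

end

context P2 begin

lemma rel_fwd:
  assumes nr: "NR C A 1 B" and ce: "ceq C A 2 (dGS C A 1 B) (csub A (pack3 m1 f1 c1) (pack3 m1' f1' c1'))"
  shows "\<exists>g1 \<tau>1. cochain_pq C A 0 1 g1 \<and> cochain_pq C A 1 0 \<tau>1 \<and>
        is_tw_iso C D.T D'.T (g_of A g1) (tau_of C A \<tau>1)"
proof -
  have nr': "NR C A 1 (pack2 (B 0) (B 1))" using nr NR1_cong by simp
  have ce': "ceq C A 2 (dGS C A 1 (pack2 (B 0) (B 1))) (csub A (pack3 m1 f1 c1) (pack3 m1' f1' c1'))"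
    using ce ceq1_cong by simp
  have g: "cochain_pq C A 0 1 (B 0)" and t: "cochain_pq C A 1 0 (B 1)"
    using nr' unfolding NR_def coch_pack2 by blast+
  have t': "cochain_pq C A 1 0 (cneg A (B 1))" using cneg_coch[OF t] .
  have tt: "B 1 (V, [u]) [] = \<ominus>\<^bsub>R V\<^esub> cneg A (B 1) (V, [u]) []" if "u \<in> Mor C" "V = Dom C u" for u V
  proof -
    interpret r: ring "R V" using ringR that by simp
    show ?thesis using cneg_val[OF t that] t_car[OF t that] by simp
  qed
  have conds: "G0 (B 0) \<and> HR (B 1) \<and> (\<forall>U\<in>Ob C. \<forall>a\<in>carrier (R U). \<forall>b\<in>carrier (R U). G1b (B 0) U a b) \<and>
      (\<forall>u\<in>Mor C. \<forall>a\<in>carrier (R (Cod C u)). H1b (B 0) (B 1) u a) \<and>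
      (\<forall>u\<in>Mor C. \<forall>v\<in>Mor C. Cod C v = Dom C u \<longrightarrow> H2b (B 1) u v)"
    using nr_iff[OF g t] nr' ce' by blast
  have "is_tw_iso C D.T D'.T (g_of A (B 0)) (tau_of C A (cneg A (B 1)))"
    unfolding iso_iff[OF g t']
    using conds bridge_HR[where s="B 1", OF t' tt] bridge_H1[where s="B 1", OF g t' tt]
      bridge_H2[where s="B 1", OF t' tt] by blast
  then show ?thesis using g t' by blast
qed

lemma H1b_cong: "(\<And>u. u \<in> Mor C \<Longrightarrow> s (Dom C u, [u]) [] = t (Dom C u, [u]) []) \<Longrightarrow> u \<in> Mor C \<Longrightarrow>
   H1b g s u a = H1b g t u a"
  unfolding H1b_def by simp

lemma rel_t_fwd:
  assumes c0: "c1 = czero1 A" "c1' = czero1 A"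
    and nr: "NRt C A 1 B" and ce: "ceq C A 2 (dGS C A 1 B) (csub A (pack3 m1 f1 c1) (pack3 m1' f1' c1'))"
  shows "\<exists>g1. cochain_pq C A 0 1 g1 \<and> is_pr_iso C D.T D'.T (g_of A g1)"
proof -
  have nr': "NRt C A 1 (pack2 (B 0) (B 1))" using nr NRt1_cong by simp
  have ce': "ceq C A 2 (dGS C A 1 (pack2 (B 0) (B 1))) (csub A (pack3 m1 f1 c1) (pack3 m1' f1' c1'))"
    using ce ceq1_cong by simp
  have g: "cochain_pq C A 0 1 (B 0)" and t: "cochain_pq C A 1 0 (B 1)"
    using nr' unfolding NRt_def NR_def coch_pack2 by blast+
  have zero: "B 1 (Dom C u, [u]) [] = czero1 A (Dom C u, [u]) []" if "u \<in> Mor C" for u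
    using nr' that unfolding NRt_def ball_nerve1 pack2_def czero1_def by auto
  have conds: "G0 (B 0) \<and> HR (B 1) \<and> (\<forall>U\<in>Ob C. \<forall>a\<in>carrier (R U). \<forall>b\<in>carrier (R U). G1b (B 0) U a b) \<and>
      (\<forall>u\<in>Mor C. \<forall>a\<in>carrier (R (Cod C u)). H1b (B 0) (B 1) u a) \<and>
      (\<forall>u\<in>Mor C. \<forall>v\<in>Mor C. Cod C v = Dom C u \<longrightarrow> H2b (B 1) u v)"
    using nr_iff[OF g t] nr' ce' unfolding NRt_def by blast
  have "is_pr_iso C D.T D'.T (g_of A (B 0))"
    unfolding pr_iff[OF g] using conds H1b_cong[of "B 1" "czero1 A", OF zero] by blast
  then show ?thesis using g by blast
qed

end



context GS begin

lemma cohrel_eq: "cohrel C A = tw_equiv C A"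
proof (rule Set.set_eqI)
  fix p :: "(('o,'m,'a) cochn \<times> ('o,'m,'a) cochn \<times> ('o,'m,'a) cochn) \<times> (('o,'m,'a) cochn \<times> ('o,'m,'a) cochn \<times> ('o,'m,'a) cochn)"
  obtain m1 f1 c1 m1' f1' c1' where p: "p = ((m1, f1, c1), (m1', f1', c1'))" by (cases p) auto
  show "p \<in> cohrel C A \<longleftrightarrow> p \<in> tw_equiv C A"
  proof (cases "(m1, f1, c1) \<in> Z2 C A \<and> (m1', f1', c1') \<in> Z2 C A")
    case True
    then have z: "(m1, f1, c1) \<in> Z2 C A" and z': "(m1', f1', c1') \<in> Z2 C A" by blast+
    interpret P2 C A m1 f1 c1 m1' f1' c1' using z z' by unfold_locales
    have "(\<exists>B. NR C A 1 B \<and> ceq C A 2 (dGS C A 1 B) (csub A (pack3 m1 f1 c1) (pack3 m1' f1' c1'))) \<longleftrightarrow>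
      (\<exists>g1 \<tau>1. cochain_pq C A 0 1 g1 \<and> cochain_pq C A 1 0 \<tau>1 \<and>
        is_tw_iso C (deform C A m1 f1 c1) (deform C A m1' f1' c1') (g_of A g1) (tau_of C A \<tau>1))"
    proof
      assume "\<exists>B. NR C A 1 B \<and> ceq C A 2 (dGS C A 1 B) (csub A (pack3 m1 f1 c1) (pack3 m1' f1' c1'))"
      then show "\<exists>g1 \<tau>1. cochain_pq C A 0 1 g1 \<and> cochain_pq C A 1 0 \<tau>1 \<and>
        is_tw_iso C (deform C A m1 f1 c1) (deform C A m1' f1' c1') (g_of A g1) (tau_of C A \<tau>1)"
        using rel_fwd by blast
    next
      assume "\<exists>g1 \<tau>1. cochain_pq C A 0 1 g1 \<and> cochain_pq C A 1 0 \<tau>1 \<and>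
        is_tw_iso C (deform C A m1 f1 c1) (deform C A m1' f1' c1') (g_of A g1) (tau_of C A \<tau>1)"
      then obtain g1 \<tau>1 where g: "cochain_pq C A 0 1 g1" and t: "cochain_pq C A 1 0 \<tau>1"
        and i: "is_tw_iso C (deform C A m1 f1 c1) (deform C A m1' f1' c1') (g_of A g1) (tau_of C A \<tau>1)" by blast
      show "\<exists>B. NR C A 1 B \<and> ceq C A 2 (dGS C A 1 B) (csub A (pack3 m1 f1 c1) (pack3 m1' f1' c1'))"
        using thm2a[OF z z' g t] i by blast
    qed
    then show ?thesis unfolding p cohrel_def tw_equiv_def using z z' Z2_eq by auto
  next
    case False
    then show ?thesis unfolding p cohrel_def tw_equiv_def using Z2_eq by auto
  qed
qed

lemma cohrel_t_eq: "cohrel_t C A = pr_equiv C A"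
proof (rule Set.set_eqI)
  fix p :: "(('o,'m,'a) cochn \<times> ('o,'m,'a) cochn) \<times> (('o,'m,'a) cochn \<times> ('o,'m,'a) cochn)"
  obtain m1 f1 m1' f1' where p: "p = ((m1, f1), (m1', f1'))" by (cases p) auto
  show "p \<in> cohrel_t C A \<longleftrightarrow> p \<in> pr_equiv C A"
  proof (cases "(m1, f1) \<in> Z2t C A \<and> (m1', f1') \<in> Z2t C A")
    case True
    then have zz: "(m1, f1) \<in> Z2t C A" and zz': "(m1', f1') \<in> Z2t C A" by blast+
    interpret P2 C A m1 f1 "czero1 A" m1' f1' "czero1 A" using Z2t_Z2[OF zz] Z2t_Z2[OF zz'] by unfold_locales
    have "(\<exists>B. NRt C A 1 B \<and>
        ceq C A 2 (dGS C A 1 B) (csub A (pack3 m1 f1 (czero1 A)) (pack3 m1' f1' (czero1 A)))) \<longleftrightarrow>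
      (\<exists>g1. cochain_pq C A 0 1 g1 \<and>
        is_pr_iso C (deform C A m1 f1 (czero1 A)) (deform C A m1' f1' (czero1 A)) (g_of A g1))"
    proof
      assume "\<exists>B. NRt C A 1 B \<and>
        ceq C A 2 (dGS C A 1 B) (csub A (pack3 m1 f1 (czero1 A)) (pack3 m1' f1' (czero1 A)))"
      then show "\<exists>g1. cochain_pq C A 0 1 g1 \<and>
        is_pr_iso C (deform C A m1 f1 (czero1 A)) (deform C A m1' f1' (czero1 A)) (g_of A g1)"
        using rel_t_fwd[OF refl refl] by blast
    next
      assume "\<exists>g1. cochain_pq C A 0 1 g1 \<and>
        is_pr_iso C (deform C A m1 f1 (czero1 A)) (deform C A m1' f1' (czero1 A)) (g_of A g1)"
      then obtain g1 where g: "cochain_pq C A 0 1 g1"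
        and i: "is_pr_iso C (deform C A m1 f1 (czero1 A)) (deform C A m1' f1' (czero1 A)) (g_of A g1)" by blast
      show "\<exists>B. NRt C A 1 B \<and>
        ceq C A 2 (dGS C A 1 B) (csub A (pack3 m1 f1 (czero1 A)) (pack3 m1' f1' (czero1 A)))"
        using thm2b[OF zz zz' g] i by blast
    qed
    then show ?thesis unfolding p cohrel_t_def pr_equiv_def using zz zz' Z2t_eq by auto
  next
    case False
    then show ?thesis unfolding p cohrel_t_def pr_equiv_def using Z2t_eq by auto
  qed
qed

end

theorem theorem2p21:
  fixes C :: "('o,'m) cat" and A :: "('o,'m,'a,'k::comm_ring_1) tpsh"
  assumes "is_category C" and "is_presheaf C A"
  shows
   "(\<forall>m1 f1 c1. cochain_pq C A 0 2 m1 \<and> cochain_pq C A 1 1 f1 \<and> cochain_pq C A 2 0 c1 \<longrightarrow>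
      (is_tw_deformation C A m1 f1 c1 \<longleftrightarrow>
         NR C A 2 (pack3 m1 f1 c1) \<and> ceq C A 3 (dGS C A 2 (pack3 m1 f1 c1)) (czero A)))
  \<and> (\<forall>m1 f1. cochain_pq C A 0 2 m1 \<and> cochain_pq C A 1 1 f1 \<longrightarrow>
      (is_pr_deformation C A m1 f1 \<longleftrightarrow>
         NRt C A 2 (pack3 m1 f1 (czero1 A)) \<and>
         ceq C A 3 (dGS C A 2 (pack3 m1 f1 (czero1 A))) (czero A)))
  \<and> (\<forall>m1 f1 c1 m1' f1' c1' g1 \<tau>1.
       (m1, f1, c1) \<in> Z2 C A \<and> (m1', f1', c1') \<in> Z2 C A \<and>
       cochain_pq C A 0 1 g1 \<and> cochain_pq C A 1 0 \<tau>1 \<longrightarrow>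
      (is_tw_iso C (deform C A m1 f1 c1) (deform C A m1' f1' c1') (g_of A g1) (tau_of C A \<tau>1) \<longleftrightarrow>
         NR C A 1 (pack2 g1 (cneg A \<tau>1)) \<and>
         ceq C A 2 (dGS C A 1 (pack2 g1 (cneg A \<tau>1))) (csub A (pack3 m1 f1 c1) (pack3 m1' f1' c1'))))
  \<and> (\<forall>m1 f1 m1' f1' g1.
       (m1, f1) \<in> Z2t C A \<and> (m1', f1') \<in> Z2t C A \<and> cochain_pq C A 0 1 g1 \<longrightarrow>
      (is_pr_iso C (deform C A m1 f1 (czero1 A)) (deform C A m1' f1' (czero1 A)) (g_of A g1) \<longleftrightarrow>
         NRt C A 1 (pack2 g1 (czero1 A)) \<and>
         ceq C A 2 (dGS C A 1 (pack2 g1 (czero1 A)))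
                   (csub A (pack3 m1 f1 (czero1 A)) (pack3 m1' f1' (czero1 A)))))
  \<and> (\<exists>F. bij_betw F (Z2 C A // cohrel C A) (TwDefs C A // tw_equiv C A) \<and>
         (\<forall>x\<in>Z2 C A. F (cohrel C A `` {x}) = tw_equiv C A `` {x}))
  \<and> (\<exists>F. bij_betw F (Z2t C A // cohrel_t C A) (PrDefs C A // pr_equiv C A) \<and>
         (\<forall>x\<in>Z2t C A. F (cohrel_t C A `` {x}) = pr_equiv C A `` {x}))"
proof -
  interpret GS C A using assms by unfold_locales
  have p1: "\<forall>m1 f1 c1. cochain_pq C A 0 2 m1 \<and> cochain_pq C A 1 1 f1 \<and> cochain_pq C A 2 0 c1 \<longrightarrow>
      (is_tw_deformation C A m1 f1 c1 \<longleftrightarrow>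
         NR C A 2 (pack3 m1 f1 c1) \<and> ceq C A 3 (dGS C A 2 (pack3 m1 f1 c1)) (czero A))"
    using thm1a by blast
  have p2: "\<forall>m1 f1. cochain_pq C A 0 2 m1 \<and> cochain_pq C A 1 1 f1 \<longrightarrow>
      (is_pr_deformation C A m1 f1 \<longleftrightarrow>
         NRt C A 2 (pack3 m1 f1 (czero1 A)) \<and>
         ceq C A 3 (dGS C A 2 (pack3 m1 f1 (czero1 A))) (czero A))"
    using thm1b by blast
  have p3: "\<forall>m1 f1 c1 m1' f1' c1' g1 \<tau>1.
       (m1, f1, c1) \<in> Z2 C A \<and> (m1', f1', c1') \<in> Z2 C A \<and>
       cochain_pq C A 0 1 g1 \<and> cochain_pq C A 1 0 \<tau>1 \<longrightarrow>
      (is_tw_iso C (deform C A m1 f1 c1) (deform C A m1' f1' c1') (g_of A g1) (tau_of C A \<tau>1) \<longleftrightarrow>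
         NR C A 1 (pack2 g1 (cneg A \<tau>1)) \<and>
         ceq C A 2 (dGS C A 1 (pack2 g1 (cneg A \<tau>1))) (csub A (pack3 m1 f1 c1) (pack3 m1' f1' c1')))"
    using thm2a by blast
  have p4: "\<forall>m1 f1 m1' f1' g1.
       (m1, f1) \<in> Z2t C A \<and> (m1', f1') \<in> Z2t C A \<and> cochain_pq C A 0 1 g1 \<longrightarrow>
      (is_pr_iso C (deform C A m1 f1 (czero1 A)) (deform C A m1' f1' (czero1 A)) (g_of A g1) \<longleftrightarrow>
         NRt C A 1 (pack2 g1 (czero1 A)) \<and>
         ceq C A 2 (dGS C A 1 (pack2 g1 (czero1 A)))
                   (csub A (pack3 m1 f1 (czero1 A)) (pack3 m1' f1' (czero1 A))))"
    using thm2b by blast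
  have p5: "\<exists>F. bij_betw F (Z2 C A // cohrel C A) (TwDefs C A // tw_equiv C A) \<and>
         (\<forall>x\<in>Z2 C A. F (cohrel C A `` {x}) = tw_equiv C A `` {x})"
    by (rule exI[of _ id]) (simp add: Z2_eq cohrel_eq bij_betw_id)
  have p6: "\<exists>F. bij_betw F (Z2t C A // cohrel_t C A) (PrDefs C A // pr_equiv C A) \<and>
         (\<forall>x\<in>Z2t C A. F (cohrel_t C A `` {x}) = pr_equiv C A `` {x})"
    by (rule exI[of _ id]) (simp add: Z2t_eq cohrel_t_eq bij_betw_id)
  show ?thesis using p1 p2 p3 p4 p5 p6 by blast
qed


end
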